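(* Let $h\colon R\to S$ be a flat morphism of commutative rings, $\mathfrak{a}\subseteq R$ an ideal, and $\kappa$ a cardinal such that infinitely many powers of $\mathfrak{a}$ have generating sets of cardinality at most $\kappa$. Let $M$ be an $R$-module such that the canonical morphism $\varepsilon_{S,M,\kappa}\colon S\otimes_R(M^\kappa)\to(S\otimes_RM)^\kappa$ is injective. Then the canonical monomorphism $\rho^h_\mathfrak{a}(M)\colon S\otimes_R\Gamma_\mathfrak{a}(M)\to\Gamma_{\mathfrak{a}S}(S\otimes_RM)$ is an isomorphism.
   Context: $\Gamma_\mathfrak{a}(M)=\{x\in M\mid \exists n\in\mathbb{N}:\mathfrak{a}^n\subseteq(0:_Rx)\}$; $\mathfrak{a}S$ denotes the ideal of $S$ generated by $h(\mathfrak{a})$. $\varepsilon_{S,M,\kappa}$ sends $s\otimes(m_i)_i$ to $(s\otimes m_i)_i$. Since $h$ is flat, the map $S\otimes_R\Gamma_\mathfrak{a}(M)\to S\otimes_RM$ is injective and its image lies in $\Gamma_{\mathfrak{a}S}(S\otimes_RM)$; $\rho^h_\mathfrak{a}(M)$ is the resulting injective $S$-linear map $s\otimes m\mapsto s\otimes m$. *)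

theory Defs
  imports "HOL-Algebra.Algebra"
begin

text \<open>Concrete model of the base change S \<otimes>_R N of an R-module N along a ring
  morphism h : R \<rightarrow> S: the free S-module on the carrier of N (finitely supported
  functions carrier N \<rightarrow> carrier S, zero outside carrier N) modulo the S-submodule
  generated by the bilinearity relations.  The class of the function
  fdelta S m s is the elementary tensor s \<otimes> m.\<close>

definition fadd :: "('s, 'c) ring_scheme \<Rightarrow> ('n \<Rightarrow> 's) \<Rightarrow> ('n \<Rightarrow> 's) \<Rightarrow> ('n \<Rightarrow> 's)" where
  "fadd S f g = (\<lambda>x. f x \<oplus>\<^bsub>S\<^esub> g x)"

definition fneg :: "('s, 'c) ring_scheme \<Rightarrow> ('n \<Rightarrow> 's) \<Rightarrow> ('n \<Rightarrow> 's)" where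
  "fneg S f = (\<lambda>x. \<ominus>\<^bsub>S\<^esub> f x)"

definition fminus :: "('s, 'c) ring_scheme \<Rightarrow> ('n \<Rightarrow> 's) \<Rightarrow> ('n \<Rightarrow> 's) \<Rightarrow> ('n \<Rightarrow> 's)" where
  "fminus S f g = fadd S f (fneg S g)"

definition fsmult :: "('s, 'c) ring_scheme \<Rightarrow> 's \<Rightarrow> ('n \<Rightarrow> 's) \<Rightarrow> ('n \<Rightarrow> 's)" where
  "fsmult S s f = (\<lambda>x. s \<otimes>\<^bsub>S\<^esub> f x)"

definition fdelta :: "('s, 'c) ring_scheme \<Rightarrow> 'n \<Rightarrow> 's \<Rightarrow> ('n \<Rightarrow> 's)" where
  "fdelta S m s = (\<lambda>x. if x = m then s else \<zero>\<^bsub>S\<^esub>)"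

definition fsupp :: "('s, 'c) ring_scheme \<Rightarrow> ('n \<Rightarrow> 's) \<Rightarrow> 'n set" where
  "fsupp S f = {x. f x \<noteq> \<zero>\<^bsub>S\<^esub>}"

definition free_on :: "('s, 'c) ring_scheme \<Rightarrow> ('r, 'n, 'd) module_scheme \<Rightarrow> ('n \<Rightarrow> 's) set" where
  "free_on S N = {f. (\<forall>x. f x \<in> carrier S) \<and> (\<forall>x. x \<notin> carrier N \<longrightarrow> f x = \<zero>\<^bsub>S\<^esub>)
                     \<and> finite (fsupp S f)}"

inductive_set tensor_rel :: "('r, 'a) ring_scheme \<Rightarrow> ('s, 'c) ring_scheme \<Rightarrow> ('r \<Rightarrow> 's)
      \<Rightarrow> ('r, 'n, 'd) module_scheme \<Rightarrow> ('n \<Rightarrow> 's) set"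
  for R S h N where
    zero: "(\<lambda>x. \<zero>\<^bsub>S\<^esub>) \<in> tensor_rel R S h N"
  | add_rel: "\<lbrakk> k \<in> tensor_rel R S h N; s \<in> carrier S; m \<in> carrier N; m' \<in> carrier N \<rbrakk> \<Longrightarrow>
      fadd S k (fsmult S s (fminus S (fminus S (fdelta S (m \<oplus>\<^bsub>N\<^esub> m') \<one>\<^bsub>S\<^esub>)
                                         (fdelta S m \<one>\<^bsub>S\<^esub>)) (fdelta S m' \<one>\<^bsub>S\<^esub>)))
      \<in> tensor_rel R S h N"
  | smult_rel: "\<lbrakk> k \<in> tensor_rel R S h N; s \<in> carrier S; r \<in> carrier R; m \<in> carrier N \<rbrakk> \<Longrightarrow>
      fadd S k (fsmult S s (fminus S (fdelta S (r \<odot>\<^bsub>N\<^esub> m) \<one>\<^bsub>S\<^esub>) (fdelta S m (h r))))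
      \<in> tensor_rel R S h N"

definition tensor_eq :: "('r, 'a) ring_scheme \<Rightarrow> ('s, 'c) ring_scheme \<Rightarrow> ('r \<Rightarrow> 's)
      \<Rightarrow> ('r, 'n, 'd) module_scheme \<Rightarrow> ('n \<Rightarrow> 's) \<Rightarrow> ('n \<Rightarrow> 's) \<Rightarrow> bool" where
  "tensor_eq R S h N f g \<longleftrightarrow> fminus S f g \<in> tensor_rel R S h N"

primrec ideal_pow :: "('r, 'a) ring_scheme \<Rightarrow> 'r set \<Rightarrow> nat \<Rightarrow> 'r set" where
  "ideal_pow R I 0 = carrier R"
| "ideal_pow R I (Suc n) = ideal_prod R I (ideal_pow R I n)"

definition torsion :: "('r, 'a) ring_scheme \<Rightarrow> 'r set \<Rightarrow> ('r, 'n, 'd) module_scheme \<Rightarrow> 'n set" where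
  "torsion R I M = {x \<in> carrier M. \<exists>n. \<forall>r \<in> ideal_pow R I n. r \<odot>\<^bsub>M\<^esub> x = \<zero>\<^bsub>M\<^esub>}"

definition tensor_torsion :: "('r, 'a) ring_scheme \<Rightarrow> ('s, 'c) ring_scheme \<Rightarrow> ('r \<Rightarrow> 's)
      \<Rightarrow> ('r, 'n, 'd) module_scheme \<Rightarrow> 's set \<Rightarrow> ('n \<Rightarrow> 's) set" where
  "tensor_torsion R S h M J = {f \<in> free_on S M. \<exists>n. \<forall>s \<in> ideal_pow S J n.
      tensor_eq R S h M (fsmult S s f) (\<lambda>x. \<zero>\<^bsub>S\<^esub>)}"

definition prod_module :: "('r, 'n, 'd) module_scheme \<Rightarrow> 'i set \<Rightarrow> ('r, 'i \<Rightarrow> 'n) module" where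
  "prod_module M I = \<lparr> carrier = {f \<in> extensional I. \<forall>i \<in> I. f i \<in> carrier M},
     monoid.mult = (\<lambda>f g. undefined), one = undefined,
     ring.zero = (\<lambda>i \<in> I. \<zero>\<^bsub>M\<^esub>),
     ring.add = (\<lambda>f g. \<lambda>i \<in> I. f i \<oplus>\<^bsub>M\<^esub> g i),
     module.smult = (\<lambda>r f. \<lambda>i \<in> I. r \<odot>\<^bsub>M\<^esub> f i) \<rparr>"

text \<open>Component i of \<epsilon>_{S,M,I} on representatives:
  (s \<otimes> (m_j)_j) \<mapsto> s \<otimes> m_i.\<close>
definition push_comp :: "('s, 'c) ring_scheme \<Rightarrow> 'i \<Rightarrow> (('i \<Rightarrow> 'n) \<Rightarrow> 's) \<Rightarrow> ('n \<Rightarrow> 's)" where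
  "push_comp S i f = (\<lambda>m. finsum S f {x \<in> fsupp S f. x i = m})"

definition eps_injective :: "('r, 'a) ring_scheme \<Rightarrow> ('s, 'c) ring_scheme \<Rightarrow> ('r \<Rightarrow> 's)
      \<Rightarrow> ('r, 'n, 'd) module_scheme \<Rightarrow> 'i set \<Rightarrow> bool" where
  "eps_injective R S h M I \<longleftrightarrow>
    (\<forall>f \<in> free_on S (prod_module M I). \<forall>g \<in> free_on S (prod_module M I).
       (\<forall>i \<in> I. tensor_eq R S h M (push_comp S i f) (push_comp S i g))
       \<longrightarrow> tensor_eq R S h (prod_module M I) f g)"

definition ideal_module :: "('r, 'a) ring_scheme \<Rightarrow> 'r set \<Rightarrow> ('r, 'r) module" where
  "ideal_module R I = \<lparr> carrier = I, monoid.mult = monoid.mult R, one = \<one>\<^bsub>R\<^esub>, ring.zero = \<zero>\<^bsub>R\<^esub>,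
     ring.add = ring.add R, module.smult = monoid.mult R \<rparr>"

text \<open>Flatness of h (ideal criterion): for every ideal I of R the canonical map
  S \<otimes>_R I \<rightarrow> S \<otimes>_R R = S, s \<otimes> x \<mapsto> s h(x), is injective.\<close>
definition flat_hom :: "('r, 'a) ring_scheme \<Rightarrow> ('s, 'c) ring_scheme \<Rightarrow> ('r \<Rightarrow> 's) \<Rightarrow> bool" where
  "flat_hom R S h \<longleftrightarrow> (\<forall>I. ideal I R \<longrightarrow>
     (\<forall>f \<in> free_on S (ideal_module R I).
        finsum S (\<lambda>x. f x \<otimes>\<^bsub>S\<^esub> h x) (fsupp S f) = \<zero>\<^bsub>S\<^esub>
        \<longrightarrow> tensor_eq R S h (ideal_module R I) f (\<lambda>x. \<zero>\<^bsub>S\<^esub>)))"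

definition card_le :: "'x set \<Rightarrow> 'i set \<Rightarrow> bool" where
  "card_le G I \<longleftrightarrow> (\<exists>g. inj_on g G \<and> g ` G \<subseteq> I)"

end

theory Submission
  imports Defs
begin

context abelian_monoid begin

lemma fs_swap:
  assumes "finite A" "finite B" "\<And>a b. a \<in> A \<Longrightarrow> b \<in> B \<Longrightarrow> f a b \<in> carrier G"
  shows "(\<Oplus>a\<in>A. \<Oplus>b\<in>B. f a b) = (\<Oplus>b\<in>B. \<Oplus>a\<in>A. f a b)"
  using assms
proof (induction A rule: finite_induct)
  case empty
  then show ?case by (simp add: finsum_zero)
next
  case (insert x F)
  have "(\<Oplus>a\<in>insert x F. \<Oplus>b\<in>B. f a b) = (\<Oplus>b\<in>B. f x b) \<oplus> (\<Oplus>a\<in>F. \<Oplus>b\<in>B. f a b)"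
    using insert by (subst finsum_insert) (auto intro!: finsum_closed)
  also have "\<dots> = (\<Oplus>b\<in>B. f x b) \<oplus> (\<Oplus>b\<in>B. \<Oplus>a\<in>F. f a b)"
    using insert by simp
  also have "\<dots> = (\<Oplus>b\<in>B. f x b \<oplus> (\<Oplus>a\<in>F. f a b))"
    using insert by (subst finsum_addf) (auto intro!: finsum_closed)
  also have "\<dots> = (\<Oplus>b\<in>B. \<Oplus>a\<in>insert x F. f a b)"
    using insert by (intro finsum_cong') (auto simp: finsum_insert)
  finally show ?case .
qed

lemma fs_fiber:
  assumes "finite V" "f \<in> V \<rightarrow> carrier G"
  shows "(\<Oplus>y\<in>g ` V. \<Oplus>x\<in>{x\<in>V. g x = y}. f x) = (\<Oplus>x\<in>V. f x)"
proof -
  have "V = (\<Union>y\<in>g ` V. {x\<in>V. g x = y})" by auto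
  then have "(\<Oplus>x\<in>V. f x) = (\<Oplus>x\<in>(\<Union>y\<in>g ` V. {x\<in>V. g x = y}). f x)" by simp
  also have "\<dots> = (\<Oplus>y\<in>g ` V. \<Oplus>x\<in>{x\<in>V. g x = y}. f x)"
    using assms by (intro add.finprod_UN_disjoint) (auto simp: pairwise_def disjnt_def)
  finally show ?thesis by simp
qed

lemma fs_extend:
  assumes "finite B" "A \<subseteq> B" "f \<in> B \<rightarrow> carrier G" "\<And>x. x \<in> B - A \<Longrightarrow> f x = \<zero>"
  shows "finsum G f A = finsum G f B"
  using assms by (intro add.finprod_mono_neutral_cong_left) auto

lemma fs_delta:
  assumes "finite B" "c \<in> carrier G"
  shows "(\<Oplus>x\<in>B. if x = a then c else \<zero>) = (if a \<in> B then c else \<zero>)"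
proof (cases "a \<in> B")
  case True
  then show ?thesis using assms add.finprod_singleton_swap[of a B "\<lambda>_. c"] by auto
next
  case False
  then have "(\<Oplus>x\<in>B. if x = a then c else \<zero>) = (\<Oplus>x\<in>B. \<zero>)"
    by (intro finsum_cong') auto
  then show ?thesis using False by (simp add: finsum_zero)
qed

lemma fs_delta':
  assumes "finite B" "c \<in> carrier G"
  shows "(\<Oplus>x\<in>B. if a = x then c else \<zero>) = (if a \<in> B then c else \<zero>)"
  using fs_delta[OF assms, of a] by (simp add: eq_commute)

lemma fs_evod:
  fixes A B :: "nat set"
  assumes "finite A" "finite B" "f \<in> UNIV \<rightarrow> carrier G"
  shows "finsum G f ((\<lambda>p. 2*p) ` A \<union> (\<lambda>l. 2*l+1) ` B) = finsum G (\<lambda>p. f (2*p)) A \<oplus> finsum G (\<lambda>l. f (2*l+1)) B"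
proof -
  have d: "(\<lambda>p. 2*p) ` A \<inter> (\<lambda>l. 2*l+1) ` B = {}" by auto presburger
  have "finsum G f ((\<lambda>p. 2*p) ` A \<union> (\<lambda>l. 2*l+1) ` B) = finsum G f ((\<lambda>p. 2*p) ` A) \<oplus> finsum G f ((\<lambda>l. 2*l+1) ` B)"
    using assms d by (intro finsum_Un_disjoint) auto
  also have "\<dots> = finsum G (\<lambda>p. f (2*p)) A \<oplus> finsum G (\<lambda>l. f (2*l+1)) B"
  proof -
    have f1: "f \<in> (\<lambda>p. 2*p) ` A \<rightarrow> carrier G" "f \<in> (\<lambda>l. 2*l+1) ` B \<rightarrow> carrier G"
      using assms(3) by auto
    have i: "inj_on (\<lambda>p::nat. 2*p) A" "inj_on (\<lambda>l::nat. 2*l+1) B" by (auto simp: inj_on_def)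
    show ?thesis using finsum_reindex[OF f1(1) i(1)] finsum_reindex[OF f1(2) i(2)] by simp
  qed
  finally show ?thesis .
qed

end

context abelian_group begin

lemma fs_neg:
  assumes "finite A" "f \<in> A \<rightarrow> carrier G"
  shows "(\<Oplus>x\<in>A. \<ominus> f x) = \<ominus> (\<Oplus>x\<in>A. f x)"
  using assms
proof (induction A rule: finite_induct)
  case empty
  then show ?case by (simp add: a_inv_def)
next
  case (insert x F)
  then show ?case
    by (simp add: finsum_insert finsum_closed minus_add Pi_def)
qed

end

definition Kset :: "('r,'a) ring_scheme \<Rightarrow> ('q,'e) ring_scheme \<Rightarrow> ('r \<Rightarrow> 'n \<Rightarrow> 'q) set \<Rightarrow> 'n set \<Rightarrow> ('n \<Rightarrow> 'r) set" where
  "Kset R A W D = {k. (\<forall>x. k x \<in> carrier R) \<and> (\<forall>x. x \<notin> D \<longrightarrow> k x = \<zero>\<^bsub>R\<^esub>) \<and> finite (fsupp R k)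
      \<and> (\<forall>w\<in>W. finsum A (\<lambda>x. w (k x) x) (fsupp R k) = \<zero>\<^bsub>A\<^esub>)}"

definition Zset :: "('r,'a) ring_scheme \<Rightarrow> ('s,'c) ring_scheme \<Rightarrow> ('r \<Rightarrow> 's) \<Rightarrow> ('n \<Rightarrow> 'r) set \<Rightarrow> ('n \<Rightarrow> 's) set" where
  "Zset R S h K = {f. \<exists>(L::nat set) u k. finite L \<and> u \<in> L \<rightarrow> carrier S \<and> (\<forall>l\<in>L. k l \<in> K) \<and>
      f = (\<lambda>x. finsum S (\<lambda>l. u l \<otimes>\<^bsub>S\<^esub> h (k l x)) L)}"

context ring_hom_cring begin

lemma fdelta_carrier[simp]: "c \<in> carrier S \<Longrightarrow> fdelta S m c x \<in> carrier S"
  by (simp add: fdelta_def)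

lemma fdeltaR_carrier[simp]: "c \<in> carrier R \<Longrightarrow> fdelta R m c x \<in> carrier R"
  by (simp add: fdelta_def)

lemma TR_carrier:
  assumes "k \<in> tensor_rel R S h N" shows "k x \<in> carrier S"
  using assms
  by induction (auto simp: fadd_def fsmult_def fminus_def fneg_def)

lemma TR_add:
  assumes "k2 \<in> tensor_rel R S h N" "k1 \<in> tensor_rel R S h N"
  shows "fadd S k1 k2 \<in> tensor_rel R S h N"
  using assms
proof induction
  case zero
  have "fadd S k1 (\<lambda>x. \<zero>\<^bsub>S\<^esub>) = k1"
    using TR_carrier[OF zero] by (auto simp: fadd_def)
  then show ?case using zero by simp
next
  case (add_rel k s m m')
  let ?r = "fsmult S s (fminus S (fminus S (fdelta S (m \<oplus>\<^bsub>N\<^esub> m') \<one>\<^bsub>S\<^esub>)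
                                         (fdelta S m \<one>\<^bsub>S\<^esub>)) (fdelta S m' \<one>\<^bsub>S\<^esub>))"
  have "fadd S k1 (fadd S k ?r) = fadd S (fadd S k1 k) ?r"
    using TR_carrier[OF add_rel(1)] TR_carrier[OF add_rel(6)] add_rel(2)
    by (auto simp: fadd_def fsmult_def fminus_def fneg_def S.a_ac)
  then show ?case using add_rel tensor_rel.add_rel by metis
next
  case (smult_rel k s r m)
  let ?r = "fsmult S s (fminus S (fdelta S (r \<odot>\<^bsub>N\<^esub> m) \<one>\<^bsub>S\<^esub>) (fdelta S m (h r)))"
  have "fadd S k1 (fadd S k ?r) = fadd S (fadd S k1 k) ?r"
    using TR_carrier[OF smult_rel(1)] TR_carrier[OF smult_rel(6)] smult_rel(2,3)
    by (auto simp: fadd_def fsmult_def fminus_def fneg_def S.a_ac)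
  then show ?case using smult_rel tensor_rel.smult_rel by metis
qed

lemma TR_smult:
  assumes "k \<in> tensor_rel R S h N" "s \<in> carrier S"
  shows "fsmult S s k \<in> tensor_rel R S h N"
  using assms
proof induction
  case zero
  have e: "fsmult S s (\<lambda>x. \<zero>\<^bsub>S\<^esub>) = (\<lambda>x. \<zero>\<^bsub>S\<^esub>)"
    using zero by (auto simp: fsmult_def)
  show ?case unfolding e by (rule tensor_rel.zero)
next
  case (add_rel k s' m m')
  let ?d = "fminus S (fminus S (fdelta S (m \<oplus>\<^bsub>N\<^esub> m') \<one>\<^bsub>S\<^esub>)
                                         (fdelta S m \<one>\<^bsub>S\<^esub>)) (fdelta S m' \<one>\<^bsub>S\<^esub>)"
  have "fsmult S s (fadd S k (fsmult S s' ?d)) = fadd S (fsmult S s k) (fsmult S (s \<otimes>\<^bsub>S\<^esub> s') ?d)"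
    using TR_carrier[OF add_rel(1)] add_rel(2,6)
    by (auto simp: fadd_def fsmult_def fminus_def fneg_def S.r_distr S.m_assoc)
  then show ?case using add_rel tensor_rel.add_rel[of "fsmult S s k" R S h N "s \<otimes>\<^bsub>S\<^esub> s'"] by simp
next
  case (smult_rel k s' r m)
  let ?d = "fminus S (fdelta S (r \<odot>\<^bsub>N\<^esub> m) \<one>\<^bsub>S\<^esub>) (fdelta S m (h r))"
  have "fsmult S s (fadd S k (fsmult S s' ?d)) = fadd S (fsmult S s k) (fsmult S (s \<otimes>\<^bsub>S\<^esub> s') ?d)"
    using TR_carrier[OF smult_rel(1)] smult_rel(2,3,6)
    by (auto simp: fadd_def fsmult_def fminus_def fneg_def S.r_distr S.m_assoc)
  then show ?case using smult_rel tensor_rel.smult_rel[of "fsmult S s k" R S h N "s \<otimes>\<^bsub>S\<^esub> s'"] by simp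
qed

lemma TR_sum:
  assumes "finite L" "\<And>l. l \<in> L \<Longrightarrow> g l \<in> tensor_rel R S h N"
  shows "(\<lambda>x. finsum S (\<lambda>l. g l x) L) \<in> tensor_rel R S h N"
  using assms
proof (induction L rule: finite_induct)
  case empty
  then show ?case by (simp add: tensor_rel.zero)
next
  case (insert a F)
  have c: "\<And>l x. l \<in> insert a F \<Longrightarrow> g l x \<in> carrier S" by (meson TR_carrier insert.prems)
  have e: "\<And>x. finsum S (\<lambda>l. g l x) (insert a F) = g a x \<oplus>\<^bsub>S\<^esub> finsum S (\<lambda>l. g l x) F"
    using insert.hyps c by (intro S.finsum_insert) auto
  have "(\<lambda>x. finsum S (\<lambda>l. g l x) (insert a F)) = fadd S (g a) (\<lambda>x. finsum S (\<lambda>l. g l x) F)"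
    unfolding fadd_def e ..
  moreover have "g a \<in> tensor_rel R S h N" using insert.prems by simp
  moreover have "(\<lambda>x. finsum S (\<lambda>l. g l x) F) \<in> tensor_rel R S h N" using insert.IH insert.prems by simp
  ultimately show ?case using TR_add by metis
qed

lemma TR_rel_add:
  assumes "s \<in> carrier S" "m \<in> carrier N" "m' \<in> carrier N"
  shows "fsmult S s (fminus S (fminus S (fdelta S (m \<oplus>\<^bsub>N\<^esub> m') \<one>\<^bsub>S\<^esub>)
                                         (fdelta S m \<one>\<^bsub>S\<^esub>)) (fdelta S m' \<one>\<^bsub>S\<^esub>)) \<in> tensor_rel R S h N"
proof -
  have "fadd S (\<lambda>x. \<zero>\<^bsub>S\<^esub>) (fsmult S s (fminus S (fminus S (fdelta S (m \<oplus>\<^bsub>N\<^esub> m') \<one>\<^bsub>S\<^esub>)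
                                         (fdelta S m \<one>\<^bsub>S\<^esub>)) (fdelta S m' \<one>\<^bsub>S\<^esub>))) \<in> tensor_rel R S h N"
    using assms by (intro tensor_rel.add_rel tensor_rel.zero)
  moreover have "fadd S (\<lambda>x. \<zero>\<^bsub>S\<^esub>) (fsmult S s (fminus S (fminus S (fdelta S (m \<oplus>\<^bsub>N\<^esub> m') \<one>\<^bsub>S\<^esub>)
                                         (fdelta S m \<one>\<^bsub>S\<^esub>)) (fdelta S m' \<one>\<^bsub>S\<^esub>)))
     = fsmult S s (fminus S (fminus S (fdelta S (m \<oplus>\<^bsub>N\<^esub> m') \<one>\<^bsub>S\<^esub>)
                                         (fdelta S m \<one>\<^bsub>S\<^esub>)) (fdelta S m' \<one>\<^bsub>S\<^esub>))"
    using assms by (auto simp: fadd_def fsmult_def fminus_def fneg_def)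
  ultimately show ?thesis by simp
qed

lemma TR_rel_sm:
  assumes "s \<in> carrier S" "r \<in> carrier R" "m \<in> carrier N"
  shows "fsmult S s (fminus S (fdelta S (r \<odot>\<^bsub>N\<^esub> m) \<one>\<^bsub>S\<^esub>) (fdelta S m (h r))) \<in> tensor_rel R S h N"
proof -
  have "fadd S (\<lambda>x. \<zero>\<^bsub>S\<^esub>) (fsmult S s (fminus S (fdelta S (r \<odot>\<^bsub>N\<^esub> m) \<one>\<^bsub>S\<^esub>) (fdelta S m (h r)))) \<in> tensor_rel R S h N"
    using assms by (intro tensor_rel.smult_rel tensor_rel.zero)
  moreover have "fadd S (\<lambda>x. \<zero>\<^bsub>S\<^esub>) (fsmult S s (fminus S (fdelta S (r \<odot>\<^bsub>N\<^esub> m) \<one>\<^bsub>S\<^esub>) (fdelta S m (h r))))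
     = fsmult S s (fminus S (fdelta S (r \<odot>\<^bsub>N\<^esub> m) \<one>\<^bsub>S\<^esub>) (fdelta S m (h r)))"
    using assms by (auto simp: fadd_def fsmult_def fminus_def fneg_def)
  ultimately show ?thesis by simp
qed

end


context ring_hom_cring begin

lemma h_fminus: "(\<And>x. f x \<in> carrier R) \<Longrightarrow> (\<And>x. g x \<in> carrier R) \<Longrightarrow>
   h (fminus R f g x) = fminus S (\<lambda>x. h (f x)) (\<lambda>x. h (g x)) x"
  by (simp add: fminus_def fadd_def fneg_def)

lemma h_fdelta: "c \<in> carrier R \<Longrightarrow> h (fdelta R m c x) = fdelta S m (h c) x"
  by (simp add: fdelta_def)

lemma fminusR_carrier[simp]: "(\<And>x. f x \<in> carrier R) \<Longrightarrow> (\<And>x. g x \<in> carrier R) \<Longrightarrow> fminus R f g x \<in> carrier R"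
  by (simp add: fminus_def fadd_def fneg_def)

end

locale wsys = ring_hom_cring R S h + A: abelian_group A for R :: "('r,'ra) ring_scheme" (structure) and S :: "('s,'sa) ring_scheme" (structure) and h and A :: "('q,'qa) ring_scheme" +
  fixes N :: "('r, 'n, 'd) module_scheme" and W :: "('r \<Rightarrow> 'n \<Rightarrow> 'q) set"
  assumes w_closed: "\<And>w r y. w \<in> W \<Longrightarrow> r \<in> carrier R \<Longrightarrow> y \<in> carrier N \<Longrightarrow> w r y \<in> carrier A"
    and w_add: "\<And>w r r' y. w \<in> W \<Longrightarrow> r \<in> carrier R \<Longrightarrow> r' \<in> carrier R \<Longrightarrow> y \<in> carrier N \<Longrightarrow>
         w (r \<oplus> r') y = w r y \<oplus>\<^bsub>A\<^esub> w r' y"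
    and N_add: "\<And>y y'. y \<in> carrier N \<Longrightarrow> y' \<in> carrier N \<Longrightarrow> y \<oplus>\<^bsub>N\<^esub> y' \<in> carrier N"
    and N_sm: "\<And>r y. r \<in> carrier R \<Longrightarrow> y \<in> carrier N \<Longrightarrow> r \<odot>\<^bsub>N\<^esub> y \<in> carrier N"
    and w_1add: "\<And>w y y'. w \<in> W \<Longrightarrow> y \<in> carrier N \<Longrightarrow> y' \<in> carrier N \<Longrightarrow>
         w \<one> (y \<oplus>\<^bsub>N\<^esub> y') = w \<one> y \<oplus>\<^bsub>A\<^esub> w \<one> y'"
    and w_1sm: "\<And>w r y. w \<in> W \<Longrightarrow> r \<in> carrier R \<Longrightarrow> y \<in> carrier N \<Longrightarrow> w \<one> (r \<odot>\<^bsub>N\<^esub> y) = w r y"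
begin

lemma ag3: "a \<in> carrier A \<Longrightarrow> b \<in> carrier A \<Longrightarrow> (a \<oplus>\<^bsub>A\<^esub> b) \<oplus>\<^bsub>A\<^esub> \<ominus>\<^bsub>A\<^esub> a \<oplus>\<^bsub>A\<^esub> \<ominus>\<^bsub>A\<^esub> b = \<zero>\<^bsub>A\<^esub>"
proof -
  assume c: "a \<in> carrier A" "b \<in> carrier A"
  have "(a \<oplus>\<^bsub>A\<^esub> b) \<oplus>\<^bsub>A\<^esub> \<ominus>\<^bsub>A\<^esub> a = b \<oplus>\<^bsub>A\<^esub> (a \<oplus>\<^bsub>A\<^esub> \<ominus>\<^bsub>A\<^esub> a)" using c by (simp add: A.a_ac)
  then show ?thesis using c by (simp add: A.r_neg)
qed

lemma w_zero: "w \<in> W \<Longrightarrow> y \<in> carrier N \<Longrightarrow> w \<zero> y = \<zero>\<^bsub>A\<^esub>"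
proof -
  assume a: "w \<in> W" "y \<in> carrier N"
  have "w \<zero> y = w \<zero> y \<oplus>\<^bsub>A\<^esub> w \<zero> y" using w_add[OF a(1) _ _ a(2), of \<zero> \<zero>] by simp
  moreover have c: "w \<zero> y \<in> carrier A" using w_closed[OF a(1) _ a(2), of \<zero>] by simp
  ultimately show ?thesis using A.add.l_cancel_one'[OF c c] by simp
qed

lemma w_neg: "w \<in> W \<Longrightarrow> r \<in> carrier R \<Longrightarrow> y \<in> carrier N \<Longrightarrow> w (\<ominus> r) y = \<ominus>\<^bsub>A\<^esub> w r y"
proof -
  assume a: "w \<in> W" "r \<in> carrier R" "y \<in> carrier N"
  have "w (\<ominus> r) y \<oplus>\<^bsub>A\<^esub> w r y = \<zero>\<^bsub>A\<^esub>"
    using w_add[OF a(1) _ a(2) a(3), of "\<ominus> r"] a w_zero by (simp add: R.l_neg)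
  moreover have "w (\<ominus> r) y \<in> carrier A" "w r y \<in> carrier A" using a w_closed by auto
  ultimately show ?thesis by (intro sym[OF A.minus_equality]) auto
qed

lemma ev_add:
  assumes "w \<in> W" "finite B" "B \<subseteq> carrier N" "\<And>x. k1 x \<in> carrier R" "\<And>x. k2 x \<in> carrier R"
  shows "finsum A (\<lambda>x. w (k1 x \<oplus> k2 x) x) B = finsum A (\<lambda>x. w (k1 x) x) B \<oplus>\<^bsub>A\<^esub> finsum A (\<lambda>x. w (k2 x) x) B"
proof -
  have "finsum A (\<lambda>x. w (k1 x \<oplus> k2 x) x) B = finsum A (\<lambda>x. w (k1 x) x \<oplus>\<^bsub>A\<^esub> w (k2 x) x) B"
    using assms by (intro A.finsum_cong') (auto simp: w_add w_closed)
  also have "\<dots> = finsum A (\<lambda>x. w (k1 x) x) B \<oplus>\<^bsub>A\<^esub> finsum A (\<lambda>x. w (k2 x) x) B"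
    using assms by (intro A.finsum_addf) (auto simp: w_closed)
  finally show ?thesis .
qed

lemma ev_neg:
  assumes "w \<in> W" "finite B" "B \<subseteq> carrier N" "\<And>x. k x \<in> carrier R"
  shows "finsum A (\<lambda>x. w (\<ominus> k x) x) B = \<ominus>\<^bsub>A\<^esub> finsum A (\<lambda>x. w (k x) x) B"
proof -
  have "finsum A (\<lambda>x. w (\<ominus> k x) x) B = finsum A (\<lambda>x. \<ominus>\<^bsub>A\<^esub> w (k x) x) B"
    using assms by (intro A.finsum_cong') (auto simp: w_neg w_closed)
  also have "\<dots> = \<ominus>\<^bsub>A\<^esub> finsum A (\<lambda>x. w (k x) x) B"
    using assms by (intro A.fs_neg) (auto simp: w_closed)
  finally show ?thesis .
qed

lemma ev_delta:
  assumes "w \<in> W" "finite B" "B \<subseteq> carrier N" "p \<in> B" "c \<in> carrier R"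
  shows "finsum A (\<lambda>x. w (fdelta R p c x) x) B = w c p"
proof -
  have "finsum A (\<lambda>x. w (fdelta R p c x) x) B = finsum A (\<lambda>x. if x = p then w c p else \<zero>\<^bsub>A\<^esub>) B"
    using assms by (intro A.finsum_cong') (auto simp: fdelta_def w_zero w_closed)
  also have "\<dots> = w c p" using assms by (subst A.fs_delta) (auto simp: w_closed)
  finally show ?thesis .
qed

lemma ev_ext:
  assumes "w \<in> W" "finite B" "B \<subseteq> carrier N" "fsupp R k \<subseteq> B" "\<And>x. k x \<in> carrier R"
  shows "finsum A (\<lambda>x. w (k x) x) (fsupp R k) = finsum A (\<lambda>x. w (k x) x) B"
  using assms by (intro A.fs_extend) (auto simp: fsupp_def w_zero w_closed)

lemma Kset_intro:
  assumes "\<And>x. k x \<in> carrier R" "\<And>x. x \<notin> carrier N \<Longrightarrow> k x = \<zero>" "finite B" "B \<subseteq> carrier N"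
    "fsupp R k \<subseteq> B" "\<And>w. w \<in> W \<Longrightarrow> finsum A (\<lambda>x. w (k x) x) B = \<zero>\<^bsub>A\<^esub>"
  shows "k \<in> Kset R A W (carrier N)"
  unfolding Kset_def using assms ev_ext finite_subset[OF assms(5,3)] by auto

lemma k_add_K:
  assumes "m \<in> carrier N" "m' \<in> carrier N"
  shows "fminus R (fminus R (fdelta R (m \<oplus>\<^bsub>N\<^esub> m') \<one>) (fdelta R m \<one>)) (fdelta R m' \<one>) \<in> Kset R A W (carrier N)"
proof (rule Kset_intro[where B = "{m \<oplus>\<^bsub>N\<^esub> m', m, m'}"])
  fix w assume w: "w \<in> W"
  let ?B = "{m \<oplus>\<^bsub>N\<^esub> m', m, m'}"
  have B: "finite ?B" "?B \<subseteq> carrier N" using assms N_add by auto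
  have "finsum A (\<lambda>x. w (fminus R (fminus R (fdelta R (m \<oplus>\<^bsub>N\<^esub> m') \<one>) (fdelta R m \<one>)) (fdelta R m' \<one>) x) x) ?B
     = finsum A (\<lambda>x. w ((fdelta R (m \<oplus>\<^bsub>N\<^esub> m') \<one> x \<oplus> \<ominus> fdelta R m \<one> x) \<oplus> \<ominus> fdelta R m' \<one> x) x) ?B"
    by (simp add: fminus_def fadd_def fneg_def)
  also have "\<dots> = (finsum A (\<lambda>x. w (fdelta R (m \<oplus>\<^bsub>N\<^esub> m') \<one> x) x) ?B \<oplus>\<^bsub>A\<^esub> finsum A (\<lambda>x. w (\<ominus> fdelta R m \<one> x) x) ?B)
      \<oplus>\<^bsub>A\<^esub> finsum A (\<lambda>x. w (\<ominus> fdelta R m' \<one> x) x) ?B"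
    using ev_add[OF w B, of "\<lambda>x. fdelta R (m \<oplus>\<^bsub>N\<^esub> m') \<one> x \<oplus> \<ominus> fdelta R m \<one> x" "\<lambda>x. \<ominus> fdelta R m' \<one> x"]
      ev_add[OF w B, of "fdelta R (m \<oplus>\<^bsub>N\<^esub> m') \<one>" "\<lambda>x. \<ominus> fdelta R m \<one> x"] by simp
  also have "\<dots> = (w \<one> (m \<oplus>\<^bsub>N\<^esub> m') \<oplus>\<^bsub>A\<^esub> \<ominus>\<^bsub>A\<^esub> w \<one> m) \<oplus>\<^bsub>A\<^esub> \<ominus>\<^bsub>A\<^esub> w \<one> m'"
    using ev_neg[OF w B, of "fdelta R m \<one>"] ev_neg[OF w B, of "fdelta R m' \<one>"]
      ev_delta[OF w B] by simp
  also have "\<dots> = \<zero>\<^bsub>A\<^esub>"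
    using w assms by (simp add: w_1add w_closed ag3)
  finally show "finsum A (\<lambda>x. w (fminus R (fminus R (fdelta R (m \<oplus>\<^bsub>N\<^esub> m') \<one>) (fdelta R m \<one>)) (fdelta R m' \<one>) x) x) ?B = \<zero>\<^bsub>A\<^esub>" .
qed (use assms N_add in \<open>auto simp: fminus_def fadd_def fneg_def fdelta_def fsupp_def\<close>)

lemma k_sm_K:
  assumes "r \<in> carrier R" "m \<in> carrier N"
  shows "fminus R (fdelta R (r \<odot>\<^bsub>N\<^esub> m) \<one>) (fdelta R m r) \<in> Kset R A W (carrier N)"
proof (rule Kset_intro[where B = "{r \<odot>\<^bsub>N\<^esub> m, m}"])
  fix w assume w: "w \<in> W"
  let ?B = "{r \<odot>\<^bsub>N\<^esub> m, m}"
  have B: "finite ?B" "?B \<subseteq> carrier N" using assms N_sm by auto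
  have "finsum A (\<lambda>x. w (fminus R (fdelta R (r \<odot>\<^bsub>N\<^esub> m) \<one>) (fdelta R m r) x) x) ?B
     = finsum A (\<lambda>x. w (fdelta R (r \<odot>\<^bsub>N\<^esub> m) \<one> x \<oplus> \<ominus> fdelta R m r x) x) ?B"
    by (simp add: fminus_def fadd_def fneg_def)
  also have "\<dots> = finsum A (\<lambda>x. w (fdelta R (r \<odot>\<^bsub>N\<^esub> m) \<one> x) x) ?B \<oplus>\<^bsub>A\<^esub> finsum A (\<lambda>x. w (\<ominus> fdelta R m r x) x) ?B"
    using ev_add[OF w B, of "fdelta R (r \<odot>\<^bsub>N\<^esub> m) \<one>" "\<lambda>x. \<ominus> fdelta R m r x"] assms by simp
  also have "\<dots> = w \<one> (r \<odot>\<^bsub>N\<^esub> m) \<oplus>\<^bsub>A\<^esub> \<ominus>\<^bsub>A\<^esub> w r m"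
    using ev_neg[OF w B, of "fdelta R m r"] ev_delta[OF w B] assms by simp
  also have "\<dots> = \<zero>\<^bsub>A\<^esub>"
    using w assms by (simp add: w_1sm w_closed A.r_neg)
  finally show "finsum A (\<lambda>x. w (fminus R (fdelta R (r \<odot>\<^bsub>N\<^esub> m) \<one>) (fdelta R m r) x) x) ?B = \<zero>\<^bsub>A\<^esub>" .
qed (use assms N_sm in \<open>auto simp: fminus_def fadd_def fneg_def fdelta_def fsupp_def\<close>)

lemma Zset_step:
  assumes "k \<in> Zset R S h K" "s \<in> carrier S" "kn \<in> K" "\<And>x. kn x \<in> carrier R" "\<And>x. h (kn x) = r x"
    and KR: "\<And>k' x. k' \<in> K \<Longrightarrow> k' x \<in> carrier R"
  shows "fadd S k (fsmult S s r) \<in> Zset R S h K"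
proof -
  from assms(1) have "\<exists>(L::nat set) u kk. finite L \<and> u \<in> L \<rightarrow> carrier S \<and> (\<forall>l\<in>L. kk l \<in> K) \<and>
      k = (\<lambda>x. finsum S (\<lambda>l. u l \<otimes>\<^bsub>S\<^esub> h (kk l x)) L)" by (simp add: Zset_def)
  then obtain L u kk where L: "finite (L::nat set)" "u \<in> L \<rightarrow> carrier S" "\<forall>l\<in>L. kk l \<in> K"
      and k: "k = (\<lambda>x. finsum S (\<lambda>l. u l \<otimes>\<^bsub>S\<^esub> h (kk l x)) L)" by blast
  obtain n where n: "n \<notin> L" using L(1) infinite_UNIV_nat ex_new_if_finite by blast
  have "fadd S k (fsmult S s r) = (\<lambda>x. finsum S (\<lambda>l. (u(n := s)) l \<otimes>\<^bsub>S\<^esub> h ((kk(n := kn)) l x)) (insert n L))"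
  proof
    fix x
    have c1: "(\<lambda>l. (u(n := s)) l \<otimes>\<^bsub>S\<^esub> h ((kk(n := kn)) l x)) \<in> L \<rightarrow> carrier S"
    proof
      fix l assume l: "l \<in> L"
      then have "kk l x \<in> carrier R" using L(3) KR by blast
      then show "(u(n := s)) l \<otimes>\<^bsub>S\<^esub> h ((kk(n := kn)) l x) \<in> carrier S" using l n L(2) by auto
    qed
    have c2: "(u(n := s)) n \<otimes>\<^bsub>S\<^esub> h ((kk(n := kn)) n x) \<in> carrier S" using assms(2,4) by simp
    have "finsum S (\<lambda>l. (u(n := s)) l \<otimes>\<^bsub>S\<^esub> h ((kk(n := kn)) l x)) (insert n L)
          = (u(n := s)) n \<otimes>\<^bsub>S\<^esub> h ((kk(n := kn)) n x) \<oplus>\<^bsub>S\<^esub> finsum S (\<lambda>l. (u(n := s)) l \<otimes>\<^bsub>S\<^esub> h ((kk(n := kn)) l x)) L"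
      using S.finsum_insert[OF L(1) n c1 c2] .
    also have "finsum S (\<lambda>l. (u(n := s)) l \<otimes>\<^bsub>S\<^esub> h ((kk(n := kn)) l x)) L = k x"
      unfolding k using n c1 by (intro S.finsum_cong') (auto simp: Pi_def split: if_splits)
    also have "(u(n := s)) n \<otimes>\<^bsub>S\<^esub> h ((kk(n := kn)) n x) = s \<otimes>\<^bsub>S\<^esub> r x"
      using assms(5) by simp
    finally have e: "finsum S (\<lambda>l. (u(n := s)) l \<otimes>\<^bsub>S\<^esub> h ((kk(n := kn)) l x)) (insert n L) = s \<otimes>\<^bsub>S\<^esub> r x \<oplus>\<^bsub>S\<^esub> k x" .
    have kx: "k x \<in> carrier S" unfolding k using c1 n by (intro S.finsum_closed) (auto simp: Pi_def split: if_splits)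
    have rx: "s \<otimes>\<^bsub>S\<^esub> r x \<in> carrier S" using c2 assms(5) by simp
    show "fadd S k (fsmult S s r) x = finsum S (\<lambda>l. (u(n := s)) l \<otimes>\<^bsub>S\<^esub> h ((kk(n := kn)) l x)) (insert n L)"
      unfolding e fadd_def fsmult_def using S.a_comm[OF kx rx] .
  qed
  moreover have "u(n := s) \<in> insert n L \<rightarrow> carrier S" using L(2) assms(2) n by auto
  moreover have "\<forall>l\<in>insert n L. (kk(n := kn)) l \<in> K" using L(3) assms(3) n by auto
  ultimately show ?thesis unfolding Zset_def using L(1) by blast
qed

lemma TR_Zset: "tensor_rel R S h N \<subseteq> Zset R S h (Kset R A W (carrier N))"
proof
  fix f assume "f \<in> tensor_rel R S h N"
  then show "f \<in> Zset R S h (Kset R A W (carrier N))"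
  proof induction
    case zero
    show ?case unfolding Zset_def
      by (rule CollectI, rule exI[of _ "{}::nat set"], rule exI[of _ "\<lambda>_. \<zero>\<^bsub>S\<^esub>"], rule exI[of _ "\<lambda>_ _. \<zero>"]) simp
  next
    case (add_rel k s m m')
    let ?k = "fminus R (fminus R (fdelta R (m \<oplus>\<^bsub>N\<^esub> m') \<one>) (fdelta R m \<one>)) (fdelta R m' \<one>)"
    let ?r = "fminus S (fminus S (fdelta S (m \<oplus>\<^bsub>N\<^esub> m') \<one>\<^bsub>S\<^esub>) (fdelta S m \<one>\<^bsub>S\<^esub>)) (fdelta S m' \<one>\<^bsub>S\<^esub>)"
    have kK: "?k \<in> Kset R A W (carrier N)" using k_add_K add_rel by simp
    have hk: "\<And>x. h (?k x) = ?r x"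
      by (simp add: h_fminus h_fdelta fminus_def fadd_def fneg_def)
    have kc: "\<And>x. ?k x \<in> carrier R" by simp
    show ?case using Zset_step[OF add_rel.IH \<open>s \<in> carrier S\<close> kK kc, of ?r] hk by (simp add: Kset_def)
  next
    case (smult_rel k s r m)
    let ?k = "fminus R (fdelta R (r \<odot>\<^bsub>N\<^esub> m) \<one>) (fdelta R m r)"
    let ?r = "fminus S (fdelta S (r \<odot>\<^bsub>N\<^esub> m) \<one>\<^bsub>S\<^esub>) (fdelta S m (h r))"
    have kK: "?k \<in> Kset R A W (carrier N)" using k_sm_K smult_rel.hyps by simp
    have hk: "\<And>x. h (?k x) = ?r x"
      using \<open>r \<in> carrier R\<close> by (simp add: h_fminus h_fdelta fminus_def fadd_def fneg_def)
    have kc: "\<And>x. ?k x \<in> carrier R" using \<open>r \<in> carrier R\<close> by simp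
    show ?case using Zset_step[OF smult_rel.IH \<open>s \<in> carrier S\<close> kK kc, of ?r] hk by (simp add: Kset_def)
  qed
qed

end

lemma wsys_module:
  assumes "ring_hom_cring R S h" "module R M"
  shows "wsys R S h M M {\<lambda>r y. r \<odot>\<^bsub>M\<^esub> y}"
proof -
  interpret ring_hom_cring R S h by fact
  interpret module R M by fact
  show ?thesis
    by unfold_locales (auto simp: smult_l_distr smult_r_distr smult_assoc1)
qed

context ring_hom_cring begin

lemma S_id: "e \<in> carrier S \<Longrightarrow> z \<in> carrier S \<Longrightarrow> d1 \<in> carrier S \<Longrightarrow> d2 \<in> carrier S \<Longrightarrow> d3 \<in> carrier S \<Longrightarrow>
  (e \<oplus>\<^bsub>S\<^esub> z) \<oplus>\<^bsub>S\<^esub> \<ominus>\<^bsub>S\<^esub> d3 = ((e \<oplus>\<^bsub>S\<^esub> \<ominus>\<^bsub>S\<^esub> d1) \<oplus>\<^bsub>S\<^esub> \<ominus>\<^bsub>S\<^esub> \<one>\<^bsub>S\<^esub> \<otimes>\<^bsub>S\<^esub> (d2 \<oplus>\<^bsub>S\<^esub> \<ominus>\<^bsub>S\<^esub> z))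
     \<oplus>\<^bsub>S\<^esub> \<ominus>\<^bsub>S\<^esub> \<one>\<^bsub>S\<^esub> \<otimes>\<^bsub>S\<^esub> ((d3 \<oplus>\<^bsub>S\<^esub> \<ominus>\<^bsub>S\<^esub> d2) \<oplus>\<^bsub>S\<^esub> \<ominus>\<^bsub>S\<^esub> d1)"
  by algebra

lemma S_id0: "d \<in> carrier S \<Longrightarrow> \<one>\<^bsub>S\<^esub> \<otimes>\<^bsub>S\<^esub> ((d \<oplus>\<^bsub>S\<^esub> \<ominus>\<^bsub>S\<^esub> d) \<oplus>\<^bsub>S\<^esub> \<ominus>\<^bsub>S\<^esub> d) = \<zero>\<^bsub>S\<^esub> \<oplus>\<^bsub>S\<^esub> \<ominus>\<^bsub>S\<^esub> d"
  by algebra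

lemma S_id1: "a \<in> carrier S \<Longrightarrow> d \<in> carrier S \<Longrightarrow> a = (a \<oplus>\<^bsub>S\<^esub> \<ominus>\<^bsub>S\<^esub> d) \<oplus>\<^bsub>S\<^esub> \<ominus>\<^bsub>S\<^esub> \<one>\<^bsub>S\<^esub> \<otimes>\<^bsub>S\<^esub> (\<zero>\<^bsub>S\<^esub> \<oplus>\<^bsub>S\<^esub> \<ominus>\<^bsub>S\<^esub> d)"
  by algebra

context
  fixes M :: "('a, 'm) module" and C :: "'m set"
  assumes M: "module R M" and C: "C \<subseteq> carrier M" "\<zero>\<^bsub>M\<^esub> \<in> C"
    "\<And>x y. x \<in> C \<Longrightarrow> y \<in> C \<Longrightarrow> x \<oplus>\<^bsub>M\<^esub> y \<in> C"
    "\<And>r x. r \<in> carrier R \<Longrightarrow> x \<in> C \<Longrightarrow> r \<odot>\<^bsub>M\<^esub> x \<in> C"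
begin

interpretation M: module R M by (rule M)

lemma TRC_base: "fminus S (\<lambda>x. \<zero>\<^bsub>S\<^esub>) (fdelta S \<zero>\<^bsub>M\<^esub> \<one>\<^bsub>S\<^esub>) \<in> tensor_rel R S h (M\<lparr>carrier := C\<rparr>)"
proof -
  have "fsmult S \<one>\<^bsub>S\<^esub> (fminus S (fminus S (fdelta S (\<zero>\<^bsub>M\<^esub> \<oplus>\<^bsub>M\<lparr>carrier := C\<rparr>\<^esub> \<zero>\<^bsub>M\<^esub>) \<one>\<^bsub>S\<^esub>)
       (fdelta S \<zero>\<^bsub>M\<^esub> \<one>\<^bsub>S\<^esub>)) (fdelta S \<zero>\<^bsub>M\<^esub> \<one>\<^bsub>S\<^esub>)) \<in> tensor_rel R S h (M\<lparr>carrier := C\<rparr>)"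
    using C by (intro TR_rel_add) auto
  moreover have "fsmult S \<one>\<^bsub>S\<^esub> (fminus S (fminus S (fdelta S (\<zero>\<^bsub>M\<^esub> \<oplus>\<^bsub>M\<lparr>carrier := C\<rparr>\<^esub> \<zero>\<^bsub>M\<^esub>) \<one>\<^bsub>S\<^esub>)
       (fdelta S \<zero>\<^bsub>M\<^esub> \<one>\<^bsub>S\<^esub>)) (fdelta S \<zero>\<^bsub>M\<^esub> \<one>\<^bsub>S\<^esub>)) = fminus S (\<lambda>x. \<zero>\<^bsub>S\<^esub>) (fdelta S \<zero>\<^bsub>M\<^esub> \<one>\<^bsub>S\<^esub>)"
  proof
    fix x
    show "fsmult S \<one>\<^bsub>S\<^esub> (fminus S (fminus S (fdelta S (\<zero>\<^bsub>M\<^esub> \<oplus>\<^bsub>M\<lparr>carrier := C\<rparr>\<^esub> \<zero>\<^bsub>M\<^esub>) \<one>\<^bsub>S\<^esub>)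
       (fdelta S \<zero>\<^bsub>M\<^esub> \<one>\<^bsub>S\<^esub>)) (fdelta S \<zero>\<^bsub>M\<^esub> \<one>\<^bsub>S\<^esub>)) x = fminus S (\<lambda>x. \<zero>\<^bsub>S\<^esub>) (fdelta S \<zero>\<^bsub>M\<^esub> \<one>\<^bsub>S\<^esub>) x"
      unfolding fsmult_def fminus_def fadd_def fneg_def
      using S_id0[of "fdelta S \<zero>\<^bsub>M\<^esub> \<one>\<^bsub>S\<^esub> x"] by simp
  qed
  ultimately show ?thesis by simp
qed

lemma TRC_delta:
  assumes "finite D" "D \<subseteq> C" "\<And>x. k x \<in> carrier R"
  shows "fminus S (\<lambda>x. if x \<in> D then h (k x) else \<zero>\<^bsub>S\<^esub>) (fdelta S (finsum M (\<lambda>x. k x \<odot>\<^bsub>M\<^esub> x) D) \<one>\<^bsub>S\<^esub>)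
     \<in> tensor_rel R S h (M\<lparr>carrier := C\<rparr>)"
  using assms(1,2)
proof (induction D rule: finite_induct)
  case empty
  then show ?case using TRC_base by simp
next
  case (insert a D)
  let ?N = "M\<lparr>carrier := C\<rparr>"
  let ?\<sigma> = "finsum M (\<lambda>x. k x \<odot>\<^bsub>M\<^esub> x) D"
  let ?\<rho> = "k a \<odot>\<^bsub>M\<^esub> a"
  have aC: "a \<in> C" and DC: "D \<subseteq> C" using insert by auto
  have sC: "?\<sigma> \<in> C"
    using insert.hyps(1) DC
  proof (induction D rule: finite_induct)
    case empty then show ?case using C by simp
  next
    case (insert b D')
    then have "finsum M (\<lambda>x. k x \<odot>\<^bsub>M\<^esub> x) (insert b D') = k b \<odot>\<^bsub>M\<^esub> b \<oplus>\<^bsub>M\<^esub> finsum M (\<lambda>x. k x \<odot>\<^bsub>M\<^esub> x) D'"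
      using C assms(3) by (intro M.finsum_insert) auto
    then show ?case using insert C assms(3) by auto
  qed
  have rC: "?\<rho> \<in> C" using C aC assms(3) by auto
  have sum: "finsum M (\<lambda>x. k x \<odot>\<^bsub>M\<^esub> x) (insert a D) = ?\<rho> \<oplus>\<^bsub>M\<^esub> ?\<sigma>"
    using insert.hyps C DC aC assms(3) by (intro M.finsum_insert) auto
  have old: "fminus S (\<lambda>x. if x \<in> D then h (k x) else \<zero>\<^bsub>S\<^esub>) (fdelta S ?\<sigma> \<one>\<^bsub>S\<^esub>) \<in> tensor_rel R S h ?N"
    using insert by auto
  have T1: "fsmult S (\<ominus>\<^bsub>S\<^esub> \<one>\<^bsub>S\<^esub>) (fminus S (fdelta S (k a \<odot>\<^bsub>?N\<^esub> a) \<one>\<^bsub>S\<^esub>) (fdelta S a (h (k a)))) \<in> tensor_rel R S h ?N"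
    using aC assms(3) by (intro TR_rel_sm) auto
  have T2: "fsmult S (\<ominus>\<^bsub>S\<^esub> \<one>\<^bsub>S\<^esub>) (fminus S (fminus S (fdelta S (?\<rho> \<oplus>\<^bsub>?N\<^esub> ?\<sigma>) \<one>\<^bsub>S\<^esub>)
                                         (fdelta S ?\<rho> \<one>\<^bsub>S\<^esub>)) (fdelta S ?\<sigma> \<one>\<^bsub>S\<^esub>)) \<in> tensor_rel R S h ?N"
    using rC sC by (intro TR_rel_add) auto
  have "fminus S (\<lambda>x. if x \<in> insert a D then h (k x) else \<zero>\<^bsub>S\<^esub>) (fdelta S (?\<rho> \<oplus>\<^bsub>M\<^esub> ?\<sigma>) \<one>\<^bsub>S\<^esub>)
     = fadd S (fadd S (fminus S (\<lambda>x. if x \<in> D then h (k x) else \<zero>\<^bsub>S\<^esub>) (fdelta S ?\<sigma> \<one>\<^bsub>S\<^esub>))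
         (fsmult S (\<ominus>\<^bsub>S\<^esub> \<one>\<^bsub>S\<^esub>) (fminus S (fdelta S (k a \<odot>\<^bsub>?N\<^esub> a) \<one>\<^bsub>S\<^esub>) (fdelta S a (h (k a))))))
       (fsmult S (\<ominus>\<^bsub>S\<^esub> \<one>\<^bsub>S\<^esub>) (fminus S (fminus S (fdelta S (?\<rho> \<oplus>\<^bsub>?N\<^esub> ?\<sigma>) \<one>\<^bsub>S\<^esub>)
                                         (fdelta S ?\<rho> \<one>\<^bsub>S\<^esub>)) (fdelta S ?\<sigma> \<one>\<^bsub>S\<^esub>)))"
  proof
    fix x
    have ez: "(if x \<in> insert a D then h (k x) else \<zero>\<^bsub>S\<^esub>) = (if x \<in> D then h (k x) else \<zero>\<^bsub>S\<^esub>) \<oplus>\<^bsub>S\<^esub> fdelta S a (h (k a)) x"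
      using insert.hyps(2) assms(3) by (auto simp: fdelta_def)
    have c: "(if x \<in> D then h (k x) else \<zero>\<^bsub>S\<^esub>) \<in> carrier S" "fdelta S a (h (k a)) x \<in> carrier S"
      using assms(3) by auto
    have d: "fdelta S ?\<sigma> \<one>\<^bsub>S\<^esub> x \<in> carrier S" "fdelta S ?\<rho> \<one>\<^bsub>S\<^esub> x \<in> carrier S"
      "fdelta S (?\<rho> \<oplus>\<^bsub>M\<^esub> ?\<sigma>) \<one>\<^bsub>S\<^esub> x \<in> carrier S" by simp_all
    show "fminus S (\<lambda>x. if x \<in> insert a D then h (k x) else \<zero>\<^bsub>S\<^esub>) (fdelta S (?\<rho> \<oplus>\<^bsub>M\<^esub> ?\<sigma>) \<one>\<^bsub>S\<^esub>) x
     = fadd S (fadd S (fminus S (\<lambda>x. if x \<in> D then h (k x) else \<zero>\<^bsub>S\<^esub>) (fdelta S ?\<sigma> \<one>\<^bsub>S\<^esub>))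
         (fsmult S (\<ominus>\<^bsub>S\<^esub> \<one>\<^bsub>S\<^esub>) (fminus S (fdelta S (k a \<odot>\<^bsub>?N\<^esub> a) \<one>\<^bsub>S\<^esub>) (fdelta S a (h (k a))))))
       (fsmult S (\<ominus>\<^bsub>S\<^esub> \<one>\<^bsub>S\<^esub>) (fminus S (fminus S (fdelta S (?\<rho> \<oplus>\<^bsub>?N\<^esub> ?\<sigma>) \<one>\<^bsub>S\<^esub>)
                                         (fdelta S ?\<rho> \<one>\<^bsub>S\<^esub>)) (fdelta S ?\<sigma> \<one>\<^bsub>S\<^esub>))) x"
      unfolding fminus_def fadd_def fneg_def fsmult_def ez
      using S_id[OF c d]
      by simp
  qed
  then show ?case unfolding sum using TR_add[OF T2 TR_add[OF T1 old]] by simp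
qed

lemma TRC_K:
  assumes "k \<in> Kset R M {\<lambda>r y. r \<odot>\<^bsub>M\<^esub> y} C"
  shows "(\<lambda>x. h (k x)) \<in> tensor_rel R S h (M\<lparr>carrier := C\<rparr>)"
proof -
  let ?D = "fsupp R k"
  have k: "\<And>x. k x \<in> carrier R" "\<And>x. x \<notin> C \<Longrightarrow> k x = \<zero>" "finite ?D"
     "finsum M (\<lambda>x. k x \<odot>\<^bsub>M\<^esub> x) ?D = \<zero>\<^bsub>M\<^esub>"
    using assms unfolding Kset_def by auto
  have DC: "?D \<subseteq> C" using k(2) unfolding fsupp_def by auto
  have e: "(\<lambda>x. if x \<in> ?D then h (k x) else \<zero>\<^bsub>S\<^esub>) = (\<lambda>x. h (k x))"
    by (auto simp: fsupp_def)
  have a: "fminus S (\<lambda>x. h (k x)) (fdelta S \<zero>\<^bsub>M\<^esub> \<one>\<^bsub>S\<^esub>) \<in> tensor_rel R S h (M\<lparr>carrier := C\<rparr>)"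
    using TRC_delta[of ?D k, OF k(3) DC k(1)] unfolding e k(4) .
  have b: "fsmult S (\<ominus>\<^bsub>S\<^esub> \<one>\<^bsub>S\<^esub>) (fminus S (\<lambda>x. \<zero>\<^bsub>S\<^esub>) (fdelta S \<zero>\<^bsub>M\<^esub> \<one>\<^bsub>S\<^esub>)) \<in> tensor_rel R S h (M\<lparr>carrier := C\<rparr>)"
    using TRC_base by (intro TR_smult) auto
  have "(\<lambda>x. h (k x)) = fadd S (fminus S (\<lambda>x. h (k x)) (fdelta S \<zero>\<^bsub>M\<^esub> \<one>\<^bsub>S\<^esub>)) (fsmult S (\<ominus>\<^bsub>S\<^esub> \<one>\<^bsub>S\<^esub>) (fminus S (\<lambda>x. \<zero>\<^bsub>S\<^esub>) (fdelta S \<zero>\<^bsub>M\<^esub> \<one>\<^bsub>S\<^esub>)))"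
  proof
    fix x show "h (k x) = fadd S (fminus S (\<lambda>x. h (k x)) (fdelta S \<zero>\<^bsub>M\<^esub> \<one>\<^bsub>S\<^esub>)) (fsmult S (\<ominus>\<^bsub>S\<^esub> \<one>\<^bsub>S\<^esub>) (fminus S (\<lambda>x. \<zero>\<^bsub>S\<^esub>) (fdelta S \<zero>\<^bsub>M\<^esub> \<one>\<^bsub>S\<^esub>))) x"
      unfolding fminus_def fadd_def fneg_def fsmult_def
      using S_id1[of "h (k x)" "fdelta S \<zero>\<^bsub>M\<^esub> \<one>\<^bsub>S\<^esub> x"] k(1) by simp
  qed
  then show ?thesis using TR_add[OF b a] by simp
qed

lemma ZTR:
  assumes "finite L" "u \<in> L \<rightarrow> carrier S" "\<And>l. l \<in> L \<Longrightarrow> kk l \<in> Kset R M {\<lambda>r y. r \<odot>\<^bsub>M\<^esub> y} C"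
  shows "(\<lambda>x. finsum S (\<lambda>l. u l \<otimes>\<^bsub>S\<^esub> h (kk l x)) L) \<in> tensor_rel R S h (M\<lparr>carrier := C\<rparr>)"
proof -
  have "(\<lambda>x. finsum S (\<lambda>l. fsmult S (u l) (\<lambda>x. h (kk l x)) x) L) \<in> tensor_rel R S h (M\<lparr>carrier := C\<rparr>)"
    using assms by (intro TR_sum TR_smult TRC_K) auto
  then show ?thesis by (simp add: fsmult_def)
qed

end

end

context cring begin

definition combs :: "'c set \<Rightarrow> ('c \<Rightarrow> 'a) \<Rightarrow> 'a set" where
  "combs J r = {finsum R (\<lambda>j. c j \<otimes> r j) J | c. c \<in> J \<rightarrow> carrier R}"

lemma combs_ideal:
  assumes "finite J" "r \<in> J \<rightarrow> carrier R"
  shows "ideal (combs J r) R"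
proof (rule idealI)
  show "ring R" by (rule ring_axioms)
  have sub: "combs J r \<subseteq> carrier R"
  proof
    fix x assume "x \<in> combs J r"
    then obtain c where c: "c \<in> J \<rightarrow> carrier R" "x = finsum R (\<lambda>j. c j \<otimes> r j) J"
      unfolding combs_def by blast
    have "(\<lambda>j. c j \<otimes> r j) \<in> J \<rightarrow> carrier R" using c(1) assms(2) by (auto simp: Pi_def)
    then show "x \<in> carrier R" unfolding c(2) by (rule finsum_closed)
  qed
  have cE: "\<exists>c. c \<in> J \<rightarrow> carrier R \<and> a = finsum R (\<lambda>j. c j \<otimes> r j) J" if "a \<in> combs J r" for a
    using that unfolding combs_def by blast
  have cI: "finsum R (\<lambda>j. c j \<otimes> r j) J \<in> combs J r" if "c \<in> J \<rightarrow> carrier R" for c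
    using that unfolding combs_def by blast
  have add: "a \<oplus> b \<in> combs J r" if ha: "a \<in> combs J r" "b \<in> combs J r" for a b
  proof -
    obtain c where c: "c \<in> J \<rightarrow> carrier R" "a = finsum R (\<lambda>j. c j \<otimes> r j) J"
      using cE[OF ha(1)] by blast
    obtain d where d: "d \<in> J \<rightarrow> carrier R" "b = finsum R (\<lambda>j. d j \<otimes> r j) J"
      using cE[OF ha(2)] by blast
    have p1: "(\<lambda>j. c j \<otimes> r j) \<in> J \<rightarrow> carrier R" "(\<lambda>j. d j \<otimes> r j) \<in> J \<rightarrow> carrier R"
      using c(1) d(1) assms(2) by (auto simp: Pi_def)
    have "a \<oplus> b = finsum R (\<lambda>j. c j \<otimes> r j \<oplus> d j \<otimes> r j) J"
      unfolding c(2) d(2) using finsum_addf[OF p1] by simp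
    also have "\<dots> = finsum R (\<lambda>j. (c j \<oplus> d j) \<otimes> r j) J"
    proof (rule finsum_cong')
      show "(\<lambda>j. (c j \<oplus> d j) \<otimes> r j) \<in> J \<rightarrow> carrier R" using c(1) d(1) assms(2) by (auto simp: Pi_def)
      show "\<And>i. i \<in> J \<Longrightarrow> c i \<otimes> r i \<oplus> d i \<otimes> r i = (c i \<oplus> d i) \<otimes> r i"
        using c(1) d(1) assms(2) by (auto simp: Pi_def l_distr)
    qed simp
    finally show ?thesis using cI[of "\<lambda>j. c j \<oplus> d j"] c(1) d(1) by (auto simp: Pi_def)
  qed
  have neg: "\<ominus> a \<in> combs J r" if ha: "a \<in> combs J r" for a
  proof -
    obtain c where c: "c \<in> J \<rightarrow> carrier R" "a = finsum R (\<lambda>j. c j \<otimes> r j) J"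
      using cE[OF ha(1)] by blast
    have p1: "(\<lambda>j. c j \<otimes> r j) \<in> J \<rightarrow> carrier R"
      using c(1) assms(2) by (auto simp: Pi_def)
    have "\<ominus> a = finsum R (\<lambda>j. \<ominus> (c j \<otimes> r j)) J"
      unfolding c(2) using fs_neg[OF assms(1) p1] by simp
    also have "\<dots> = finsum R (\<lambda>j. (\<ominus> c j) \<otimes> r j) J"
    proof (rule finsum_cong')
      show "(\<lambda>j. (\<ominus> c j) \<otimes> r j) \<in> J \<rightarrow> carrier R" using c(1) assms(2) by (auto simp: Pi_def)
      show "\<And>i. i \<in> J \<Longrightarrow> \<ominus> (c i \<otimes> r i) = (\<ominus> c i) \<otimes> r i"
        using c(1) assms(2) by (auto simp: Pi_def l_minus)
    qed simp
    finally show ?thesis using cI[of "\<lambda>j. \<ominus> c j"] c(1) by (auto simp: Pi_def)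
  qed
  have lc: "x \<otimes> a \<in> combs J r" if ha: "a \<in> combs J r" "x \<in> carrier R" for a x
  proof -
    obtain c where c: "c \<in> J \<rightarrow> carrier R" "a = finsum R (\<lambda>j. c j \<otimes> r j) J"
      using cE[OF ha(1)] by blast
    have p1: "(\<lambda>j. c j \<otimes> r j) \<in> J \<rightarrow> carrier R"
      using c(1) assms(2) by (auto simp: Pi_def)
    have "x \<otimes> a = finsum R (\<lambda>j. x \<otimes> (c j \<otimes> r j)) J"
      unfolding c(2) using finsum_rdistr[OF assms(1) ha(2) p1] by simp
    also have "\<dots> = finsum R (\<lambda>j. (x \<otimes> c j) \<otimes> r j) J"
    proof (rule finsum_cong')
      show "(\<lambda>j. (x \<otimes> c j) \<otimes> r j) \<in> J \<rightarrow> carrier R" using c(1) assms(2) ha(2) by (auto simp: Pi_def)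
      show "\<And>i. i \<in> J \<Longrightarrow> x \<otimes> (c i \<otimes> r i) = (x \<otimes> c i) \<otimes> r i"
        using c(1) assms(2) ha(2) by (auto simp: Pi_def m_assoc)
    qed simp
    finally show ?thesis using cI[of "\<lambda>j. x \<otimes> c j"] c(1) ha(2) by (auto simp: Pi_def)
  qed
  have z: "\<zero> \<in> combs J r"
  proof -
    have "finsum R (\<lambda>j. (\<lambda>_. \<zero>) j \<otimes> r j) J = finsum R (\<lambda>j. \<zero>) J"
      using assms(2) by (intro finsum_cong') (auto simp: Pi_def)
    then have "\<zero> = finsum R (\<lambda>j. (\<lambda>_. \<zero>) j \<otimes> r j) J" by simp
    then show ?thesis using cI[of "\<lambda>_. \<zero>"] by simp
  qed
  show "subgroup (combs J r) (add_monoid R)"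
    using sub add neg z by (intro add.subgroupI) (auto simp: a_inv_def)
  show "\<And>a x. a \<in> combs J r \<Longrightarrow> x \<in> carrier R \<Longrightarrow> x \<otimes> a \<in> combs J r" by (rule lc)
  show "\<And>a x. a \<in> combs J r \<Longrightarrow> x \<in> carrier R \<Longrightarrow> a \<otimes> x \<in> combs J r"
    using lc sub by (metis m_comm subsetD)
qed

lemma combs_gen:
  assumes "finite J" "r \<in> J \<rightarrow> carrier R" "q \<in> J"
  shows "r q \<in> combs J r"
proof -
  have "finsum R (\<lambda>j. (\<lambda>j. if j = q then \<one> else \<zero>) j \<otimes> r j) J = finsum R (\<lambda>j. if j = q then r q else \<zero>) J"
    using assms by (intro finsum_cong') (auto simp: Pi_def)
  also have "\<dots> = r q" using assms by (subst fs_delta) auto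
  finally show ?thesis unfolding combs_def by (intro CollectI exI[of _ "\<lambda>j. if j = q then \<one> else \<zero>"]) auto
qed

end


context ring_hom_cring begin

lemma wsys_ideal:
  assumes "ideal I R"
  shows "wsys R S h R (ideal_module R I) {\<lambda>a y. a \<otimes> y}"
proof -
  interpret I: ideal I R by fact
  show ?thesis
  proof (intro wsys.intro wsys_axioms.intro)
    show "ring_hom_cring R S h" by (rule ring_hom_cring_axioms)
    show "abelian_group R" by (rule R.abelian_group_axioms)
    show "\<And>w r y. w \<in> {\<lambda>a y. a \<otimes> y} \<Longrightarrow> r \<in> carrier R \<Longrightarrow> y \<in> carrier (ideal_module R I) \<Longrightarrow> w r y \<in> carrier R"
      by (simp add: ideal_module_def I.Icarr)
    show "w (r \<oplus> r') y = w r y \<oplus> w r' y" if "w \<in> {\<lambda>a y. a \<otimes> y}" "r \<in> carrier R" "r' \<in> carrier R" "y \<in> carrier (ideal_module R I)" for w r r' y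
    proof -
      have "y \<in> carrier R" "w = (\<lambda>a y. a \<otimes> y)" using that by (auto simp: ideal_module_def I.Icarr)
      then show ?thesis using that R.l_distr by simp
    qed
    show "\<And>y y'. y \<in> carrier (ideal_module R I) \<Longrightarrow> y' \<in> carrier (ideal_module R I) \<Longrightarrow> y \<oplus>\<^bsub>ideal_module R I\<^esub> y' \<in> carrier (ideal_module R I)"
      by (simp add: ideal_module_def I.a_closed)
    show "\<And>r y. r \<in> carrier R \<Longrightarrow> y \<in> carrier (ideal_module R I) \<Longrightarrow> r \<odot>\<^bsub>ideal_module R I\<^esub> y \<in> carrier (ideal_module R I)"
      by (simp add: ideal_module_def I.I_l_closed)
    show "\<And>w y y'. w \<in> {\<lambda>a y. a \<otimes> y} \<Longrightarrow> y \<in> carrier (ideal_module R I) \<Longrightarrow> y' \<in> carrier (ideal_module R I) \<Longrightarrow>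
         w \<one> (y \<oplus>\<^bsub>ideal_module R I\<^esub> y') = w \<one> y \<oplus> w \<one> y'"
      by (simp add: ideal_module_def I.Icarr I.a_closed)
    show "\<And>w r y. w \<in> {\<lambda>a y. a \<otimes> y} \<Longrightarrow> r \<in> carrier R \<Longrightarrow> y \<in> carrier (ideal_module R I) \<Longrightarrow> w \<one> (r \<odot>\<^bsub>ideal_module R I\<^esub> y) = w r y"
      by (simp add: ideal_module_def I.Icarr I.I_l_closed)
  qed
qed

lemma SC:
  fixes J :: "nat set"
  assumes flat: "flat_hom R S h" and J: "finite J" and t: "t \<in> J \<rightarrow> carrier S" and r: "r \<in> J \<rightarrow> carrier R"
    and z: "finsum S (\<lambda>j. t j \<otimes>\<^bsub>S\<^esub> h (r j)) J = \<zero>\<^bsub>S\<^esub>"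
  shows "\<exists>(L::nat set) a u. finite L \<and> u \<in> L \<rightarrow> carrier S \<and> (\<forall>j l. a j l \<in> carrier R) \<and>
     (\<forall>j\<in>J. t j = finsum S (\<lambda>l. h (a j l) \<otimes>\<^bsub>S\<^esub> u l) L) \<and> (\<forall>l\<in>L. finsum R (\<lambda>j. a j l \<otimes> r j) J = \<zero>)"
proof -
  define I where "I = R.combs J r"
  have I: "ideal I R" unfolding I_def by (rule R.combs_ideal[OF J r])
  have rI: "\<And>q. q \<in> J \<Longrightarrow> r q \<in> I" unfolding I_def by (rule R.combs_gen[OF J r])
  have IR: "\<And>x. x \<in> I \<Longrightarrow> x \<in> carrier R" by (rule ideal.Icarr[OF I])
  define cr where "cr x = (SOME c. c \<in> J \<rightarrow> carrier R \<and> x = finsum R (\<lambda>j. c j \<otimes> r j) J)" for x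
  have cr: "cr x \<in> J \<rightarrow> carrier R \<and> x = finsum R (\<lambda>j. cr x j \<otimes> r j) J" if "x \<in> I" for x
  proof -
    have "\<exists>c. c \<in> J \<rightarrow> carrier R \<and> x = finsum R (\<lambda>j. c j \<otimes> r j) J"
      using that unfolding I_def R.combs_def by blast
    then show ?thesis unfolding cr_def by (rule someI_ex)
  qed
  define f where "f x = finsum S t {j\<in>J. r j = x}" for x
  have fc: "\<And>x. f x \<in> carrier S" unfolding f_def using t by (intro S.finsum_closed) auto
  have f0: "f x = \<zero>\<^bsub>S\<^esub>" if "x \<notin> r ` J" for x
  proof -
    have e: "{j\<in>J. r j = x} = {}" using that by auto
    show ?thesis unfolding f_def e by simp
  qed
  have fsup: "fsupp S f \<subseteq> r ` J" using f0 unfolding fsupp_def by blast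
  have cI: "carrier (ideal_module R I) = I" by (simp add: ideal_module_def)
  have ffree: "f \<in> free_on S (ideal_module R I)"
  proof -
    have "finite (fsupp S f)" using finite_subset[OF fsup] J by simp
    moreover have "\<forall>x. x \<notin> I \<longrightarrow> f x = \<zero>\<^bsub>S\<^esub>"
    proof (intro allI impI)
      fix x assume "x \<notin> I"
      then have "x \<notin> r ` J" using rI by auto
      then show "f x = \<zero>\<^bsub>S\<^esub>" by (rule f0)
    qed
    ultimately show ?thesis unfolding free_on_def cI using fc by simp
  qed
  have hc: "\<And>x. x \<in> r ` J \<Longrightarrow> h x \<in> carrier S" using r by auto
  have fsum: "finsum S (\<lambda>x. f x \<otimes>\<^bsub>S\<^esub> h x) (fsupp S f) = \<zero>\<^bsub>S\<^esub>"
  proof -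
    have "finsum S (\<lambda>x. f x \<otimes>\<^bsub>S\<^esub> h x) (fsupp S f) = finsum S (\<lambda>x. f x \<otimes>\<^bsub>S\<^esub> h x) (r ` J)"
      using J fsup fc hc f0 by (intro S.fs_extend) (auto simp: fsupp_def)
    also have "\<dots> = finsum S (\<lambda>x. finsum S (\<lambda>j. t j \<otimes>\<^bsub>S\<^esub> h (r j)) {j\<in>J. r j = x}) (r ` J)"
    proof (rule S.finsum_cong')
      fix x assume x: "x \<in> r ` J"
      have "f x \<otimes>\<^bsub>S\<^esub> h x = finsum S (\<lambda>j. t j \<otimes>\<^bsub>S\<^esub> h x) {j\<in>J. r j = x}"
        unfolding f_def using J t hc[OF x] by (intro S.finsum_ldistr) auto
      also have "\<dots> = finsum S (\<lambda>j. t j \<otimes>\<^bsub>S\<^esub> h (r j)) {j\<in>J. r j = x}"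
        using t hc[OF x] by (intro S.finsum_cong') auto
      finally show "f x \<otimes>\<^bsub>S\<^esub> h x = finsum S (\<lambda>j. t j \<otimes>\<^bsub>S\<^esub> h (r j)) {j\<in>J. r j = x}" .
    next
      show "(\<lambda>x. finsum S (\<lambda>j. t j \<otimes>\<^bsub>S\<^esub> h (r j)) {j\<in>J. r j = x}) \<in> r ` J \<rightarrow> carrier S"
        using t r by (auto intro!: S.finsum_closed)
    qed simp
    also have "\<dots> = finsum S (\<lambda>j. t j \<otimes>\<^bsub>S\<^esub> h (r j)) J"
      using J t r by (intro S.fs_fiber) auto
    finally show ?thesis using z by simp
  qed
  have "tensor_eq R S h (ideal_module R I) f (\<lambda>x. \<zero>\<^bsub>S\<^esub>)"
    using flat I ffree fsum unfolding flat_hom_def by blast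
  moreover have "fminus S f (\<lambda>x. \<zero>\<^bsub>S\<^esub>) = f" using fc by (auto simp: fminus_def fadd_def fneg_def)
  ultimately have fTR: "f \<in> tensor_rel R S h (ideal_module R I)" unfolding tensor_eq_def by simp
  interpret W: wsys R S h R "ideal_module R I" "{\<lambda>a y. a \<otimes> y}" using wsys_ideal[OF I] .
  have "f \<in> Zset R S h (Kset R R {\<lambda>a y. a \<otimes> y} I)" using W.TR_Zset fTR cI by auto
  then obtain L0 u0 kk where L0: "finite (L0::nat set)" "u0 \<in> L0 \<rightarrow> carrier S" "\<forall>l\<in>L0. kk l \<in> Kset R R {\<lambda>a y. a \<otimes> y} I"
    and fe: "f = (\<lambda>x. finsum S (\<lambda>l. u0 l \<otimes>\<^bsub>S\<^esub> h (kk l x)) L0)" unfolding Zset_def by blast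
  have kkc: "\<And>l x. l \<in> L0 \<Longrightarrow> kk l x \<in> carrier R" and kk0: "\<And>l x. l \<in> L0 \<Longrightarrow> x \<notin> I \<Longrightarrow> kk l x = \<zero>"
    and kkf: "\<And>l. l \<in> L0 \<Longrightarrow> finite (fsupp R (kk l))"
    and kkev: "\<And>l. l \<in> L0 \<Longrightarrow> finsum R (\<lambda>x. kk l x \<otimes> x) (fsupp R (kk l)) = \<zero>"
    using L0(3) unfolding Kset_def by auto
  define Bx where "Bx = r ` J \<union> (\<Union>l\<in>L0. fsupp R (kk l))"
  have Bx: "finite Bx" "Bx \<subseteq> I" using J L0(1) kkf rI kk0 unfolding Bx_def fsupp_def by auto
  have evX: "finsum R (\<lambda>x. kk l x \<otimes> x) Bx = \<zero>" if l: "l \<in> L0" for l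
  proof -
    have "finsum R (\<lambda>x. kk l x \<otimes> x) (fsupp R (kk l)) = finsum R (\<lambda>x. kk l x \<otimes> x) Bx"
      using W.ev_ext[of "\<lambda>a y. a \<otimes> y" Bx "kk l"] Bx l kkc cI unfolding Bx_def by auto
    then show ?thesis using kkev[OF l] by simp
  qed
  have crc: "cr x j \<in> carrier R" if "x \<in> I" "j \<in> J" for x j
    using cr[OF that(1)] that(2) by blast
  have crs: "finsum R (\<lambda>j. cr x j \<otimes> r j) J = x" if "x \<in> I" for x
    using cr[OF that] by simp
  have BxI: "\<And>x. x \<in> Bx \<Longrightarrow> x \<in> I" using Bx(2) by blast
  have rJB: "r ` J \<subseteq> Bx" unfolding Bx_def by blast
  define a where "a j l = (if j \<in> J then (if even l then (if l div 2 \<in> L0 then finsum R (\<lambda>x. kk (l div 2) x \<otimes> cr x j) Bx else \<zero>)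
      else (if l div 2 \<in> J then (if j = l div 2 then \<one> else \<zero>) \<ominus> cr (r (l div 2)) j else \<zero>)) else \<zero>)" for j l
  define u where "u l = (if even l then (if l div 2 \<in> L0 then u0 (l div 2) else \<zero>\<^bsub>S\<^esub>)
      else (if l div 2 \<in> J then t (l div 2) else \<zero>\<^bsub>S\<^esub>))" for l
  define L where "L = (\<lambda>p. 2*p) ` L0 \<union> (\<lambda>q. 2*q+1) ` J"
  have sumc: "(\<lambda>x. kk p x \<otimes> cr x j) \<in> Bx \<rightarrow> carrier R" if "p \<in> L0" "j \<in> J" for p j
    using that kkc crc BxI by auto
  have ac: "a j l \<in> carrier R" for j l
  proof -
    have "finsum R (\<lambda>x. kk (l div 2) x \<otimes> cr x j) Bx \<in> carrier R" if "l div 2 \<in> L0" "j \<in> J"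
      using sumc[OF that] by (rule R.finsum_closed)
    moreover have "cr (r (l div 2)) j \<in> carrier R" if "l div 2 \<in> J" "j \<in> J"
      using crc rI that by blast
    ultimately show ?thesis unfolding a_def by auto
  qed
  have uc: "u l \<in> carrier S" for l
    unfolding u_def using L0(2) t by auto
  have a_even: "a j (2*p) = finsum R (\<lambda>x. kk p x \<otimes> cr x j) Bx" if "j \<in> J" "p \<in> L0" for j p
    unfolding a_def using that by simp
  have a_odd: "a j (2*q+1) = (if j = q then \<one> else \<zero>) \<ominus> cr (r q) j" if "j \<in> J" "q \<in> J" for j q
    unfolding a_def using that by simp
  have u_even: "u (2*p) = u0 p" if "p \<in> L0" for p unfolding u_def using that by simp
  have u_odd: "u (2*q+1) = t q" if "q \<in> J" for q unfolding u_def using that by simp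
  have rc: "\<And>j. j \<in> J \<Longrightarrow> r j \<in> carrier R" using r by auto
  have tc: "\<And>j. j \<in> J \<Longrightarrow> t j \<in> carrier S" using t by auto
  have rel_even: "finsum R (\<lambda>j. a j (2*p) \<otimes> r j) J = \<zero>" if p: "p \<in> L0" for p
  proof -
    have fsc: "\<And>j. j \<in> J \<Longrightarrow> finsum R (\<lambda>x. kk p x \<otimes> cr x j) Bx \<in> carrier R"
      using sumc[OF p] by (rule R.finsum_closed)
    have "finsum R (\<lambda>j. a j (2*p) \<otimes> r j) J = finsum R (\<lambda>j. finsum R (\<lambda>x. kk p x \<otimes> cr x j) Bx \<otimes> r j) J"
      using a_even p fsc rc by (intro R.finsum_cong') auto
    also have "\<dots> = finsum R (\<lambda>j. finsum R (\<lambda>x. (kk p x \<otimes> cr x j) \<otimes> r j) Bx) J"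
    proof (rule R.finsum_cong')
      fix j assume j: "j \<in> J"
      show "finsum R (\<lambda>x. kk p x \<otimes> cr x j) Bx \<otimes> r j = finsum R (\<lambda>x. (kk p x \<otimes> cr x j) \<otimes> r j) Bx"
        using R.finsum_ldistr[OF Bx(1) rc[OF j] sumc[OF p j]] .
    qed (use p kkc crc BxI rc in \<open>auto intro!: R.finsum_closed\<close>)
    also have "\<dots> = finsum R (\<lambda>x. finsum R (\<lambda>j. (kk p x \<otimes> cr x j) \<otimes> r j) J) Bx"
      using J Bx(1) p kkc crc BxI rc by (intro R.fs_swap) auto
    also have "\<dots> = finsum R (\<lambda>x. kk p x \<otimes> finsum R (\<lambda>j. cr x j \<otimes> r j) J) Bx"
    proof (rule R.finsum_cong')
      fix x assume x: "x \<in> Bx"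
      have "kk p x \<otimes> finsum R (\<lambda>j. cr x j \<otimes> r j) J = finsum R (\<lambda>j. kk p x \<otimes> (cr x j \<otimes> r j)) J"
        using J kkc[OF p] crc[OF BxI[OF x]] rc by (intro R.finsum_rdistr) auto
      also have "\<dots> = finsum R (\<lambda>j. (kk p x \<otimes> cr x j) \<otimes> r j) J"
        using J kkc[OF p] crc[OF BxI[OF x]] rc by (intro R.finsum_cong') (auto simp: R.m_assoc)
      finally show "finsum R (\<lambda>j. (kk p x \<otimes> cr x j) \<otimes> r j) J = kk p x \<otimes> finsum R (\<lambda>j. cr x j \<otimes> r j) J" by simp
    qed (use p kkc crc BxI rc J in \<open>auto intro!: R.finsum_closed\<close>)
    also have "\<dots> = finsum R (\<lambda>x. kk p x \<otimes> x) Bx"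
      using crs BxI kkc[OF p] IR by (intro R.finsum_cong') auto
    also have "\<dots> = \<zero>" using evX[OF p] .
    finally show ?thesis .
  qed
  have rel_odd: "finsum R (\<lambda>j. a j (2*q+1) \<otimes> r j) J = \<zero>" if q: "q \<in> J" for q
  proof -
    have cq: "\<And>j. j \<in> J \<Longrightarrow> cr (r q) j \<in> carrier R" using crc rI q by blast
    have "finsum R (\<lambda>j. a j (2*q+1) \<otimes> r j) J = finsum R (\<lambda>j. (if j = q then r q else \<zero>) \<oplus> \<ominus> (cr (r q) j \<otimes> r j)) J"
    proof (rule R.finsum_cong')
      fix j assume j: "j \<in> J"
      show "a j (2*q+1) \<otimes> r j = (if j = q then r q else \<zero>) \<oplus> \<ominus> (cr (r q) j \<otimes> r j)"
        unfolding a_odd[OF j q] using cq[OF j] rc[OF j] rc[OF q]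
        by (auto simp: a_minus_def R.l_distr R.l_minus)
    qed (use cq rc q in auto)
    also have "\<dots> = finsum R (\<lambda>j. if j = q then r q else \<zero>) J \<oplus> finsum R (\<lambda>j. \<ominus> (cr (r q) j \<otimes> r j)) J"
      using cq rc q by (intro R.finsum_addf) auto
    also have "finsum R (\<lambda>j. if j = q then r q else \<zero>) J = r q"
      using J q rc by (subst R.fs_delta) auto
    also have "finsum R (\<lambda>j. \<ominus> (cr (r q) j \<otimes> r j)) J = \<ominus> finsum R (\<lambda>j. cr (r q) j \<otimes> r j) J"
      using J cq rc by (intro R.fs_neg) auto
    also have "finsum R (\<lambda>j. cr (r q) j \<otimes> r j) J = r q" using crs rI q by blast
    finally show ?thesis using rc[OF q] by (simp add: R.r_neg)
  qed
  have rels: "\<forall>l\<in>L. finsum R (\<lambda>j. a j l \<otimes> r j) J = \<zero>"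
    unfolding L_def using rel_even rel_odd by blast
  have uL: "u \<in> L \<rightarrow> carrier S" using uc by simp
  have main: "t j = finsum S (\<lambda>l. h (a j l) \<otimes>\<^bsub>S\<^esub> u l) L" if j: "j \<in> J" for j
  proof -
    have fullc: "(\<lambda>l. h (a j l) \<otimes>\<^bsub>S\<^esub> u l) \<in> UNIV \<rightarrow> carrier S" using ac uc by simp
    have split: "finsum S (\<lambda>l. h (a j l) \<otimes>\<^bsub>S\<^esub> u l) L =
        finsum S (\<lambda>p. h (a j (2*p)) \<otimes>\<^bsub>S\<^esub> u (2*p)) L0 \<oplus>\<^bsub>S\<^esub> finsum S (\<lambda>q. h (a j (2*q+1)) \<otimes>\<^bsub>S\<^esub> u (2*q+1)) J"
      unfolding L_def using S.fs_evod[OF L0(1) J fullc] .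
    define Q where "Q = finsum S (\<lambda>q. h (cr (r q) j) \<otimes>\<^bsub>S\<^esub> t q) J"
    have hcr: "\<And>x. x \<in> Bx \<Longrightarrow> h (cr x j) \<in> carrier S" using crc BxI j by auto
    have Qc: "Q \<in> carrier S" unfolding Q_def using crc rI j tc by (intro S.finsum_closed) auto
    have P1: "finsum S (\<lambda>p. h (a j (2*p)) \<otimes>\<^bsub>S\<^esub> u (2*p)) L0 = Q"
    proof -
      have "finsum S (\<lambda>p. h (a j (2*p)) \<otimes>\<^bsub>S\<^esub> u (2*p)) L0
          = finsum S (\<lambda>p. finsum S (\<lambda>x. (h (kk p x) \<otimes>\<^bsub>S\<^esub> h (cr x j)) \<otimes>\<^bsub>S\<^esub> u0 p) Bx) L0"
      proof (rule S.finsum_cong')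
        fix p assume p: "p \<in> L0"
        have "h (a j (2*p)) = finsum S (\<lambda>x. h (kk p x) \<otimes>\<^bsub>S\<^esub> h (cr x j)) Bx"
          unfolding a_even[OF j p] using sumc[OF p j] kkc[OF p] crc BxI j
          by (subst hom_finsum) (auto intro!: S.finsum_cong')
        then show "h (a j (2*p)) \<otimes>\<^bsub>S\<^esub> u (2*p) = finsum S (\<lambda>x. (h (kk p x) \<otimes>\<^bsub>S\<^esub> h (cr x j)) \<otimes>\<^bsub>S\<^esub> u0 p) Bx"
          unfolding u_even[OF p] using S.finsum_ldistr[OF Bx(1), of "u0 p" "\<lambda>x. h (kk p x) \<otimes>\<^bsub>S\<^esub> h (cr x j)"]
            L0(2) p kkc[OF p] hcr by auto
      qed (use kkc hcr L0(2) in \<open>auto intro!: S.finsum_closed\<close>)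
      also have "\<dots> = finsum S (\<lambda>x. finsum S (\<lambda>p. (h (kk p x) \<otimes>\<^bsub>S\<^esub> h (cr x j)) \<otimes>\<^bsub>S\<^esub> u0 p) L0) Bx"
        using L0(1) Bx(1) kkc hcr L0(2) by (intro S.fs_swap) auto
      also have "\<dots> = finsum S (\<lambda>x. h (cr x j) \<otimes>\<^bsub>S\<^esub> f x) Bx"
      proof (rule S.finsum_cong')
        fix x assume x: "x \<in> Bx"
        have "h (cr x j) \<otimes>\<^bsub>S\<^esub> f x = finsum S (\<lambda>p. h (cr x j) \<otimes>\<^bsub>S\<^esub> (u0 p \<otimes>\<^bsub>S\<^esub> h (kk p x))) L0"
          unfolding fe using L0(1) hcr[OF x] L0(2) kkc by (intro S.finsum_rdistr) auto
        also have "\<dots> = finsum S (\<lambda>p. (h (kk p x) \<otimes>\<^bsub>S\<^esub> h (cr x j)) \<otimes>\<^bsub>S\<^esub> u0 p) L0"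
        proof (rule S.finsum_cong')
          fix p assume p: "p \<in> L0"
          have c3: "h (cr x j) \<in> carrier S" "u0 p \<in> carrier S" "h (kk p x) \<in> carrier S"
            using hcr[OF x] L0(2) p kkc[OF p] by auto
          show "h (cr x j) \<otimes>\<^bsub>S\<^esub> (u0 p \<otimes>\<^bsub>S\<^esub> h (kk p x)) = (h (kk p x) \<otimes>\<^bsub>S\<^esub> h (cr x j)) \<otimes>\<^bsub>S\<^esub> u0 p"
            using c3 by algebra
        qed (use kkc hcr[OF x] L0(2) in auto)
        finally show "finsum S (\<lambda>p. (h (kk p x) \<otimes>\<^bsub>S\<^esub> h (cr x j)) \<otimes>\<^bsub>S\<^esub> u0 p) L0 = h (cr x j) \<otimes>\<^bsub>S\<^esub> f x" by simp
      qed (use hcr fc in auto)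
      also have "\<dots> = finsum S (\<lambda>x. h (cr x j) \<otimes>\<^bsub>S\<^esub> f x) (r ` J)"
        using Bx(1) rJB hcr fc f0 by (intro S.fs_extend[symmetric]) auto
      also have "\<dots> = finsum S (\<lambda>x. finsum S (\<lambda>q. h (cr (r q) j) \<otimes>\<^bsub>S\<^esub> t q) {q\<in>J. r q = x}) (r ` J)"
      proof (rule S.finsum_cong')
        fix x assume x: "x \<in> r ` J"
        have hx: "h (cr x j) \<in> carrier S" using hcr x rJB by auto
        have "h (cr x j) \<otimes>\<^bsub>S\<^esub> f x = finsum S (\<lambda>q. h (cr x j) \<otimes>\<^bsub>S\<^esub> t q) {q\<in>J. r q = x}"
          unfolding f_def using J hx tc by (intro S.finsum_rdistr) auto
        also have "\<dots> = finsum S (\<lambda>q. h (cr (r q) j) \<otimes>\<^bsub>S\<^esub> t q) {q\<in>J. r q = x}"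
          using hx tc by (intro S.finsum_cong') auto
        finally show "h (cr x j) \<otimes>\<^bsub>S\<^esub> f x = finsum S (\<lambda>q. h (cr (r q) j) \<otimes>\<^bsub>S\<^esub> t q) {q\<in>J. r q = x}" .
      qed (use crc rI j tc in \<open>auto intro!: S.finsum_closed\<close>)
      also have "\<dots> = Q" unfolding Q_def
        using J crc rI j tc by (intro S.fs_fiber) auto
      finally show ?thesis .
    qed
    have P2: "finsum S (\<lambda>q. h (a j (2*q+1)) \<otimes>\<^bsub>S\<^esub> u (2*q+1)) J = t j \<oplus>\<^bsub>S\<^esub> \<ominus>\<^bsub>S\<^esub> Q"
    proof -
      have cq: "\<And>q. q \<in> J \<Longrightarrow> h (cr (r q) j) \<in> carrier S" using crc rI j by auto
      have "finsum S (\<lambda>q. h (a j (2*q+1)) \<otimes>\<^bsub>S\<^esub> u (2*q+1)) J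
          = finsum S (\<lambda>q. (if j = q then t q else \<zero>\<^bsub>S\<^esub>) \<oplus>\<^bsub>S\<^esub> \<ominus>\<^bsub>S\<^esub> (h (cr (r q) j) \<otimes>\<^bsub>S\<^esub> t q)) J"
      proof (rule S.finsum_cong')
        fix q assume q: "q \<in> J"
        have cc: "cr (r q) j \<in> carrier R" using crc rI q j by blast
        show "h (a j (2*q+1)) \<otimes>\<^bsub>S\<^esub> u (2*q+1) = (if j = q then t q else \<zero>\<^bsub>S\<^esub>) \<oplus>\<^bsub>S\<^esub> \<ominus>\<^bsub>S\<^esub> (h (cr (r q) j) \<otimes>\<^bsub>S\<^esub> t q)"
          unfolding a_odd[OF j q] u_odd[OF q] using cc tc[OF q]
          by (auto simp: a_minus_def S.l_distr S.l_minus)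
      qed (use cq tc in auto)
      also have "\<dots> = finsum S (\<lambda>q. if j = q then t q else \<zero>\<^bsub>S\<^esub>) J \<oplus>\<^bsub>S\<^esub> finsum S (\<lambda>q. \<ominus>\<^bsub>S\<^esub> (h (cr (r q) j) \<otimes>\<^bsub>S\<^esub> t q)) J"
        using cq tc by (intro S.finsum_addf) auto
      also have "finsum S (\<lambda>q. if j = q then t q else \<zero>\<^bsub>S\<^esub>) J = t j"
        using S.finsum_singleton[OF j J t] .
      also have "finsum S (\<lambda>q. \<ominus>\<^bsub>S\<^esub> (h (cr (r q) j) \<otimes>\<^bsub>S\<^esub> t q)) J = \<ominus>\<^bsub>S\<^esub> Q"
        unfolding Q_def using J cq tc by (intro S.fs_neg) auto
      finally show ?thesis .
    qed
    have "finsum S (\<lambda>l. h (a j l) \<otimes>\<^bsub>S\<^esub> u l) L = Q \<oplus>\<^bsub>S\<^esub> (t j \<oplus>\<^bsub>S\<^esub> \<ominus>\<^bsub>S\<^esub> Q)"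
      using split P1 P2 by simp
    also have "\<dots> = t j" using Qc tc[OF j] by algebra
    finally show ?thesis by simp
  qed
  show ?thesis
    apply (rule exI[of _ L], rule exI[of _ a], rule exI[of _ u])
    using L0(1) J uL ac main rels unfolding L_def by auto
qed

end

context ring_hom_cring begin

lemma VC:
  fixes Xs :: "'x set"
  assumes flat: "flat_hom R S h" and Xs: "finite Xs"
  shows "\<And>J t v. finite (J::nat set) \<Longrightarrow> t \<in> J \<rightarrow> carrier S \<Longrightarrow> (\<And>j x. v j x \<in> carrier R) \<Longrightarrow>
    (\<And>j x. x \<notin> Xs \<Longrightarrow> v j x = \<zero>) \<Longrightarrow> (\<And>x. finsum S (\<lambda>j. t j \<otimes>\<^bsub>S\<^esub> h (v j x)) J = \<zero>\<^bsub>S\<^esub>) \<Longrightarrow>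
    \<exists>(L::nat set) a u. finite L \<and> u \<in> L \<rightarrow> carrier S \<and> (\<forall>j l. a j l \<in> carrier R) \<and>
     (\<forall>j\<in>J. t j = finsum S (\<lambda>l. h (a j l) \<otimes>\<^bsub>S\<^esub> u l) L) \<and> (\<forall>l\<in>L. \<forall>x. finsum R (\<lambda>j. a j l \<otimes> v j x) J = \<zero>)"
  using Xs
proof (induction Xs rule: finite_induct)
  case empty
  fix J :: "nat set" and t and v :: "nat \<Rightarrow> 'x \<Rightarrow> 'a"
  assume J: "finite J" and t: "t \<in> J \<rightarrow> carrier S" and v: "\<And>j x. v j x \<in> carrier R"
    and v0: "\<And>j x. x \<notin> {} \<Longrightarrow> v j x = \<zero>"
  define a where "a j l = (if j = l then \<one> else \<zero>)" for j l :: nat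
  have ac: "\<forall>j l. a j l \<in> carrier R" unfolding a_def by simp
  have m: "\<forall>j\<in>J. t j = finsum S (\<lambda>l. h (a j l) \<otimes>\<^bsub>S\<^esub> t l) J"
  proof
    fix j assume j: "j \<in> J"
    have "finsum S (\<lambda>l. h (a j l) \<otimes>\<^bsub>S\<^esub> t l) J = finsum S (\<lambda>l. if j = l then t l else \<zero>\<^bsub>S\<^esub>) J"
      unfolding a_def using t by (intro S.finsum_cong') (auto simp: Pi_def)
    also have "\<dots> = t j" using S.finsum_singleton[OF j J t] .
    finally show "t j = finsum S (\<lambda>l. h (a j l) \<otimes>\<^bsub>S\<^esub> t l) J" by simp
  qed
  have rl: "\<forall>l\<in>J. \<forall>x. finsum R (\<lambda>j. a j l \<otimes> v j x) J = \<zero>"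
  proof (intro ballI allI)
    fix l x
    have "finsum R (\<lambda>j. a j l \<otimes> v j x) J = finsum R (\<lambda>j. \<zero>) J"
      unfolding a_def using v0 by (intro R.finsum_cong') auto
    then show "finsum R (\<lambda>j. a j l \<otimes> v j x) J = \<zero>" by simp
  qed
  show "\<exists>(L::nat set) a u. finite L \<and> u \<in> L \<rightarrow> carrier S \<and> (\<forall>j l. a j l \<in> carrier R) \<and>
     (\<forall>j\<in>J. t j = finsum S (\<lambda>l. h (a j l) \<otimes>\<^bsub>S\<^esub> u l) L) \<and> (\<forall>l\<in>L. \<forall>x. finsum R (\<lambda>j. a j l \<otimes> v j x) J = \<zero>)"
    using J t ac m rl by blast
next
  case (insert x0 Xs)
  fix J :: "nat set" and t and v :: "nat \<Rightarrow> 'x \<Rightarrow> 'a"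
  assume J: "finite J" and t: "t \<in> J \<rightarrow> carrier S" and v: "\<And>j x. v j x \<in> carrier R"
    and v0: "\<And>j x. x \<notin> insert x0 Xs \<Longrightarrow> v j x = \<zero>"
    and z: "\<And>x. finsum S (\<lambda>j. t j \<otimes>\<^bsub>S\<^esub> h (v j x)) J = \<zero>\<^bsub>S\<^esub>"
  have "\<exists>(L::nat set) a u. finite L \<and> u \<in> L \<rightarrow> carrier S \<and> (\<forall>j l. a j l \<in> carrier R) \<and>
     (\<forall>j\<in>J. t j = finsum S (\<lambda>l. h (a j l) \<otimes>\<^bsub>S\<^esub> u l) L) \<and> (\<forall>l\<in>L. finsum R (\<lambda>j. a j l \<otimes> v j x0) J = \<zero>)"
    using SC[OF flat J t _ z[of x0]] v by auto
  then obtain L1 a1 u1 where L1: "finite (L1::nat set)" "u1 \<in> L1 \<rightarrow> carrier S" "\<And>j l. a1 j l \<in> carrier R"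
    "\<And>j. j \<in> J \<Longrightarrow> t j = finsum S (\<lambda>l. h (a1 j l) \<otimes>\<^bsub>S\<^esub> u1 l) L1"
    "\<And>l. l \<in> L1 \<Longrightarrow> finsum R (\<lambda>j. a1 j l \<otimes> v j x0) J = \<zero>" by blast
  define v' where "v' l x = (if l \<in> L1 then finsum R (\<lambda>j. a1 j l \<otimes> v j x) J else \<zero>)" for l x
  have v'c: "\<And>l x. v' l x \<in> carrier R" unfolding v'_def using L1(3) v by (auto intro!: R.finsum_closed)
  have v'0: "v' l x = \<zero>" if "x \<notin> Xs" for l x
  proof (cases "x = x0")
    case True
    then show ?thesis unfolding v'_def using L1(5) by simp
  next
    case False
    then have "\<And>j. v j x = \<zero>" using v0 that by simp
    then show ?thesis unfolding v'_def using L1(3) by simp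
  qed
  have hv: "\<And>j x. h (v j x) \<in> carrier S" using v by simp
  have z': "finsum S (\<lambda>l. u1 l \<otimes>\<^bsub>S\<^esub> h (v' l x)) L1 = \<zero>\<^bsub>S\<^esub>" for x
  proof -
    have u1c: "\<And>l. l \<in> L1 \<Longrightarrow> u1 l \<in> carrier S" using L1(2) by auto
    have "finsum S (\<lambda>l. u1 l \<otimes>\<^bsub>S\<^esub> h (v' l x)) L1 = finsum S (\<lambda>l. finsum S (\<lambda>j. (h (a1 j l) \<otimes>\<^bsub>S\<^esub> u1 l) \<otimes>\<^bsub>S\<^esub> h (v j x)) J) L1"
    proof (rule S.finsum_cong')
      fix l assume l: "l \<in> L1"
      have "h (v' l x) = finsum S (\<lambda>j. h (a1 j l) \<otimes>\<^bsub>S\<^esub> h (v j x)) J"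
        unfolding v'_def using l L1(3) v by (simp add: Pi_def o_def)
      then have "u1 l \<otimes>\<^bsub>S\<^esub> h (v' l x) = finsum S (\<lambda>j. u1 l \<otimes>\<^bsub>S\<^esub> (h (a1 j l) \<otimes>\<^bsub>S\<^esub> h (v j x))) J"
        using J u1c[OF l] L1(3) hv by (simp add: S.finsum_rdistr Pi_def)
      also have "\<dots> = finsum S (\<lambda>j. (h (a1 j l) \<otimes>\<^bsub>S\<^esub> u1 l) \<otimes>\<^bsub>S\<^esub> h (v j x)) J"
      proof (rule S.finsum_cong')
        fix j assume "j \<in> J"
        have c: "u1 l \<in> carrier S" "h (a1 j l) \<in> carrier S" "h (v j x) \<in> carrier S"
          using u1c[OF l] L1(3) hv by auto
        show "u1 l \<otimes>\<^bsub>S\<^esub> (h (a1 j l) \<otimes>\<^bsub>S\<^esub> h (v j x)) = (h (a1 j l) \<otimes>\<^bsub>S\<^esub> u1 l) \<otimes>\<^bsub>S\<^esub> h (v j x)"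
          using c by algebra
      qed (use u1c[OF l] L1(3) hv in auto)
      finally show "u1 l \<otimes>\<^bsub>S\<^esub> h (v' l x) = finsum S (\<lambda>j. (h (a1 j l) \<otimes>\<^bsub>S\<^esub> u1 l) \<otimes>\<^bsub>S\<^esub> h (v j x)) J" .
    qed (use u1c L1(3) hv in \<open>auto intro!: S.finsum_closed\<close>)
    also have "\<dots> = finsum S (\<lambda>j. finsum S (\<lambda>l. (h (a1 j l) \<otimes>\<^bsub>S\<^esub> u1 l) \<otimes>\<^bsub>S\<^esub> h (v j x)) L1) J"
      using L1(1) J u1c L1(3) hv by (intro S.fs_swap) auto
    also have "\<dots> = finsum S (\<lambda>j. t j \<otimes>\<^bsub>S\<^esub> h (v j x)) J"
    proof (rule S.finsum_cong')
      fix j assume j: "j \<in> J"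
      show "finsum S (\<lambda>l. (h (a1 j l) \<otimes>\<^bsub>S\<^esub> u1 l) \<otimes>\<^bsub>S\<^esub> h (v j x)) L1 = t j \<otimes>\<^bsub>S\<^esub> h (v j x)"
        unfolding L1(4)[OF j] using L1(1) u1c L1(3) hv by (subst S.finsum_ldistr) auto
    qed (use t hv in auto)
    also have "\<dots> = \<zero>\<^bsub>S\<^esub>" by (rule z)
    finally show ?thesis .
  qed
  have ex: "\<exists>(L::nat set) a u. finite L \<and> u \<in> L \<rightarrow> carrier S \<and> (\<forall>j l. a j l \<in> carrier R) \<and>
     (\<forall>j\<in>L1. u1 j = finsum S (\<lambda>l. h (a j l) \<otimes>\<^bsub>S\<^esub> u l) L) \<and> (\<forall>l\<in>L. \<forall>x. finsum R (\<lambda>j. a j l \<otimes> v' j x) L1 = \<zero>)"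
    apply (rule insert.IH[of L1 u1 v'])
        apply (rule L1(1))
       apply (rule L1(2))
      apply (rule v'c)
     apply (erule v'0)
    apply (rule z')
    done
  obtain L2 a2 u2 where L2': "finite (L2::nat set)" "u2 \<in> L2 \<rightarrow> carrier S" "\<forall>j l. a2 j l \<in> carrier R"
    "\<forall>j\<in>L1. u1 j = finsum S (\<lambda>l. h (a2 j l) \<otimes>\<^bsub>S\<^esub> u2 l) L2"
    "\<forall>l\<in>L2. \<forall>x. finsum R (\<lambda>j. a2 j l \<otimes> v' j x) L1 = \<zero>"
    using ex by blast
  have L2: "finite L2" "u2 \<in> L2 \<rightarrow> carrier S" "\<And>j l. a2 j l \<in> carrier R"
    "\<And>j. j \<in> L1 \<Longrightarrow> u1 j = finsum S (\<lambda>l. h (a2 j l) \<otimes>\<^bsub>S\<^esub> u2 l) L2"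
    "\<And>l x. l \<in> L2 \<Longrightarrow> finsum R (\<lambda>j. a2 j l \<otimes> v' j x) L1 = \<zero>"
    using L2' by auto
  define a where "a j l2 = finsum R (\<lambda>l. a1 j l \<otimes> a2 l l2) L1" for j l2
  have ac: "\<And>j l. a j l \<in> carrier R" unfolding a_def using L1(3) L2(3) by (auto intro!: R.finsum_closed)
  have u2c: "\<And>l. l \<in> L2 \<Longrightarrow> u2 l \<in> carrier S" using L2(2) by auto
  have m: "t j = finsum S (\<lambda>l2. h (a j l2) \<otimes>\<^bsub>S\<^esub> u2 l2) L2" if j: "j \<in> J" for j
  proof -
    have "finsum S (\<lambda>l2. h (a j l2) \<otimes>\<^bsub>S\<^esub> u2 l2) L2 = finsum S (\<lambda>l2. finsum S (\<lambda>l. h (a1 j l) \<otimes>\<^bsub>S\<^esub> (h (a2 l l2) \<otimes>\<^bsub>S\<^esub> u2 l2)) L1) L2"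
    proof (rule S.finsum_cong')
      fix l2 assume l2: "l2 \<in> L2"
      have "h (a j l2) = finsum S (\<lambda>l. h (a1 j l) \<otimes>\<^bsub>S\<^esub> h (a2 l l2)) L1"
        unfolding a_def using L1(3) L2(3) by (simp add: Pi_def o_def)
      then have "h (a j l2) \<otimes>\<^bsub>S\<^esub> u2 l2 = finsum S (\<lambda>l. (h (a1 j l) \<otimes>\<^bsub>S\<^esub> h (a2 l l2)) \<otimes>\<^bsub>S\<^esub> u2 l2) L1"
        using L1(1) u2c[OF l2] L1(3) L2(3) by (simp add: S.finsum_ldistr Pi_def)
      also have "\<dots> = finsum S (\<lambda>l. h (a1 j l) \<otimes>\<^bsub>S\<^esub> (h (a2 l l2) \<otimes>\<^bsub>S\<^esub> u2 l2)) L1"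
        using u2c[OF l2] L1(3) L2(3) by (intro S.finsum_cong') (auto simp: S.m_assoc)
      finally show "h (a j l2) \<otimes>\<^bsub>S\<^esub> u2 l2 = finsum S (\<lambda>l. h (a1 j l) \<otimes>\<^bsub>S\<^esub> (h (a2 l l2) \<otimes>\<^bsub>S\<^esub> u2 l2)) L1" .
    qed (use u2c L1(3) L2(3) in \<open>auto intro!: S.finsum_closed\<close>)
    also have "\<dots> = finsum S (\<lambda>l. finsum S (\<lambda>l2. h (a1 j l) \<otimes>\<^bsub>S\<^esub> (h (a2 l l2) \<otimes>\<^bsub>S\<^esub> u2 l2)) L2) L1"
      using L1(1) L2(1) u2c L1(3) L2(3) by (intro S.fs_swap) auto
    also have "\<dots> = finsum S (\<lambda>l. h (a1 j l) \<otimes>\<^bsub>S\<^esub> u1 l) L1"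
    proof (rule S.finsum_cong')
      fix l assume l: "l \<in> L1"
      show "finsum S (\<lambda>l2. h (a1 j l) \<otimes>\<^bsub>S\<^esub> (h (a2 l l2) \<otimes>\<^bsub>S\<^esub> u2 l2)) L2 = h (a1 j l) \<otimes>\<^bsub>S\<^esub> u1 l"
        unfolding L2(4)[OF l] using L2(1) u2c L1(3) L2(3) by (subst S.finsum_rdistr) auto
    qed (use L1(2) L1(3) in auto)
    also have "\<dots> = t j" using L1(4)[OF j] by simp
    finally show ?thesis by simp
  qed
  have rl: "finsum R (\<lambda>j. a j l2 \<otimes> v j x) J = \<zero>" if l2: "l2 \<in> L2" for l2 x
  proof -
    have "finsum R (\<lambda>j. a j l2 \<otimes> v j x) J = finsum R (\<lambda>j. finsum R (\<lambda>l. a2 l l2 \<otimes> (a1 j l \<otimes> v j x)) L1) J"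
    proof (rule R.finsum_cong')
      fix j assume j: "j \<in> J"
      have "a j l2 \<otimes> v j x = finsum R (\<lambda>l. (a1 j l \<otimes> a2 l l2) \<otimes> v j x) L1"
        unfolding a_def using L1(1) v L1(3) L2(3) by (simp add: R.finsum_ldistr Pi_def)
      also have "\<dots> = finsum R (\<lambda>l. a2 l l2 \<otimes> (a1 j l \<otimes> v j x)) L1"
      proof (rule R.finsum_cong')
        fix l assume l: "l \<in> L1"
        have c: "a1 j l \<in> carrier R" "a2 l l2 \<in> carrier R" "v j x \<in> carrier R" using L1(3) L2(3) v by auto
        show "(a1 j l \<otimes> a2 l l2) \<otimes> v j x = a2 l l2 \<otimes> (a1 j l \<otimes> v j x)" using c by algebra
      qed (use v L1(3) L2(3) in auto)
      finally show "a j l2 \<otimes> v j x = finsum R (\<lambda>l. a2 l l2 \<otimes> (a1 j l \<otimes> v j x)) L1" .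
    qed (use v L1(3) L2(3) in \<open>auto intro!: R.finsum_closed\<close>)
    also have "\<dots> = finsum R (\<lambda>l. finsum R (\<lambda>j. a2 l l2 \<otimes> (a1 j l \<otimes> v j x)) J) L1"
      using L1(1) J v L1(3) L2(3) by (intro R.fs_swap) auto
    also have "\<dots> = finsum R (\<lambda>l. a2 l l2 \<otimes> v' l x) L1"
    proof (rule R.finsum_cong')
      fix l assume l: "l \<in> L1"
      show "finsum R (\<lambda>j. a2 l l2 \<otimes> (a1 j l \<otimes> v j x)) J = a2 l l2 \<otimes> v' l x"
        unfolding v'_def using l J v L1(3) L2(3) by (simp add: R.finsum_rdistr Pi_def)
    qed (use v'c L2(3) in auto)
    also have "\<dots> = \<zero>" using L2(5)[OF l2] .
    finally show ?thesis .
  qed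
  show "\<exists>(L::nat set) a u. finite L \<and> u \<in> L \<rightarrow> carrier S \<and> (\<forall>j l. a j l \<in> carrier R) \<and>
     (\<forall>j\<in>J. t j = finsum S (\<lambda>l. h (a j l) \<otimes>\<^bsub>S\<^esub> u l) L) \<and> (\<forall>l\<in>L. \<forall>x. finsum R (\<lambda>j. a j l \<otimes> v j x) J = \<zero>)"
    apply (rule exI[of _ L2], rule exI[of _ a], rule exI[of _ u2])
    using L2(1,2) ac m rl by blast
qed

end

lemma (in module) fs_smult_rdistr:
  assumes "finite A" "f \<in> A \<rightarrow> carrier R" "x \<in> carrier M"
  shows "finsum R f A \<odot>\<^bsub>M\<^esub> x = finsum M (\<lambda>i. f i \<odot>\<^bsub>M\<^esub> x) A"
  using assms
proof (induction A rule: finite_induct)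
  case empty
  then show ?case by simp
next
  case (insert a F)
  then show ?case by (simp add: Pi_def smult_l_distr R.finsum_closed M.finsum_insert)
qed

context ring_hom_cring begin

lemma inj_sub:
  fixes M :: "('a, 'm) module" and C :: "'m set"
  assumes flat: "flat_hom R S h" and M: "module R M" and C: "C \<subseteq> carrier M" "\<zero>\<^bsub>M\<^esub> \<in> C"
    "\<And>x y. x \<in> C \<Longrightarrow> y \<in> C \<Longrightarrow> x \<oplus>\<^bsub>M\<^esub> y \<in> C"
    "\<And>r x. r \<in> carrier R \<Longrightarrow> x \<in> C \<Longrightarrow> r \<odot>\<^bsub>M\<^esub> x \<in> C"
    and g: "g \<in> free_on S (M\<lparr>carrier := C\<rparr>)" "g \<in> tensor_rel R S h M"
  shows "g \<in> tensor_rel R S h (M\<lparr>carrier := C\<rparr>)"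
proof -
  interpret M: module R M by (rule M)
  interpret W: wsys R S h M M "{\<lambda>r y. r \<odot>\<^bsub>M\<^esub> y}" using wsys_module[OF ring_hom_cring_axioms M] .
  have "g \<in> Zset R S h (Kset R M {\<lambda>r y. r \<odot>\<^bsub>M\<^esub> y} (carrier M))" using W.TR_Zset g(2) by blast
  then obtain L0 u0 kk where L0: "finite (L0::nat set)" "u0 \<in> L0 \<rightarrow> carrier S"
    "\<forall>l\<in>L0. kk l \<in> Kset R M {\<lambda>r y. r \<odot>\<^bsub>M\<^esub> y} (carrier M)"
    and ge: "g = (\<lambda>x. finsum S (\<lambda>l. u0 l \<otimes>\<^bsub>S\<^esub> h (kk l x)) L0)" unfolding Zset_def by blast
  have kkc: "\<And>l x. l \<in> L0 \<Longrightarrow> kk l x \<in> carrier R" and kk0: "\<And>l x. l \<in> L0 \<Longrightarrow> x \<notin> carrier M \<Longrightarrow> kk l x = \<zero>"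
    and kkf: "\<And>l. l \<in> L0 \<Longrightarrow> finite (fsupp R (kk l))"
    and kkev: "\<And>l. l \<in> L0 \<Longrightarrow> finsum M (\<lambda>x. kk l x \<odot>\<^bsub>M\<^esub> x) (fsupp R (kk l)) = \<zero>\<^bsub>M\<^esub>"
    using L0(3) unfolding Kset_def by auto
  have u0c: "\<And>l. l \<in> L0 \<Longrightarrow> u0 l \<in> carrier S" using L0(2) by auto
  define Xs where "Xs = (\<Union>l\<in>L0. fsupp R (kk l))"
  have Xs: "finite Xs" "Xs \<subseteq> carrier M" using L0(1) kkf kk0 unfolding Xs_def fsupp_def by auto
  have kkX: "\<And>l x. l \<in> L0 \<Longrightarrow> x \<notin> Xs \<Longrightarrow> kk l x = \<zero>" unfolding Xs_def fsupp_def by auto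
  define v where "v l x = (if l \<in> L0 \<and> x \<notin> C then kk l x else \<zero>)" for l x
  have vc: "\<And>l x. v l x \<in> carrier R" unfolding v_def using kkc by auto
  have v0: "\<And>l x. x \<notin> Xs \<Longrightarrow> v l x = \<zero>" unfolding v_def using kkX by auto
  have gc: "\<And>x. g x \<in> carrier S" and g0: "\<And>x. x \<notin> C \<Longrightarrow> g x = \<zero>\<^bsub>S\<^esub>"
    using g(1) unfolding free_on_def by auto
  have z: "finsum S (\<lambda>l. u0 l \<otimes>\<^bsub>S\<^esub> h (v l x)) L0 = \<zero>\<^bsub>S\<^esub>" for x
  proof (cases "x \<in> C")
    case True
    then have "finsum S (\<lambda>l. u0 l \<otimes>\<^bsub>S\<^esub> h (v l x)) L0 = finsum S (\<lambda>l. \<zero>\<^bsub>S\<^esub>) L0"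
      unfolding v_def using u0c by (intro S.finsum_cong') auto
    then show ?thesis by simp
  next
    case False
    then have "finsum S (\<lambda>l. u0 l \<otimes>\<^bsub>S\<^esub> h (v l x)) L0 = g x"
      unfolding v_def ge using u0c kkc by (intro S.finsum_cong') auto
    then show ?thesis using g0 False by simp
  qed
  have ex: "\<exists>(L::nat set) a u. finite L \<and> u \<in> L \<rightarrow> carrier S \<and> (\<forall>j l. a j l \<in> carrier R) \<and>
     (\<forall>j\<in>L0. u0 j = finsum S (\<lambda>l. h (a j l) \<otimes>\<^bsub>S\<^esub> u l) L) \<and> (\<forall>l\<in>L. \<forall>x. finsum R (\<lambda>j. a j l \<otimes> v j x) L0 = \<zero>)"
    apply (rule VC[OF flat Xs(1)])
        apply (rule L0(1))
       apply (rule L0(2))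
      apply (rule vc)
     apply (erule v0)
    apply (rule z)
    done
  obtain L a u where L: "finite (L::nat set)" "u \<in> L \<rightarrow> carrier S" "\<forall>j l. a j l \<in> carrier R"
    "\<forall>j\<in>L0. u0 j = finsum S (\<lambda>l. h (a j l) \<otimes>\<^bsub>S\<^esub> u l) L"
    "\<forall>l\<in>L. \<forall>x. finsum R (\<lambda>j. a j l \<otimes> v j x) L0 = \<zero>"
    using ex by blast
  have ac: "\<And>j l. a j l \<in> carrier R" using L(3) by blast
  have uc: "\<And>l. l \<in> L \<Longrightarrow> u l \<in> carrier S" using L(2) by auto
  define kk' where "kk' l' x = finsum R (\<lambda>l. a l l' \<otimes> kk l x) L0" for l' x
  have kk'c: "\<And>l' x. kk' l' x \<in> carrier R" unfolding kk'_def using ac kkc by (auto intro!: R.finsum_closed)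
  have kk'X: "kk' l' x = \<zero>" if "x \<notin> Xs" for l' x
  proof -
    have "kk' l' x = finsum R (\<lambda>l. \<zero>) L0" unfolding kk'_def using kkX that ac by (intro R.finsum_cong') auto
    then show ?thesis by simp
  qed
  have kk'K: "kk' l' \<in> Kset R M {\<lambda>r y. r \<odot>\<^bsub>M\<^esub> y} C" if l': "l' \<in> L" for l'
  proof -
    have sup: "fsupp R (kk' l') \<subseteq> Xs" using kk'X unfolding fsupp_def by blast
    have outC: "kk' l' x = \<zero>" if x: "x \<notin> C" for x
    proof -
      have "kk' l' x = finsum R (\<lambda>j. a j l' \<otimes> v j x) L0"
        unfolding kk'_def v_def using x ac kkc by (intro R.finsum_cong') auto
      then show ?thesis using L(5) l' by simp
    qed
    have "finsum M (\<lambda>x. kk' l' x \<odot>\<^bsub>M\<^esub> x) (fsupp R (kk' l')) = finsum M (\<lambda>x. kk' l' x \<odot>\<^bsub>M\<^esub> x) Xs"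
      using W.ev_ext[of "\<lambda>r y. r \<odot>\<^bsub>M\<^esub> y" Xs "kk' l'"] Xs sup kk'c by simp
    also have "\<dots> = finsum M (\<lambda>x. finsum M (\<lambda>l. a l l' \<odot>\<^bsub>M\<^esub> (kk l x \<odot>\<^bsub>M\<^esub> x)) L0) Xs"
    proof (rule M.finsum_cong')
      fix x assume x: "x \<in> Xs"
      then have xM: "x \<in> carrier M" using Xs by auto
      have "kk' l' x \<odot>\<^bsub>M\<^esub> x = finsum M (\<lambda>l. (a l l' \<otimes> kk l x) \<odot>\<^bsub>M\<^esub> x) L0"
        unfolding kk'_def using M.fs_smult_rdistr[OF L0(1) _ xM, of "\<lambda>l. a l l' \<otimes> kk l x"] ac kkc by auto
      also have "\<dots> = finsum M (\<lambda>l. a l l' \<odot>\<^bsub>M\<^esub> (kk l x \<odot>\<^bsub>M\<^esub> x)) L0"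
        using ac kkc xM by (intro M.finsum_cong') (auto simp: M.smult_assoc1)
      finally show "kk' l' x \<odot>\<^bsub>M\<^esub> x = finsum M (\<lambda>l. a l l' \<odot>\<^bsub>M\<^esub> (kk l x \<odot>\<^bsub>M\<^esub> x)) L0" .
    qed (use ac kkc Xs in \<open>auto intro!: M.finsum_closed\<close>)
    also have "\<dots> = finsum M (\<lambda>l. finsum M (\<lambda>x. a l l' \<odot>\<^bsub>M\<^esub> (kk l x \<odot>\<^bsub>M\<^esub> x)) Xs) L0"
      using Xs L0(1) ac kkc by (intro M.fs_swap) auto
    also have "\<dots> = finsum M (\<lambda>l. a l l' \<odot>\<^bsub>M\<^esub> finsum M (\<lambda>x. kk l x \<odot>\<^bsub>M\<^esub> x) Xs) L0"
    proof (rule M.finsum_cong')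
      fix l assume l: "l \<in> L0"
      show "finsum M (\<lambda>x. a l l' \<odot>\<^bsub>M\<^esub> (kk l x \<odot>\<^bsub>M\<^esub> x)) Xs = a l l' \<odot>\<^bsub>M\<^esub> finsum M (\<lambda>x. kk l x \<odot>\<^bsub>M\<^esub> x) Xs"
      proof -
        have pi: "(\<lambda>x. kk l x \<odot>\<^bsub>M\<^esub> x) \<in> Xs \<rightarrow> carrier M" using kkc[OF l] Xs by auto
        show ?thesis using M.finsum_smult_ldistr[OF Xs(1) ac[of l l'] pi] by simp
      qed
    qed (use ac kkc Xs in \<open>auto intro!: M.finsum_closed M.smult_closed\<close>)
    also have "\<dots> = finsum M (\<lambda>l. \<zero>\<^bsub>M\<^esub>) L0"
    proof (rule M.finsum_cong')
      fix l assume l: "l \<in> L0"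
      have "finsum M (\<lambda>x. kk l x \<odot>\<^bsub>M\<^esub> x) Xs = finsum M (\<lambda>x. kk l x \<odot>\<^bsub>M\<^esub> x) (fsupp R (kk l))"
      proof -
        have sub: "fsupp R (kk l) \<subseteq> Xs" unfolding Xs_def using l by blast
        show ?thesis using W.ev_ext[of "\<lambda>r y. r \<odot>\<^bsub>M\<^esub> y" Xs "kk l"] Xs sub kkc[OF l] by simp
      qed
      then show "a l l' \<odot>\<^bsub>M\<^esub> finsum M (\<lambda>x. kk l x \<odot>\<^bsub>M\<^esub> x) Xs = \<zero>\<^bsub>M\<^esub>" using kkev[OF l] ac by simp
    qed (simp, rule funcsetI, rule M.zero_closed)
    also have "\<dots> = \<zero>\<^bsub>M\<^esub>" by simp
    finally have ev: "finsum M (\<lambda>x. kk' l' x \<odot>\<^bsub>M\<^esub> x) (fsupp R (kk' l')) = \<zero>\<^bsub>M\<^esub>" .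
    show ?thesis unfolding Kset_def using kk'c outC finite_subset[OF sup Xs(1)] ev by auto
  qed
  have ge': "g = (\<lambda>x. finsum S (\<lambda>l'. u l' \<otimes>\<^bsub>S\<^esub> h (kk' l' x)) L)"
  proof
    fix x
    have hk: "\<And>l. l \<in> L0 \<Longrightarrow> h (kk l x) \<in> carrier S" using kkc by simp
    have "g x = finsum S (\<lambda>l. finsum S (\<lambda>l'. h (a l l') \<otimes>\<^bsub>S\<^esub> u l') L \<otimes>\<^bsub>S\<^esub> h (kk l x)) L0"
      unfolding ge using L(4) hk u0c by (intro S.finsum_cong') auto
    also have "\<dots> = finsum S (\<lambda>l. finsum S (\<lambda>l'. (h (a l l') \<otimes>\<^bsub>S\<^esub> u l') \<otimes>\<^bsub>S\<^esub> h (kk l x)) L) L0"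
    proof (rule S.finsum_cong')
      fix l assume l: "l \<in> L0"
      show "finsum S (\<lambda>l'. h (a l l') \<otimes>\<^bsub>S\<^esub> u l') L \<otimes>\<^bsub>S\<^esub> h (kk l x) = finsum S (\<lambda>l'. (h (a l l') \<otimes>\<^bsub>S\<^esub> u l') \<otimes>\<^bsub>S\<^esub> h (kk l x)) L"
        using L(1) hk[OF l] ac uc by (intro S.finsum_ldistr) auto
    qed (use L(1) hk ac uc in \<open>auto intro!: S.finsum_closed\<close>)
    also have "\<dots> = finsum S (\<lambda>l'. finsum S (\<lambda>l. (h (a l l') \<otimes>\<^bsub>S\<^esub> u l') \<otimes>\<^bsub>S\<^esub> h (kk l x)) L0) L"
      using L(1) L0(1) hk ac uc by (intro S.fs_swap) auto
    also have "\<dots> = finsum S (\<lambda>l'. u l' \<otimes>\<^bsub>S\<^esub> h (kk' l' x)) L"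
    proof (rule S.finsum_cong')
      fix l' assume l': "l' \<in> L"
      have "h (kk' l' x) = finsum S (\<lambda>l. h (a l l') \<otimes>\<^bsub>S\<^esub> h (kk l x)) L0"
        unfolding kk'_def using ac kkc by (subst hom_finsum) (auto intro!: S.finsum_cong')
      then have "u l' \<otimes>\<^bsub>S\<^esub> h (kk' l' x) = finsum S (\<lambda>l. u l' \<otimes>\<^bsub>S\<^esub> (h (a l l') \<otimes>\<^bsub>S\<^esub> h (kk l x))) L0"
        using L0(1) uc[OF l'] ac hk by (simp add: S.finsum_rdistr Pi_def)
      also have "\<dots> = finsum S (\<lambda>l. (h (a l l') \<otimes>\<^bsub>S\<^esub> u l') \<otimes>\<^bsub>S\<^esub> h (kk l x)) L0"
      proof (rule S.finsum_cong')
        fix l assume l: "l \<in> L0"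
        have c: "u l' \<in> carrier S" "h (a l l') \<in> carrier S" "h (kk l x) \<in> carrier S" using uc[OF l'] ac hk[OF l] by auto
        show "u l' \<otimes>\<^bsub>S\<^esub> (h (a l l') \<otimes>\<^bsub>S\<^esub> h (kk l x)) = (h (a l l') \<otimes>\<^bsub>S\<^esub> u l') \<otimes>\<^bsub>S\<^esub> h (kk l x)"
          using c by algebra
      qed (use uc[OF l'] ac hk in auto)
      finally show "finsum S (\<lambda>l. (h (a l l') \<otimes>\<^bsub>S\<^esub> u l') \<otimes>\<^bsub>S\<^esub> h (kk l x)) L0 = u l' \<otimes>\<^bsub>S\<^esub> h (kk' l' x)" by simp
    qed (use uc kk'c in auto)
    finally show "g x = finsum S (\<lambda>l'. u l' \<otimes>\<^bsub>S\<^esub> h (kk' l' x)) L" .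
  qed
  show ?thesis unfolding ge' using ZTR[OF M C L(1) L(2) kk'K] by simp
qed

end

lemma (in ring) ideal_pow_ideal: "ideal I R \<Longrightarrow> ideal (ideal_pow R I n) R"
  by (induction n) (auto simp: oneideal ideal_prod_is_ideal)

lemma (in ring) ideal_pow_Suc_sub: "ideal I R \<Longrightarrow> ideal_pow R I (Suc n) \<subseteq> ideal_pow R I n"
  using ideal_prod_inter[OF _ ideal_pow_ideal, of I I n] by auto

lemma (in ring) ideal_pow_mono: "ideal I R \<Longrightarrow> n \<le> m \<Longrightarrow> ideal_pow R I m \<subseteq> ideal_pow R I n"
proof (induction m)
  case 0 then show ?case by simp
next
  case (Suc m)
  then show ?case
    by (cases "n = Suc m") (use ideal_pow_Suc_sub[OF Suc.prems(1), of m] in auto)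
qed

lemma (in ring_hom_cring) ideal_pow_hom:
  assumes a: "ideal a R"
  shows "x \<in> ideal_pow R a n \<Longrightarrow> h x \<in> ideal_pow S (genideal S (h ` a)) n"
proof (induction n arbitrary: x)
  case 0
  then show ?case by simp
next
  case (Suc n)
  have ha: "h ` a \<subseteq> carrier S" using a ideal.Icarr by fastforce
  have hJ: "\<And>i. i \<in> a \<Longrightarrow> h i \<in> genideal S (h ` a)" using S.genideal_self[OF ha] by blast
  have Pc: "\<And>y. y \<in> ideal_pow R a n \<Longrightarrow> y \<in> carrier R" using ideal.Icarr[OF R.ideal_pow_ideal[OF a]] by blast
  have ac: "\<And>y. y \<in> a \<Longrightarrow> y \<in> carrier R" using ideal.Icarr[OF a] by blast
  from Suc.prems have "x \<in> ideal_prod R a (ideal_pow R a n)" by simp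
  then have "h x \<in> ideal_prod S (genideal S (h ` a)) (ideal_pow S (genideal S (h ` a)) n)"
  proof (induction x rule: ideal_prod.induct)
    case (prod i j)
    then have "h (i \<otimes> j) = h i \<otimes>\<^bsub>S\<^esub> h j" using ac Pc by simp
    then show ?case using ideal_prod.prod[OF hJ[OF prod(1)] Suc.IH[OF prod(2)]] by simp
  next
    case (sum s1 s2)
    have "s1 \<in> carrier R" "s2 \<in> carrier R"
      using sum(1,2) R.ideal_prod_in_carrier[OF a R.ideal_pow_ideal[OF a]] by auto
    then have "h (s1 \<oplus> s2) = h s1 \<oplus>\<^bsub>S\<^esub> h s2" by simp
    then show ?case using ideal_prod.sum[OF sum(3) sum(4)] by simp
  qed
  then show ?case by simp
qed

lemma (in module) ann_ideal:
  assumes z: "z \<in> carrier M"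
  shows "ideal {r \<in> carrier R. r \<odot>\<^bsub>M\<^esub> z = \<zero>\<^bsub>M\<^esub>} R"
proof (rule idealI)
  show "ring R" by (rule R.ring_axioms)
  show "subgroup {r \<in> carrier R. r \<odot>\<^bsub>M\<^esub> z = \<zero>\<^bsub>M\<^esub>} (add_monoid R)"
    apply (rule R.add.subgroupI)
    using z apply auto[1]
    using z apply (metis (mono_tags, lifting) R.zero_closed empty_iff mem_Collect_eq smult_l_null)
    using z apply (simp add: a_inv_def[symmetric] smult_l_minus)
    using z apply (simp add: smult_l_distr)
    done
  show "x \<otimes> a \<in> {r \<in> carrier R. r \<odot>\<^bsub>M\<^esub> z = \<zero>\<^bsub>M\<^esub>}" if "a \<in> {r \<in> carrier R. r \<odot>\<^bsub>M\<^esub> z = \<zero>\<^bsub>M\<^esub>}" "x \<in> carrier R" for a x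
    using that z by (simp add: smult_assoc1)
  show "a \<otimes> x \<in> {r \<in> carrier R. r \<odot>\<^bsub>M\<^esub> z = \<zero>\<^bsub>M\<^esub>}" if "a \<in> {r \<in> carrier R. r \<odot>\<^bsub>M\<^esub> z = \<zero>\<^bsub>M\<^esub>}" "x \<in> carrier R" for a x
  proof -
    have "a \<otimes> x = x \<otimes> a" using that by (simp add: R.m_comm)
    then show ?thesis using that z by (simp add: smult_assoc1)
  qed
qed

lemma (in module) torsion_closed:
  assumes a: "ideal a R"
  shows "torsion R a M \<subseteq> carrier M" "\<zero>\<^bsub>M\<^esub> \<in> torsion R a M"
    "\<And>x y. x \<in> torsion R a M \<Longrightarrow> y \<in> torsion R a M \<Longrightarrow> x \<oplus>\<^bsub>M\<^esub> y \<in> torsion R a M"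
    "\<And>r x. r \<in> carrier R \<Longrightarrow> x \<in> torsion R a M \<Longrightarrow> r \<odot>\<^bsub>M\<^esub> x \<in> torsion R a M"
proof -
  have Pc: "\<And>y n. y \<in> ideal_pow R a n \<Longrightarrow> y \<in> carrier R" using ideal.Icarr[OF R.ideal_pow_ideal[OF a]] by blast
  show "torsion R a M \<subseteq> carrier M" unfolding torsion_def by auto
  show "\<zero>\<^bsub>M\<^esub> \<in> torsion R a M" unfolding torsion_def using Pc by auto
  show "x \<oplus>\<^bsub>M\<^esub> y \<in> torsion R a M" if hx: "x \<in> torsion R a M" "y \<in> torsion R a M" for x y
  proof -
    obtain n where n: "x \<in> carrier M" "\<forall>r \<in> ideal_pow R a n. r \<odot>\<^bsub>M\<^esub> x = \<zero>\<^bsub>M\<^esub>" using hx(1) unfolding torsion_def by auto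
    obtain m where m: "y \<in> carrier M" "\<forall>r \<in> ideal_pow R a m. r \<odot>\<^bsub>M\<^esub> y = \<zero>\<^bsub>M\<^esub>" using hx(2) unfolding torsion_def by auto
    have "\<forall>r \<in> ideal_pow R a (max n m). r \<odot>\<^bsub>M\<^esub> (x \<oplus>\<^bsub>M\<^esub> y) = \<zero>\<^bsub>M\<^esub>"
    proof
      fix r assume r: "r \<in> ideal_pow R a (max n m)"
      then have "r \<in> ideal_pow R a n" "r \<in> ideal_pow R a m"
        using R.ideal_pow_mono[OF a, of n "max n m"] R.ideal_pow_mono[OF a, of m "max n m"] by auto
      then show "r \<odot>\<^bsub>M\<^esub> (x \<oplus>\<^bsub>M\<^esub> y) = \<zero>\<^bsub>M\<^esub>" using n m Pc r by (simp add: smult_r_distr)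
    qed
    then show ?thesis unfolding torsion_def using n(1) m(1) by auto
  qed
  show "r \<odot>\<^bsub>M\<^esub> x \<in> torsion R a M" if hx: "r \<in> carrier R" "x \<in> torsion R a M" for r x
  proof -
    obtain n where n: "x \<in> carrier M" "\<forall>s \<in> ideal_pow R a n. s \<odot>\<^bsub>M\<^esub> x = \<zero>\<^bsub>M\<^esub>" using hx(2) unfolding torsion_def by auto
    have "\<forall>s \<in> ideal_pow R a n. s \<odot>\<^bsub>M\<^esub> (r \<odot>\<^bsub>M\<^esub> x) = \<zero>\<^bsub>M\<^esub>"
    proof
      fix s assume s: "s \<in> ideal_pow R a n"
      have "s \<odot>\<^bsub>M\<^esub> (r \<odot>\<^bsub>M\<^esub> x) = r \<odot>\<^bsub>M\<^esub> (s \<odot>\<^bsub>M\<^esub> x)"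
        using s Pc hx(1) n(1) by (simp add: smult_assoc1[symmetric] R.m_comm)
      then show "s \<odot>\<^bsub>M\<^esub> (r \<odot>\<^bsub>M\<^esub> x) = \<zero>\<^bsub>M\<^esub>" using n s hx(1) by simp
    qed
    then show ?thesis unfolding torsion_def using n(1) hx(1) by auto
  qed
qed

lemma (in abelian_monoid) fs_filter:
  assumes "finite A" "f \<in> A \<rightarrow> carrier G"
  shows "(\<Oplus>x\<in>A. if P x then f x else \<zero>) = finsum G f {x\<in>A. P x}"
proof -
  have "finsum G f {x\<in>A. P x} = finsum G (\<lambda>x. if P x then f x else \<zero>) {x\<in>A. P x}"
    using assms by (intro finsum_cong') auto
  also have "\<dots> = (\<Oplus>x\<in>A. if P x then f x else \<zero>)"
    using assms by (intro fs_extend) auto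
  finally show ?thesis by simp
qed

lemma tensor_eq_zero_iff:
  assumes "cring S" "\<And>x. f x \<in> carrier S"
  shows "tensor_eq R S h N f (\<lambda>x. \<zero>\<^bsub>S\<^esub>) \<longleftrightarrow> f \<in> tensor_rel R S h N"
proof -
  interpret S: cring S by fact
  have "fminus S f (\<lambda>x. \<zero>\<^bsub>S\<^esub>) = f" using assms(2) by (auto simp: fminus_def fadd_def fneg_def)
  then show ?thesis unfolding tensor_eq_def by simp
qed

lemma wsys_prod:
  assumes "ring_hom_cring R S h" "module R M"
  shows "wsys R S h M (prod_module M K) ((\<lambda>i r y. r \<odot>\<^bsub>M\<^esub> y i) ` K)"
proof -
  interpret ring_hom_cring R S h by fact
  interpret M: module R M by fact
  show ?thesis
  proof (intro wsys.intro wsys_axioms.intro)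
    show "ring_hom_cring R S h" by fact
    show "abelian_group M" by (rule M.abelian_group_axioms)
    show "w r y \<in> carrier M" if "w \<in> (\<lambda>i r y. r \<odot>\<^bsub>M\<^esub> y i) ` K" "r \<in> carrier R" "y \<in> carrier (prod_module M K)" for w r y
      using that by (auto simp: prod_module_def)
    show "w (r \<oplus>\<^bsub>R\<^esub> r') y = w r y \<oplus>\<^bsub>M\<^esub> w r' y" if "w \<in> (\<lambda>i r y. r \<odot>\<^bsub>M\<^esub> y i) ` K" "r \<in> carrier R" "r' \<in> carrier R" "y \<in> carrier (prod_module M K)" for w r r' y
      using that by (auto simp: prod_module_def M.smult_l_distr)
    show "y \<oplus>\<^bsub>prod_module M K\<^esub> y' \<in> carrier (prod_module M K)" if "y \<in> carrier (prod_module M K)" "y' \<in> carrier (prod_module M K)" for y y'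
      using that by (auto simp: prod_module_def)
    show "r \<odot>\<^bsub>prod_module M K\<^esub> y \<in> carrier (prod_module M K)" if "r \<in> carrier R" "y \<in> carrier (prod_module M K)" for r y
      using that by (auto simp: prod_module_def)
    show "w \<one>\<^bsub>R\<^esub> (y \<oplus>\<^bsub>prod_module M K\<^esub> y') = w \<one>\<^bsub>R\<^esub> y \<oplus>\<^bsub>M\<^esub> w \<one>\<^bsub>R\<^esub> y'" if "w \<in> (\<lambda>i r y. r \<odot>\<^bsub>M\<^esub> y i) ` K" "y \<in> carrier (prod_module M K)" "y' \<in> carrier (prod_module M K)" for w y y'
      using that by (auto simp: prod_module_def)
    show "w \<one>\<^bsub>R\<^esub> (r \<odot>\<^bsub>prod_module M K\<^esub> y) = w r y" if "w \<in> (\<lambda>i r y. r \<odot>\<^bsub>M\<^esub> y i) ` K" "r \<in> carrier R" "y \<in> carrier (prod_module M K)" for w r y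
      using that by (auto simp: prod_module_def)
  qed
qed

context wsys begin

lemma w_finsum:
  assumes "w \<in> W" "finite J" "g \<in> J \<rightarrow> carrier R" "y \<in> carrier N"
  shows "w (finsum R g J) y = finsum A (\<lambda>j. w (g j) y) J"
  using assms(2,3)
proof (induction J rule: finite_induct)
  case empty
  then show ?case using w_zero[OF assms(1,4)] by simp
next
  case (insert a F)
  then have "finsum R g (insert a F) = g a \<oplus> finsum R g F" by (intro R.finsum_insert) auto
  then show ?case using insert assms(1,4) by (simp add: w_add R.finsum_closed A.finsum_insert w_closed Pi_def)
qed

end


context ring_hom_cring begin

lemma free_facts:
  assumes "f \<in> free_on S N"
  shows "\<And>x. f x \<in> carrier S" "\<And>x. x \<notin> carrier N \<Longrightarrow> f x = \<zero>\<^bsub>S\<^esub>" "finite (fsupp S f)" "fsupp S f \<subseteq> carrier N"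
  using assms unfolding free_on_def fsupp_def by auto

lemma push_TR:
  fixes M :: "('a, 'm) module"
  assumes M: "module R M" and f: "f \<in> free_on S M" and r: "r \<in> carrier R"
    and hf: "fsmult S (h r) f \<in> tensor_rel R S h M"
  shows "(\<lambda>m'. finsum S f {m \<in> fsupp S f. r \<odot>\<^bsub>M\<^esub> m = m'}) \<in> tensor_rel R S h M"
proof -
  interpret M: module R M by (rule M)
  interpret WM: wsys R S h M M "{\<lambda>r y. r \<odot>\<^bsub>M\<^esub> y}" using wsys_module[OF ring_hom_cring_axioms M] .
  note ff = free_facts[OF f]
  let ?X = "fsupp S f"
  define kd where "kd m = fminus R (fdelta R (r \<odot>\<^bsub>M\<^esub> m) \<one>) (fdelta R m r)" for m
  have kdK: "kd m \<in> Kset R M {\<lambda>r y. r \<odot>\<^bsub>M\<^esub> y} (carrier M)" if "m \<in> ?X" for m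
    unfolding kd_def using WM.k_sm_K[OF r] ff(4) that by auto
  have C: "carrier M \<subseteq> carrier M" "\<zero>\<^bsub>M\<^esub> \<in> carrier M"
    "\<And>x y. x \<in> carrier M \<Longrightarrow> y \<in> carrier M \<Longrightarrow> x \<oplus>\<^bsub>M\<^esub> y \<in> carrier M"
    "\<And>r x. r \<in> carrier R \<Longrightarrow> x \<in> carrier M \<Longrightarrow> r \<odot>\<^bsub>M\<^esub> x \<in> carrier M" by auto
  have fX: "f \<in> ?X \<rightarrow> carrier S" using ff(1) by auto
  have D: "(\<lambda>x. finsum S (\<lambda>m. f m \<otimes>\<^bsub>S\<^esub> h (kd m x)) ?X) \<in> tensor_rel R S h M"
    using ZTR[OF M C ff(3) fX kdK] by simp
  have "(\<lambda>m'. finsum S f {m \<in> ?X. r \<odot>\<^bsub>M\<^esub> m = m'})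
       = fadd S (\<lambda>x. finsum S (\<lambda>m. f m \<otimes>\<^bsub>S\<^esub> h (kd m x)) ?X) (fsmult S (h r) f)"
  proof
    fix x
    have hr: "h r \<in> carrier S" using r by simp
    have e1: "f m \<otimes>\<^bsub>S\<^esub> h (kd m x) = (if r \<odot>\<^bsub>M\<^esub> m = x then f m else \<zero>\<^bsub>S\<^esub>) \<oplus>\<^bsub>S\<^esub> \<ominus>\<^bsub>S\<^esub> (if m = x then f m \<otimes>\<^bsub>S\<^esub> h r else \<zero>\<^bsub>S\<^esub>)" for m
      unfolding kd_def using ff(1)[of m] hr r
      by (auto simp: fminus_def fadd_def fneg_def fdelta_def S.r_distr S.r_minus)
    have "finsum S (\<lambda>m. f m \<otimes>\<^bsub>S\<^esub> h (kd m x)) ?X = finsum S (\<lambda>m. (if r \<odot>\<^bsub>M\<^esub> m = x then f m else \<zero>\<^bsub>S\<^esub>) \<oplus>\<^bsub>S\<^esub> \<ominus>\<^bsub>S\<^esub> (if m = x then f m \<otimes>\<^bsub>S\<^esub> h r else \<zero>\<^bsub>S\<^esub>)) ?X"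
      using e1 ff(1) hr by (intro S.finsum_cong') auto
    also have "\<dots> = finsum S (\<lambda>m. if r \<odot>\<^bsub>M\<^esub> m = x then f m else \<zero>\<^bsub>S\<^esub>) ?X \<oplus>\<^bsub>S\<^esub> finsum S (\<lambda>m. \<ominus>\<^bsub>S\<^esub> (if m = x then f m \<otimes>\<^bsub>S\<^esub> h r else \<zero>\<^bsub>S\<^esub>)) ?X"
      using ff(1) hr by (intro S.finsum_addf) auto
    also have "finsum S (\<lambda>m. if r \<odot>\<^bsub>M\<^esub> m = x then f m else \<zero>\<^bsub>S\<^esub>) ?X = finsum S f {m \<in> ?X. r \<odot>\<^bsub>M\<^esub> m = x}"
      using S.fs_filter[OF ff(3) fX] .
    also have "finsum S (\<lambda>m. \<ominus>\<^bsub>S\<^esub> (if m = x then f m \<otimes>\<^bsub>S\<^esub> h r else \<zero>\<^bsub>S\<^esub>)) ?X = \<ominus>\<^bsub>S\<^esub> finsum S (\<lambda>m. if m = x then f m \<otimes>\<^bsub>S\<^esub> h r else \<zero>\<^bsub>S\<^esub>) ?X"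
      using ff(1) hr ff(3) by (intro S.fs_neg) auto
    also have "finsum S (\<lambda>m. if m = x then f m \<otimes>\<^bsub>S\<^esub> h r else \<zero>\<^bsub>S\<^esub>) ?X = finsum S (\<lambda>m. if m = x then f x \<otimes>\<^bsub>S\<^esub> h r else \<zero>\<^bsub>S\<^esub>) ?X"
      by (intro S.finsum_cong') (auto simp: ff(1) hr)
    also have "\<dots> = (if x \<in> ?X then f x \<otimes>\<^bsub>S\<^esub> h r else \<zero>\<^bsub>S\<^esub>)"
      using ff(1) ff(3) hr by (subst S.fs_delta) auto
    also have "\<dots> = h r \<otimes>\<^bsub>S\<^esub> f x"
      using ff(1)[of x] hr by (auto simp: fsupp_def S.m_comm)
    finally have "finsum S (\<lambda>m. f m \<otimes>\<^bsub>S\<^esub> h (kd m x)) ?X = finsum S f {m \<in> ?X. r \<odot>\<^bsub>M\<^esub> m = x} \<oplus>\<^bsub>S\<^esub> \<ominus>\<^bsub>S\<^esub> (h r \<otimes>\<^bsub>S\<^esub> f x)" .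
    moreover have "finsum S f {m \<in> ?X. r \<odot>\<^bsub>M\<^esub> m = x} \<in> carrier S" using ff(1) by (intro S.finsum_closed) auto
    moreover have "h r \<otimes>\<^bsub>S\<^esub> f x \<in> carrier S" using ff(1) hr by simp
    ultimately show "finsum S f {m \<in> ?X. r \<odot>\<^bsub>M\<^esub> m = x}
       = fadd S (\<lambda>x. finsum S (\<lambda>m. f m \<otimes>\<^bsub>S\<^esub> h (kd m x)) ?X) (fsmult S (h r) f) x"
      unfolding fadd_def fsmult_def by (simp add: S.a_assoc S.l_neg)
  qed
  then show ?thesis using TR_add[OF hf D] by simp
qed


lemma push_comp_eq:
  fixes M :: "('a, 'm) module" and c :: "'i \<Rightarrow> 'a" and K :: "'i set"
  assumes f: "f \<in> free_on S M" and i: "i \<in> K"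
  shows "push_comp S i (\<lambda>y. finsum S f {m \<in> fsupp S f. (\<lambda>j\<in>K. c j \<odot>\<^bsub>M\<^esub> m) = y}) m'
     = finsum S f {m \<in> fsupp S f. c i \<odot>\<^bsub>M\<^esub> m = m'}"
proof -
  note ff = free_facts[OF f]
  define Bp where "Bp = fsupp S f"
  define \<phi> where "\<phi> m = (\<lambda>j\<in>K. c j \<odot>\<^bsub>M\<^esub> m)" for m
  define F where "F y = finsum S f {m \<in> Bp. \<phi> m = y}" for y
  have Fc: "F y \<in> carrier S" for y unfolding F_def using ff(1) by (intro S.finsum_closed) auto
  have F0: "F y = \<zero>\<^bsub>S\<^esub>" if "y \<notin> \<phi> ` Bp" for y
  proof -
    have e: "{m \<in> Bp. \<phi> m = y} = {}" using that by auto
    show ?thesis unfolding F_def e by simp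
  qed
  have Xf: "finite Bp" unfolding Bp_def using ff(3) .
  define Bq where "Bq = {m \<in> Bp. c i \<odot>\<^bsub>M\<^esub> m = m'}"
  have Bqf: "finite Bq" unfolding Bq_def using Xf by simp
  have phii: "\<phi> m i = c i \<odot>\<^bsub>M\<^esub> m" for m unfolding \<phi>_def using i by simp
  have Y: "{y \<in> \<phi> ` Bp. y i = m'} = \<phi> ` Bq" unfolding Bq_def using phii by auto
  have "push_comp S i (\<lambda>y. finsum S f {m \<in> fsupp S f. (\<lambda>j\<in>K. c j \<odot>\<^bsub>M\<^esub> m) = y}) m'
     = finsum S F {y \<in> fsupp S F. y i = m'}"
    unfolding push_comp_def F_def Bp_def \<phi>_def ..
  also have "\<dots> = finsum S F {y \<in> \<phi> ` Bp. y i = m'}"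
  proof (rule S.fs_extend)
    show "finite {y \<in> \<phi> ` Bp. y i = m'}" using Xf by simp
    show "{y \<in> fsupp S F. y i = m'} \<subseteq> {y \<in> \<phi> ` Bp. y i = m'}" using F0 unfolding fsupp_def by blast
    show "F \<in> {y \<in> \<phi> ` Bp. y i = m'} \<rightarrow> carrier S" using Fc by simp
    show "\<And>x. x \<in> {y \<in> \<phi> ` Bp. y i = m'} - {y \<in> fsupp S F. y i = m'} \<Longrightarrow> F x = \<zero>\<^bsub>S\<^esub>"
      unfolding fsupp_def by auto
  qed
  also have "\<dots> = finsum S (\<lambda>y. finsum S f {m \<in> Bq. \<phi> m = y}) (\<phi> ` Bq)"
    unfolding Y
  proof (rule S.finsum_cong')
    fix y assume y: "y \<in> \<phi> ` Bq"
    have "{m \<in> Bp. \<phi> m = y} = {m \<in> Bq. \<phi> m = y}"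
      using y unfolding Bq_def by (auto, metis phii)
    then show "F y = finsum S f {m \<in> Bq. \<phi> m = y}" unfolding F_def by simp
  qed (use ff(1) in \<open>auto intro!: S.finsum_closed\<close>)
  also have "\<dots> = finsum S f Bq"
    using S.fs_fiber[OF Bqf, of f \<phi>] ff(1) by auto
  finally show ?thesis unfolding Bq_def Bp_def .
qed

end

context ring_hom_cring begin

lemma surj_core:
  fixes M :: "('a, 'm) module" and c :: "'i \<Rightarrow> 'a" and K :: "'i set"
  assumes flat: "flat_hom R S h" and M: "module R M" and f: "f \<in> free_on S M" and c: "\<And>i. c i \<in> carrier R"
    and FTR: "(\<lambda>y. finsum S f {m \<in> fsupp S f. (\<lambda>j\<in>K. c j \<odot>\<^bsub>M\<^esub> m) = y}) \<in> tensor_rel R S h (prod_module M K)"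
  shows "\<exists>(L::nat set) u z. finite L \<and> u \<in> L \<rightarrow> carrier S \<and> (\<forall>l\<in>L. z l \<in> carrier M \<and> (\<forall>i\<in>K. c i \<odot>\<^bsub>M\<^esub> z l = \<zero>\<^bsub>M\<^esub>)) \<and>
     fminus S f (\<lambda>x. finsum S (\<lambda>l. u l \<otimes>\<^bsub>S\<^esub> fdelta S (z l) \<one>\<^bsub>S\<^esub> x) L) \<in> tensor_rel R S h M"
proof -
  interpret M: module R M by (rule M)
  interpret WM: wsys R S h M M "{\<lambda>r y. r \<odot>\<^bsub>M\<^esub> y}" using wsys_module[OF ring_hom_cring_axioms M] .
  interpret WP: wsys R S h M "prod_module M K" "(\<lambda>i r y. r \<odot>\<^bsub>M\<^esub> y i) ` K" using wsys_prod[OF ring_hom_cring_axioms M] .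
  note ff = free_facts[OF f]
  define Bx where "Bx = fsupp S f"
  have Bxf: "finite Bx" and BxM: "Bx \<subseteq> carrier M" unfolding Bx_def using ff by auto
  define \<phi> where "\<phi> m = (\<lambda>j\<in>K. c j \<odot>\<^bsub>M\<^esub> m)" for m
  have \<phi>c: "\<phi> m \<in> carrier (prod_module M K)" if "m \<in> carrier M" for m
    unfolding \<phi>_def prod_module_def using that c by auto
  have \<phi>i: "\<phi> m i = c i \<odot>\<^bsub>M\<^esub> m" if "i \<in> K" for m i unfolding \<phi>_def using that by simp
  define F where "F y = finsum S f {m \<in> Bx. \<phi> m = y}" for y
  have "F \<in> tensor_rel R S h (prod_module M K)" using FTR unfolding F_def Bx_def \<phi>_def .
  then have "F \<in> Zset R S h (Kset R M ((\<lambda>i r y. r \<odot>\<^bsub>M\<^esub> y i) ` K) (carrier (prod_module M K)))"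
    using WP.TR_Zset by blast
  then obtain LF uF kF where LF: "finite (LF::nat set)" "uF \<in> LF \<rightarrow> carrier S"
      "\<forall>l\<in>LF. kF l \<in> Kset R M ((\<lambda>i r y. r \<odot>\<^bsub>M\<^esub> y i) ` K) (carrier (prod_module M K))"
    and Fe: "F = (\<lambda>y. finsum S (\<lambda>l. uF l \<otimes>\<^bsub>S\<^esub> h (kF l y)) LF)" unfolding Zset_def by blast
  have kFc: "\<And>l y. l \<in> LF \<Longrightarrow> kF l y \<in> carrier R"
    and kF0: "\<And>l y. l \<in> LF \<Longrightarrow> y \<notin> carrier (prod_module M K) \<Longrightarrow> kF l y = \<zero>"
    and kFf: "\<And>l. l \<in> LF \<Longrightarrow> finite (fsupp R (kF l))"
    and kFev: "\<And>l w. l \<in> LF \<Longrightarrow> w \<in> (\<lambda>i r y. r \<odot>\<^bsub>M\<^esub> y i) ` K \<Longrightarrow> finsum M (\<lambda>y. w (kF l y) y) (fsupp R (kF l)) = \<zero>\<^bsub>M\<^esub>"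
    using LF(3) unfolding Kset_def by auto
  have uFc: "\<And>l. l \<in> LF \<Longrightarrow> uF l \<in> carrier S" using LF(2) by auto
  define N where "N = card Bx"
  obtain en where en: "bij_betw en {0..<N} Bx" unfolding N_def using ex_bij_betw_nat_finite[OF Bxf] by blast
  have enB: "\<And>p. p \<in> {0..<N} \<Longrightarrow> en p \<in> Bx" using en unfolding bij_betw_def by auto
  have enM: "\<And>p. p \<in> {0..<N} \<Longrightarrow> en p \<in> carrier M" using enB BxM by auto
  define PN where "PN = {0..<N}"
  have PNf: "finite PN" unfolding PN_def by simp
  define J0 where "J0 = (\<lambda>p. 2*p) ` PN \<union> (\<lambda>l. 2*l+1) ` LF"
  define t where "t j = (if even j then (if j div 2 \<in> PN then f (en (j div 2)) else \<zero>\<^bsub>S\<^esub>)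
      else (if j div 2 \<in> LF then \<ominus>\<^bsub>S\<^esub> uF (j div 2) else \<zero>\<^bsub>S\<^esub>))" for j
  define v where "v j y = (if even j then (if j div 2 \<in> PN then fdelta R (\<phi> (en (j div 2))) \<one> y else \<zero>)
      else (if j div 2 \<in> LF then kF (j div 2) y else \<zero>))" for j y
  define Xs where "Xs = \<phi> ` Bx \<union> (\<Union>l\<in>LF. fsupp R (kF l))"
  have tc: "\<And>j. t j \<in> carrier S" unfolding t_def using ff(1) uFc by auto
  have vc: "\<And>j y. v j y \<in> carrier R" unfolding v_def using kFc by auto
  have t_ev: "\<And>p. p \<in> PN \<Longrightarrow> t (2*p) = f (en p)" unfolding t_def by simp
  have t_od: "\<And>l. l \<in> LF \<Longrightarrow> t (2*l+1) = \<ominus>\<^bsub>S\<^esub> uF l" unfolding t_def by simp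
  have v_ev: "\<And>p y. p \<in> PN \<Longrightarrow> v (2*p) y = fdelta R (\<phi> (en p)) \<one> y" unfolding v_def by simp
  have v_od: "\<And>l y. l \<in> LF \<Longrightarrow> v (2*l+1) y = kF l y" unfolding v_def by simp
  have v0: "v j y = \<zero>" if "y \<notin> Xs" for j y
  proof -
    have "\<And>p. p \<in> PN \<Longrightarrow> \<phi> (en p) \<noteq> y" using that enB unfolding Xs_def PN_def by auto
    moreover have "\<And>l. l \<in> LF \<Longrightarrow> kF l y = \<zero>" using that unfolding Xs_def fsupp_def by auto
    ultimately show ?thesis unfolding v_def fdelta_def by auto
  qed
  have Xsf: "finite Xs" unfolding Xs_def using Bxf LF(1) kFf by auto
  have XsP: "Xs \<subseteq> carrier (prod_module M K)" unfolding Xs_def using \<phi>c BxM kF0 unfolding fsupp_def by blast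
  have z: "finsum S (\<lambda>j. t j \<otimes>\<^bsub>S\<^esub> h (v j y)) J0 = \<zero>\<^bsub>S\<^esub>" for y
  proof -
    have full: "(\<lambda>j. t j \<otimes>\<^bsub>S\<^esub> h (v j y)) \<in> UNIV \<rightarrow> carrier S" using tc vc by simp
    have "finsum S (\<lambda>j. t j \<otimes>\<^bsub>S\<^esub> h (v j y)) J0 = finsum S (\<lambda>p. t (2*p) \<otimes>\<^bsub>S\<^esub> h (v (2*p) y)) PN
        \<oplus>\<^bsub>S\<^esub> finsum S (\<lambda>l. t (2*l+1) \<otimes>\<^bsub>S\<^esub> h (v (2*l+1) y)) LF"
      unfolding J0_def using S.fs_evod[OF PNf LF(1) full] .
    also have "finsum S (\<lambda>p. t (2*p) \<otimes>\<^bsub>S\<^esub> h (v (2*p) y)) PN = finsum S (\<lambda>p. if \<phi> (en p) = y then f (en p) else \<zero>\<^bsub>S\<^esub>) PN"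
      using t_ev v_ev ff(1) by (intro S.finsum_cong') (auto simp: fdelta_def)
    also have "\<dots> = finsum S (\<lambda>m. if \<phi> m = y then f m else \<zero>\<^bsub>S\<^esub>) Bx"
    proof -
      have "en ` PN = Bx" "inj_on en PN" using en unfolding bij_betw_def PN_def by auto
      then show ?thesis using S.finsum_reindex[of "\<lambda>m. if \<phi> m = y then f m else \<zero>\<^bsub>S\<^esub>" en PN] ff(1) by auto
    qed
    also have "\<dots> = F y" unfolding F_def using S.fs_filter[OF Bxf] ff(1) by auto
    also have "finsum S (\<lambda>l. t (2*l+1) \<otimes>\<^bsub>S\<^esub> h (v (2*l+1) y)) LF = finsum S (\<lambda>l. \<ominus>\<^bsub>S\<^esub> (uF l \<otimes>\<^bsub>S\<^esub> h (kF l y))) LF"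
      using t_od v_od uFc kFc by (intro S.finsum_cong') (auto simp: S.l_minus)
    also have "\<dots> = \<ominus>\<^bsub>S\<^esub> F y" unfolding Fe using LF(1) uFc kFc by (intro S.fs_neg) auto
    also have "F y \<oplus>\<^bsub>S\<^esub> \<ominus>\<^bsub>S\<^esub> F y = \<zero>\<^bsub>S\<^esub>"
      using S.r_neg[of "F y"] unfolding F_def using ff(1) S.finsum_closed by auto
    finally show ?thesis .
  qed
  have J0f: "finite J0" unfolding J0_def using PNf LF(1) by simp
  have tJ0: "t \<in> J0 \<rightarrow> carrier S" using tc by simp
  have ex: "\<exists>(L::nat set) a u. finite L \<and> u \<in> L \<rightarrow> carrier S \<and> (\<forall>j l. a j l \<in> carrier R) \<and>
     (\<forall>j\<in>J0. t j = finsum S (\<lambda>l. h (a j l) \<otimes>\<^bsub>S\<^esub> u l) L) \<and> (\<forall>l\<in>L. \<forall>y. finsum R (\<lambda>j. a j l \<otimes> v j y) J0 = \<zero>)"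
    apply (rule VC[OF flat Xsf])
        apply (rule J0f)
       apply (rule tJ0)
      apply (rule vc)
     apply (erule v0)
    apply (rule z)
    done
  then obtain L a u where L: "finite (L::nat set)" "u \<in> L \<rightarrow> carrier S" "\<forall>j l. a j l \<in> carrier R"
     "\<forall>j\<in>J0. t j = finsum S (\<lambda>l. h (a j l) \<otimes>\<^bsub>S\<^esub> u l) L" "\<forall>l\<in>L. \<forall>y. finsum R (\<lambda>j. a j l \<otimes> v j y) J0 = \<zero>"
    by blast
  have ac: "\<And>j l. a j l \<in> carrier R" using L(3) by blast
  have uc: "\<And>l. l \<in> L \<Longrightarrow> u l \<in> carrier S" using L(2) by auto
  define zz where "zz l = finsum M (\<lambda>p. a (2*p) l \<odot>\<^bsub>M\<^esub> en p) PN" for l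
  have zc: "\<And>l. zz l \<in> carrier M" unfolding zz_def using ac enM PN_def by (intro M.finsum_closed) auto
  have zk: "c i \<odot>\<^bsub>M\<^esub> zz l = \<zero>\<^bsub>M\<^esub>" if l: "l \<in> L" and i: "i \<in> K" for l i
  proof -
    define w where "w = (\<lambda>(r::'a) (y::'i \<Rightarrow> 'm). r \<odot>\<^bsub>M\<^esub> y i)"
    have wW: "w \<in> (\<lambda>i r y. r \<odot>\<^bsub>M\<^esub> y i) ` K" unfolding w_def using i by blast
    have VCl: "\<And>y. finsum R (\<lambda>j. a j l \<otimes> v j y) J0 = \<zero>" using L(5) l by blast
    have avc: "\<And>j y. a j l \<otimes> v j y \<in> carrier R" using ac vc by simp
    have Xs_y: "\<And>y. y \<in> Xs \<Longrightarrow> y \<in> carrier (prod_module M K)" using XsP by auto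
    have yi: "\<And>y. y \<in> Xs \<Longrightarrow> y i \<in> carrier M" using Xs_y i by (auto simp: prod_module_def)
    define ev where "ev j = finsum M (\<lambda>y. w (v j y) y) Xs" for j
    have wc: "\<And>j y. y \<in> Xs \<Longrightarrow> w (v j y) y \<in> carrier M" using WP.w_closed[OF wW vc Xs_y] .
    have evc: "\<And>j. ev j \<in> carrier M" unfolding ev_def using wc by (intro M.finsum_closed) auto
    have E: "\<zero>\<^bsub>M\<^esub> = finsum M (\<lambda>j. a j l \<odot>\<^bsub>M\<^esub> ev j) J0"
    proof -
      have "finsum M (\<lambda>y. w (finsum R (\<lambda>j. a j l \<otimes> v j y) J0) y) Xs = finsum M (\<lambda>y. \<zero>\<^bsub>M\<^esub>) Xs"
        using VCl WP.w_zero[OF wW] Xs_y by (intro M.finsum_cong') auto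
      then have "\<zero>\<^bsub>M\<^esub> = finsum M (\<lambda>y. w (finsum R (\<lambda>j. a j l \<otimes> v j y) J0) y) Xs" by simp
      also have "\<dots> = finsum M (\<lambda>y. finsum M (\<lambda>j. w (a j l \<otimes> v j y) y) J0) Xs"
      proof (rule M.finsum_cong')
        fix y assume y: "y \<in> Xs"
        show "w (finsum R (\<lambda>j. a j l \<otimes> v j y) J0) y = finsum M (\<lambda>j. w (a j l \<otimes> v j y) y) J0"
          using WP.w_finsum[OF wW J0f _ Xs_y[OF y], of "\<lambda>j. a j l \<otimes> v j y"] avc by simp
      qed (use WP.w_closed[OF wW] avc Xs_y in \<open>auto intro!: M.finsum_closed\<close>)
      also have "\<dots> = finsum M (\<lambda>j. finsum M (\<lambda>y. w (a j l \<otimes> v j y) y) Xs) J0"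
        using Xsf J0f WP.w_closed[OF wW] avc Xs_y by (intro M.fs_swap) auto
      also have "\<dots> = finsum M (\<lambda>j. a j l \<odot>\<^bsub>M\<^esub> ev j) J0"
      proof (rule M.finsum_cong')
        fix j assume j: "j \<in> J0"
        have "finsum M (\<lambda>y. w (a j l \<otimes> v j y) y) Xs = finsum M (\<lambda>y. a j l \<odot>\<^bsub>M\<^esub> w (v j y) y) Xs"
          unfolding w_def using ac vc yi by (intro M.finsum_cong') (auto simp: M.smult_assoc1)
        also have "\<dots> = a j l \<odot>\<^bsub>M\<^esub> ev j"
          unfolding ev_def using M.finsum_smult_ldistr[OF Xsf ac[of j l], of "\<lambda>y. w (v j y) y"] wc by auto
        finally show "finsum M (\<lambda>y. w (a j l \<otimes> v j y) y) Xs = a j l \<odot>\<^bsub>M\<^esub> ev j" .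
      qed (use ac evc in auto)
      finally show ?thesis .
    qed
    have full: "(\<lambda>j. a j l \<odot>\<^bsub>M\<^esub> ev j) \<in> UNIV \<rightarrow> carrier M" using ac evc by simp
    have ev_e: "ev (2*p) = c i \<odot>\<^bsub>M\<^esub> en p" if p: "p \<in> PN" for p
    proof -
      have pin: "\<phi> (en p) \<in> Xs" unfolding Xs_def using enB p PN_def by auto
      have "ev (2*p) = finsum M (\<lambda>y. w (fdelta R (\<phi> (en p)) \<one> y) y) Xs"
        unfolding ev_def using v_ev[OF p] by simp
      also have "\<dots> = w \<one> (\<phi> (en p))" using WP.ev_delta[OF wW Xsf XsP pin R.one_closed] .
      also have "\<dots> = c i \<odot>\<^bsub>M\<^esub> en p" unfolding w_def \<phi>i[OF i] using enM p c PN_def by simp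
      finally show ?thesis .
    qed
    have ev_o: "ev (2*l'+1) = \<zero>\<^bsub>M\<^esub>" if l': "l' \<in> LF" for l'
    proof -
      have sub: "fsupp R (kF l') \<subseteq> Xs" unfolding Xs_def using l' by blast
      have "ev (2*l'+1) = finsum M (\<lambda>y. w (kF l' y) y) Xs"
        unfolding ev_def using v_od[OF l'] by simp
      also have "\<dots> = finsum M (\<lambda>y. w (kF l' y) y) (fsupp R (kF l'))"
        using WP.ev_ext[OF wW Xsf XsP sub, of ] kFc[OF l'] by simp
      also have "\<dots> = \<zero>\<^bsub>M\<^esub>" using kFev[OF l' wW] .
      finally show ?thesis .
    qed
    have "\<zero>\<^bsub>M\<^esub> = finsum M (\<lambda>p. a (2*p) l \<odot>\<^bsub>M\<^esub> ev (2*p)) PN \<oplus>\<^bsub>M\<^esub> finsum M (\<lambda>l'. a (2*l'+1) l \<odot>\<^bsub>M\<^esub> ev (2*l'+1)) LF"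
      using E M.fs_evod[OF PNf LF(1) full] unfolding J0_def by simp
    also have "finsum M (\<lambda>l'. a (2*l'+1) l \<odot>\<^bsub>M\<^esub> ev (2*l'+1)) LF = finsum M (\<lambda>l'. \<zero>\<^bsub>M\<^esub>) LF"
      using ev_o ac by (intro M.finsum_cong') auto
    also have "finsum M (\<lambda>p. a (2*p) l \<odot>\<^bsub>M\<^esub> ev (2*p)) PN = finsum M (\<lambda>p. c i \<odot>\<^bsub>M\<^esub> (a (2*p) l \<odot>\<^bsub>M\<^esub> en p)) PN"
    proof (rule M.finsum_cong')
      fix p assume p: "p \<in> PN"
      have cc: "c i \<in> carrier R" "a (2*p) l \<in> carrier R" "en p \<in> carrier M" using c ac enM p PN_def by auto
      have "a (2*p) l \<odot>\<^bsub>M\<^esub> (c i \<odot>\<^bsub>M\<^esub> en p) = (a (2*p) l \<otimes> c i) \<odot>\<^bsub>M\<^esub> en p" using cc by (simp add: M.smult_assoc1)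
      also have "\<dots> = (c i \<otimes> a (2*p) l) \<odot>\<^bsub>M\<^esub> en p" using cc by (simp add: R.m_comm)
      also have "\<dots> = c i \<odot>\<^bsub>M\<^esub> (a (2*p) l \<odot>\<^bsub>M\<^esub> en p)" using cc by (simp add: M.smult_assoc1)
      finally show "a (2*p) l \<odot>\<^bsub>M\<^esub> ev (2*p) = c i \<odot>\<^bsub>M\<^esub> (a (2*p) l \<odot>\<^bsub>M\<^esub> en p)" using ev_e[OF p] by simp
    qed (use c ac enM PN_def in auto)
    also have "finsum M (\<lambda>p. c i \<odot>\<^bsub>M\<^esub> (a (2*p) l \<odot>\<^bsub>M\<^esub> en p)) PN = c i \<odot>\<^bsub>M\<^esub> zz l"
      unfolding zz_def using M.finsum_smult_ldistr[OF PNf c, of "\<lambda>p. a (2*p) l \<odot>\<^bsub>M\<^esub> en p" i] ac enM PN_def by auto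
    finally show ?thesis using zc[of l] c[of i] by simp
  qed
  have fTR: "fminus S f (\<lambda>x. finsum S (\<lambda>l. u l \<otimes>\<^bsub>S\<^esub> fdelta S (zz l) \<one>\<^bsub>S\<^esub> x) L) \<in> tensor_rel R S h M"
  proof -
    define q where "q l x = finsum R (\<lambda>p. fdelta R (en p) (a (2*p) l) x) PN" for l x
    define k where "k l x = q l x \<oplus> \<ominus> fdelta R (zz l) \<one> x" for l x
    have qc: "\<And>l x. q l x \<in> carrier R" unfolding q_def using ac by (intro R.finsum_closed) auto
    have kc: "\<And>l x. k l x \<in> carrier R" unfolding k_def using qc by simp
    have q0: "q l x = \<zero>" if "x \<notin> Bx" for l x
    proof -
      have "q l x = finsum R (\<lambda>p. \<zero>) PN"
        unfolding q_def using that enB PN_def by (intro R.finsum_cong') (auto simp: fdelta_def)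
      then show ?thesis by simp
    qed
    have k0: "k l x = \<zero>" if "x \<notin> Bx" "x \<noteq> zz l" for l x
      unfolding k_def using q0[OF that(1)] that(2) by (simp add: fdelta_def)
    have C: "carrier M \<subseteq> carrier M" "\<zero>\<^bsub>M\<^esub> \<in> carrier M"
      "\<And>x y. x \<in> carrier M \<Longrightarrow> y \<in> carrier M \<Longrightarrow> x \<oplus>\<^bsub>M\<^esub> y \<in> carrier M"
      "\<And>r x. r \<in> carrier R \<Longrightarrow> x \<in> carrier M \<Longrightarrow> r \<odot>\<^bsub>M\<^esub> x \<in> carrier M" by auto
    have kK: "k l \<in> Kset R M {\<lambda>r y. r \<odot>\<^bsub>M\<^esub> y} (carrier M)" if l: "l \<in> L" for l
    proof (rule WM.Kset_intro[where B = "Bx \<union> {zz l}"])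
      show "\<And>x. k l x \<in> carrier R" by (rule kc)
      show "k l x = \<zero>" if "x \<notin> carrier M" for x
      proof -
        have "x \<notin> Bx" "x \<noteq> zz l" using that BxM zc[of l] by auto
        then show ?thesis by (rule k0)
      qed
      show "finite (Bx \<union> {zz l})" using Bxf by simp
      show "Bx \<union> {zz l} \<subseteq> carrier M" using BxM zc by auto
      show "fsupp R (k l) \<subseteq> Bx \<union> {zz l}"
      proof
        fix x assume "x \<in> fsupp R (k l)"
        then have "k l x \<noteq> \<zero>" unfolding fsupp_def by simp
        then show "x \<in> Bx \<union> {zz l}" using k0[of x l] by auto
      qed
      fix w assume w: "w \<in> {\<lambda>r y. r \<odot>\<^bsub>M\<^esub> y}"
      let ?B = "Bx \<union> {zz l}"
      have Bf: "finite ?B" and BM: "?B \<subseteq> carrier M" using Bxf BxM zc by auto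
      have "finsum M (\<lambda>x. w (k l x) x) ?B = finsum M (\<lambda>x. w (q l x) x) ?B \<oplus>\<^bsub>M\<^esub> finsum M (\<lambda>x. w (\<ominus> fdelta R (zz l) \<one> x) x) ?B"
        unfolding k_def using WM.ev_add[OF w Bf BM qc, of "\<lambda>x. \<ominus> fdelta R (zz l) \<one> x"] by simp
      also have "finsum M (\<lambda>x. w (\<ominus> fdelta R (zz l) \<one> x) x) ?B = \<ominus>\<^bsub>M\<^esub> zz l"
        using WM.ev_neg[OF w Bf BM, of "fdelta R (zz l) \<one>"] WM.ev_delta[OF w Bf BM _ R.one_closed, of "zz l"] w zc
        by simp
      also have "finsum M (\<lambda>x. w (q l x) x) ?B = finsum M (\<lambda>x. finsum M (\<lambda>p. w (fdelta R (en p) (a (2*p) l) x) x) PN) ?B"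
      proof (rule M.finsum_cong')
        fix x assume x: "x \<in> ?B"
        show "w (q l x) x = finsum M (\<lambda>p. w (fdelta R (en p) (a (2*p) l) x) x) PN"
          unfolding q_def using WM.w_finsum[OF w PNf _ subsetD[OF BM x], of "\<lambda>p. fdelta R (en p) (a (2*p) l) x"] ac by simp
      qed (use WM.w_closed[OF w] ac BM in \<open>auto intro!: M.finsum_closed\<close>)
      also have "\<dots> = finsum M (\<lambda>p. finsum M (\<lambda>x. w (fdelta R (en p) (a (2*p) l) x) x) ?B) PN"
        using Bf PNf WM.w_closed[OF w] ac BM by (intro M.fs_swap) auto
      also have "\<dots> = finsum M (\<lambda>p. a (2*p) l \<odot>\<^bsub>M\<^esub> en p) PN"
      proof (rule M.finsum_cong')
        fix p assume p: "p \<in> PN"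
        have "en p \<in> ?B" using enB p PN_def by auto
        then show "finsum M (\<lambda>x. w (fdelta R (en p) (a (2*p) l) x) x) ?B = a (2*p) l \<odot>\<^bsub>M\<^esub> en p"
          using WM.ev_delta[OF w Bf BM _ ac] w by simp
      qed (use ac enM PN_def in auto)
      also have "\<dots> = zz l" unfolding zz_def ..
      finally show "finsum M (\<lambda>x. w (k l x) x) ?B = \<zero>\<^bsub>M\<^esub>" using zc[of l] by (simp add: M.r_neg)
    qed
    have D: "(\<lambda>x. finsum S (\<lambda>l. u l \<otimes>\<^bsub>S\<^esub> h (k l x)) L) \<in> tensor_rel R S h M"
      using ZTR[OF M C L(1) L(2) kK] by simp
    have eq: "fminus S f (\<lambda>x. finsum S (\<lambda>l. u l \<otimes>\<^bsub>S\<^esub> fdelta S (zz l) \<one>\<^bsub>S\<^esub> x) L) = (\<lambda>x. finsum S (\<lambda>l. u l \<otimes>\<^bsub>S\<^esub> h (k l x)) L)"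
    proof
      fix x
      define G where "G = finsum S (\<lambda>l. u l \<otimes>\<^bsub>S\<^esub> fdelta S (zz l) \<one>\<^bsub>S\<^esub> x) L"
      have Gc: "G \<in> carrier S" unfolding G_def using uc by (intro S.finsum_closed) auto
      have hq: "h (q l x) = finsum S (\<lambda>p. fdelta S (en p) (h (a (2*p) l)) x) PN" for l
        unfolding q_def using ac by (subst hom_finsum) (auto intro!: S.finsum_cong' simp: h_fdelta)
      have hk: "h (k l x) = h (q l x) \<oplus>\<^bsub>S\<^esub> \<ominus>\<^bsub>S\<^esub> fdelta S (zz l) \<one>\<^bsub>S\<^esub> x" for l
        unfolding k_def using qc by (simp add: h_fdelta)
      have hqc: "\<And>l. h (q l x) \<in> carrier S" using qc by simp
      have s1: "finsum S (\<lambda>l. u l \<otimes>\<^bsub>S\<^esub> h (k l x)) L = finsum S (\<lambda>l. u l \<otimes>\<^bsub>S\<^esub> h (q l x)) L \<oplus>\<^bsub>S\<^esub> \<ominus>\<^bsub>S\<^esub> G"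
      proof -
        have "finsum S (\<lambda>l. u l \<otimes>\<^bsub>S\<^esub> h (k l x)) L = finsum S (\<lambda>l. u l \<otimes>\<^bsub>S\<^esub> h (q l x) \<oplus>\<^bsub>S\<^esub> \<ominus>\<^bsub>S\<^esub> (u l \<otimes>\<^bsub>S\<^esub> fdelta S (zz l) \<one>\<^bsub>S\<^esub> x)) L"
          using uc hqc by (intro S.finsum_cong') (auto simp: hk S.r_distr S.r_minus)
        also have "\<dots> = finsum S (\<lambda>l. u l \<otimes>\<^bsub>S\<^esub> h (q l x)) L \<oplus>\<^bsub>S\<^esub> finsum S (\<lambda>l. \<ominus>\<^bsub>S\<^esub> (u l \<otimes>\<^bsub>S\<^esub> fdelta S (zz l) \<one>\<^bsub>S\<^esub> x)) L"
          using uc hqc by (intro S.finsum_addf) auto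
        also have "finsum S (\<lambda>l. \<ominus>\<^bsub>S\<^esub> (u l \<otimes>\<^bsub>S\<^esub> fdelta S (zz l) \<one>\<^bsub>S\<^esub> x)) L = \<ominus>\<^bsub>S\<^esub> G"
          unfolding G_def using uc L(1) by (intro S.fs_neg) auto
        finally show ?thesis .
      qed
      have s2: "finsum S (\<lambda>l. u l \<otimes>\<^bsub>S\<^esub> h (q l x)) L = f x"
      proof -
        have hac: "\<And>j l. h (a j l) \<in> carrier S" using ac by simp
        have "finsum S (\<lambda>l. u l \<otimes>\<^bsub>S\<^esub> h (q l x)) L = finsum S (\<lambda>l. finsum S (\<lambda>p. u l \<otimes>\<^bsub>S\<^esub> fdelta S (en p) (h (a (2*p) l)) x) PN) L"
        proof (rule S.finsum_cong')
          fix l assume l: "l \<in> L"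
          show "u l \<otimes>\<^bsub>S\<^esub> h (q l x) = finsum S (\<lambda>p. u l \<otimes>\<^bsub>S\<^esub> fdelta S (en p) (h (a (2*p) l)) x) PN"
            unfolding hq using S.finsum_rdistr[OF PNf uc[OF l], of "\<lambda>p. fdelta S (en p) (h (a (2*p) l)) x"] hac by auto
        qed (use uc hac in \<open>auto intro!: S.finsum_closed\<close>)
        also have "\<dots> = finsum S (\<lambda>p. finsum S (\<lambda>l. u l \<otimes>\<^bsub>S\<^esub> fdelta S (en p) (h (a (2*p) l)) x) L) PN"
          using L(1) PNf uc hac by (intro S.fs_swap) auto
        also have "\<dots> = finsum S (\<lambda>p. fdelta S (en p) (f (en p)) x) PN"
        proof (rule S.finsum_cong')
          fix p assume p: "p \<in> PN"
          have p2: "2*p \<in> J0" unfolding J0_def using p by auto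
          show "finsum S (\<lambda>l. u l \<otimes>\<^bsub>S\<^esub> fdelta S (en p) (h (a (2*p) l)) x) L = fdelta S (en p) (f (en p)) x"
          proof (cases "x = en p")
            case True
            have "finsum S (\<lambda>l. u l \<otimes>\<^bsub>S\<^esub> fdelta S (en p) (h (a (2*p) l)) x) L = finsum S (\<lambda>l. h (a (2*p) l) \<otimes>\<^bsub>S\<^esub> u l) L"
              using True uc hac by (intro S.finsum_cong') (auto simp: fdelta_def S.m_comm)
            also have "\<dots> = t (2*p)" using L(4) p2 by simp
            also have "\<dots> = f (en p)" using t_ev[OF p] .
            finally show ?thesis using True by (simp add: fdelta_def)
          next
            case False
            have "finsum S (\<lambda>l. u l \<otimes>\<^bsub>S\<^esub> fdelta S (en p) (h (a (2*p) l)) x) L = finsum S (\<lambda>l. \<zero>\<^bsub>S\<^esub>) L"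
              using False uc by (intro S.finsum_cong') (auto simp: fdelta_def)
            then show ?thesis using False by (simp add: fdelta_def)
          qed
        qed (use ff(1) in auto)
        also have "\<dots> = finsum S (\<lambda>m. fdelta S m (f m) x) Bx"
        proof -
          have "en ` PN = Bx" "inj_on en PN" using en unfolding bij_betw_def PN_def by auto
          then show ?thesis using S.finsum_reindex[of "\<lambda>m. fdelta S m (f m) x" en PN] ff(1) by auto
        qed
        also have "\<dots> = finsum S (\<lambda>m. if x = m then f x else \<zero>\<^bsub>S\<^esub>) Bx"
          using ff(1) by (intro S.finsum_cong') (auto simp: fdelta_def)
        also have "\<dots> = (if x \<in> Bx then f x else \<zero>\<^bsub>S\<^esub>)" using S.fs_delta'[OF Bxf ff(1)] .
        also have "\<dots> = f x" unfolding Bx_def fsupp_def by auto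
        finally show ?thesis .
      qed
      show "fminus S f (\<lambda>x. finsum S (\<lambda>l. u l \<otimes>\<^bsub>S\<^esub> fdelta S (zz l) \<one>\<^bsub>S\<^esub> x) L) x = finsum S (\<lambda>l. u l \<otimes>\<^bsub>S\<^esub> h (k l x)) L"
        unfolding s1 s2 fminus_def fadd_def fneg_def G_def ..
    qed
    show ?thesis using D eq by simp
  qed
  show ?thesis
    apply (rule exI[of _ L], rule exI[of _ u], rule exI[of _ zz])
    apply (intro conjI ballI)
        apply (rule L(1))
       apply (rule L(2))
      apply (rule zc)
     apply (erule zk, assumption)
    apply (rule fTR)
    done
qed

end

theorem proposition8p5:
  fixes R :: "('r, 'a) ring_scheme" and S :: "('s, 'c) ring_scheme"
    and h :: "'r \<Rightarrow> 's" and \<a> :: "'r set"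
    and M :: "('r, 'm) module" and \<kappa> :: "'i set"
  assumes "cring R" and "cring S" and "h \<in> ring_hom R S"
    and "flat_hom R S h"
    and "ideal \<a> R"
    and "infinite {n. \<exists>G. G \<subseteq> ideal_pow R \<a> n \<and> genideal R G = ideal_pow R \<a> n \<and> card_le G \<kappa>}"
    and "module R M"
    and "eps_injective R S h M \<kappa>"
  shows "(\<forall>g \<in> free_on S (M\<lparr>carrier := torsion R \<a> M\<rparr>).
            tensor_eq R S h M g (\<lambda>x. \<zero>\<^bsub>S\<^esub>) \<longrightarrow>
            tensor_eq R S h (M\<lparr>carrier := torsion R \<a> M\<rparr>) g (\<lambda>x. \<zero>\<^bsub>S\<^esub>))
       \<and> (\<forall>f \<in> tensor_torsion R S h M (genideal S (h ` \<a>)).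
            \<exists>g \<in> free_on S (M\<lparr>carrier := torsion R \<a> M\<rparr>). tensor_eq R S h M g f)"
proof -
  note flat = assms(4) and a = assms(5) and inf = assms(6) and Mm = assms(7) and eps = assms(8)
  interpret RS: ring_hom_cring R S h
    by (intro ring_hom_cring.intro ring_hom_cring_axioms.intro assms(1,2,3))
  interpret M: module R M by (rule Mm)
  define T where "T = torsion R \<a> M"
  have Tc: "T \<subseteq> carrier M" "\<zero>\<^bsub>M\<^esub> \<in> T"
    "\<And>x y. x \<in> T \<Longrightarrow> y \<in> T \<Longrightarrow> x \<oplus>\<^bsub>M\<^esub> y \<in> T"
    "\<And>r x. r \<in> carrier R \<Longrightarrow> x \<in> T \<Longrightarrow> r \<odot>\<^bsub>M\<^esub> x \<in> T"
    unfolding T_def using M.torsion_closed[OF a] by auto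
  have part1: "\<forall>g \<in> free_on S (M\<lparr>carrier := T\<rparr>). tensor_eq R S h M g (\<lambda>x. \<zero>\<^bsub>S\<^esub>) \<longrightarrow>
            tensor_eq R S h (M\<lparr>carrier := T\<rparr>) g (\<lambda>x. \<zero>\<^bsub>S\<^esub>)"
  proof (intro ballI impI)
    fix g assume g: "g \<in> free_on S (M\<lparr>carrier := T\<rparr>)" and te: "tensor_eq R S h M g (\<lambda>x. \<zero>\<^bsub>S\<^esub>)"
    have gc: "\<And>x. g x \<in> carrier S" using RS.free_facts[OF g] by simp
    have "g \<in> tensor_rel R S h M" using te tensor_eq_zero_iff[where f = g and R = R and h = h and N = M, OF assms(2) gc] by simp
    then have "g \<in> tensor_rel R S h (M\<lparr>carrier := T\<rparr>)" using RS.inj_sub[OF flat Mm Tc g] by simp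
    then show "tensor_eq R S h (M\<lparr>carrier := T\<rparr>) g (\<lambda>x. \<zero>\<^bsub>S\<^esub>)" using tensor_eq_zero_iff[where f = g and R = R and h = h and N = "M\<lparr>carrier := T\<rparr>", OF assms(2) gc] by simp
  qed
  have part2: "\<exists>g \<in> free_on S (M\<lparr>carrier := T\<rparr>). tensor_eq R S h M g f"
    if fT: "f \<in> tensor_torsion R S h M (genideal S (h ` \<a>))" for f
  proof -
    have f: "f \<in> free_on S M" using fT unfolding tensor_torsion_def by simp
    note ff = RS.free_facts[OF f]
    obtain n where n: "\<forall>s \<in> ideal_pow S (genideal S (h ` \<a>)) n. tensor_eq R S h M (fsmult S s f) (\<lambda>x. \<zero>\<^bsub>S\<^esub>)"
      using fT unfolding tensor_torsion_def by blast
    obtain n' where n': "n \<le> n'" "n' \<in> {n. \<exists>G. G \<subseteq> ideal_pow R \<a> n \<and> genideal R G = ideal_pow R \<a> n \<and> card_le G \<kappa>}"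
      using inf unfolding infinite_nat_iff_unbounded_le by blast
    then obtain G where G: "G \<subseteq> ideal_pow R \<a> n'" "genideal R G = ideal_pow R \<a> n'" "card_le G \<kappa>" by blast
    obtain e where e: "inj_on e G" "e ` G \<subseteq> \<kappa>" using G(3) unfolding card_le_def by blast
    have PR: "\<And>y. y \<in> ideal_pow R \<a> n' \<Longrightarrow> y \<in> carrier R" using ideal.Icarr[OF RS.R.ideal_pow_ideal[OF a]] by blast
    define c where "c i = (if i \<in> e ` G then inv_into G e i else \<zero>\<^bsub>R\<^esub>)" for i
    have cG: "\<And>i. i \<in> e ` G \<Longrightarrow> c i \<in> G" unfolding c_def by (auto intro: inv_into_into)
    have cc: "c i \<in> carrier R" for i
    proof (cases "i \<in> e ` G")
      case True
      then have "c i \<in> G" by (rule cG)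
      then show ?thesis using G(1) PR by blast
    next
      case False
      then show ?thesis unfolding c_def by simp
    qed
    have ceg: "\<And>g0. g0 \<in> G \<Longrightarrow> c (e g0) = g0" unfolding c_def using e(1) by auto
    have fsm: "\<And>s x. s \<in> carrier S \<Longrightarrow> fsmult S s f x \<in> carrier S" using ff(1) by (simp add: fsmult_def)
    have hf: "fsmult S (h (c i)) f \<in> tensor_rel R S h M" for i
    proof (cases "i \<in> e ` G")
      case True
      have "c i \<in> ideal_pow R \<a> n" using cG[OF True] G(1) RS.R.ideal_pow_mono[OF a n'(1)] by blast
      then have "h (c i) \<in> ideal_pow S (genideal S (h ` \<a>)) n" by (rule RS.ideal_pow_hom[OF a])
      then have "tensor_eq R S h M (fsmult S (h (c i)) f) (\<lambda>x. \<zero>\<^bsub>S\<^esub>)" using n by blast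
      then show ?thesis using tensor_eq_zero_iff[where f = "fsmult S (h (c i)) f" and R = R and h = h and N = M, OF assms(2) fsm[of "h (c i)"]] cc by simp
    next
      case False
      then have "fsmult S (h (c i)) f = (\<lambda>x. \<zero>\<^bsub>S\<^esub>)" unfolding c_def fsmult_def using ff(1) by auto
      then show ?thesis by (simp add: tensor_rel.zero)
    qed
    define \<phi> where "\<phi> m = (\<lambda>j\<in>\<kappa>. c j \<odot>\<^bsub>M\<^esub> m)" for m
    define F where "F y = finsum S f {m \<in> fsupp S f. \<phi> m = y}" for y
    have \<phi>c: "\<phi> m \<in> carrier (prod_module M \<kappa>)" if "m \<in> carrier M" for m
      unfolding \<phi>_def prod_module_def using that cc by auto
    have Fc: "\<And>y. F y \<in> carrier S" unfolding F_def using ff(1) by (intro RS.S.finsum_closed) auto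
    have F0: "F y = \<zero>\<^bsub>S\<^esub>" if "y \<notin> \<phi> ` fsupp S f" for y
    proof -
      have e: "{m \<in> fsupp S f. \<phi> m = y} = {}" using that by auto
      show ?thesis unfolding F_def e by simp
    qed
    have Ffree: "F \<in> free_on S (prod_module M \<kappa>)"
    proof -
      have "fsupp S F \<subseteq> \<phi> ` fsupp S f" using F0 unfolding fsupp_def by blast
      then have "finite (fsupp S F)" using ff(3) finite_subset by blast
      moreover have "\<forall>y. y \<notin> carrier (prod_module M \<kappa>) \<longrightarrow> F y = \<zero>\<^bsub>S\<^esub>"
      proof (intro allI impI)
        fix y assume "y \<notin> carrier (prod_module M \<kappa>)"
        then have "y \<notin> \<phi> ` fsupp S f" using \<phi>c ff(4) by blast
        then show "F y = \<zero>\<^bsub>S\<^esub>" by (rule F0)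
      qed
      ultimately show ?thesis unfolding free_on_def using Fc by simp
    qed
    have zfree: "(\<lambda>x. \<zero>\<^bsub>S\<^esub>) \<in> free_on S (prod_module M \<kappa>)" unfolding free_on_def fsupp_def by simp
    have pc0: "push_comp S i (\<lambda>x. \<zero>\<^bsub>S\<^esub>) = (\<lambda>m. \<zero>\<^bsub>S\<^esub>)" for i
      unfolding push_comp_def fsupp_def by simp
    have comps: "\<forall>i \<in> \<kappa>. tensor_eq R S h M (push_comp S i F) (push_comp S i (\<lambda>x. \<zero>\<^bsub>S\<^esub>))"
    proof
      fix i assume i: "i \<in> \<kappa>"
      have pe: "push_comp S i F = (\<lambda>m'. finsum S f {m \<in> fsupp S f. c i \<odot>\<^bsub>M\<^esub> m = m'})"
        unfolding F_def \<phi>_def using RS.push_comp_eq[OF f i, of c] by auto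
      have "push_comp S i F \<in> tensor_rel R S h M"
        unfolding pe using RS.push_TR[OF Mm f cc hf] .
      moreover have pcc: "\<And>x. push_comp S i F x \<in> carrier S" unfolding pe using ff(1) by (intro RS.S.finsum_closed) auto
      ultimately show "tensor_eq R S h M (push_comp S i F) (push_comp S i (\<lambda>x. \<zero>\<^bsub>S\<^esub>))"
        unfolding pc0 using tensor_eq_zero_iff[where f = "push_comp S i F" and R = R and h = h and N = M, OF assms(2) pcc] by simp
    qed
    have "tensor_eq R S h (prod_module M \<kappa>) F (\<lambda>x. \<zero>\<^bsub>S\<^esub>)"
      using eps Ffree zfree comps unfolding eps_injective_def by blast
    then have FTR: "F \<in> tensor_rel R S h (prod_module M \<kappa>)" using tensor_eq_zero_iff[where f = F and R = R and h = h and N = "prod_module M \<kappa>", OF assms(2) Fc] by simp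
    have FTR': "(\<lambda>y. finsum S f {m \<in> fsupp S f. (\<lambda>j\<in>\<kappa>. c j \<odot>\<^bsub>M\<^esub> m) = y}) \<in> tensor_rel R S h (prod_module M \<kappa>)"
      using FTR unfolding F_def \<phi>_def .
    obtain L u z where L: "finite (L::nat set)" "u \<in> L \<rightarrow> carrier S"
      "\<forall>l\<in>L. z l \<in> carrier M \<and> (\<forall>i\<in>\<kappa>. c i \<odot>\<^bsub>M\<^esub> z l = \<zero>\<^bsub>M\<^esub>)"
      "fminus S f (\<lambda>x. finsum S (\<lambda>l. u l \<otimes>\<^bsub>S\<^esub> fdelta S (z l) \<one>\<^bsub>S\<^esub> x) L) \<in> tensor_rel R S h M"
      using RS.surj_core[OF flat Mm f cc FTR'] by blast
    have zT: "z l \<in> T" if l: "l \<in> L" for l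
    proof -
      have zM: "z l \<in> carrier M" using L(3) l by blast
      have "G \<subseteq> {r \<in> carrier R. r \<odot>\<^bsub>M\<^esub> z l = \<zero>\<^bsub>M\<^esub>}"
      proof
        fix g0 assume g0: "g0 \<in> G"
        have "e g0 \<in> \<kappa>" using e(2) g0 by blast
        then have "c (e g0) \<odot>\<^bsub>M\<^esub> z l = \<zero>\<^bsub>M\<^esub>" using L(3) l by blast
        then show "g0 \<in> {r \<in> carrier R. r \<odot>\<^bsub>M\<^esub> z l = \<zero>\<^bsub>M\<^esub>}" using ceg[OF g0] g0 G(1) PR by auto
      qed
      then have "genideal R G \<subseteq> {r \<in> carrier R. r \<odot>\<^bsub>M\<^esub> z l = \<zero>\<^bsub>M\<^esub>}"
        by (rule RS.R.genideal_minimal[OF M.ann_ideal[OF zM]])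
      then have "\<forall>r \<in> ideal_pow R \<a> n'. r \<odot>\<^bsub>M\<^esub> z l = \<zero>\<^bsub>M\<^esub>" using G(2) by auto
      then show ?thesis unfolding T_def torsion_def using zM by blast
    qed
    have uc: "\<And>l. l \<in> L \<Longrightarrow> u l \<in> carrier S" using L(2) by auto
    define g where "g x = finsum S (\<lambda>l. u l \<otimes>\<^bsub>S\<^esub> fdelta S (z l) \<one>\<^bsub>S\<^esub> x) L" for x
    have gc: "\<And>x. g x \<in> carrier S" unfolding g_def using uc by (intro RS.S.finsum_closed) auto
    have g0: "g x = \<zero>\<^bsub>S\<^esub>" if "x \<notin> z ` L" for x
    proof -
      have "g x = finsum S (\<lambda>l. \<zero>\<^bsub>S\<^esub>) L" unfolding g_def using that uc
        by (intro RS.S.finsum_cong') (auto simp: fdelta_def)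
      then show ?thesis by simp
    qed
    have gfree: "g \<in> free_on S (M\<lparr>carrier := T\<rparr>)"
    proof -
      have "fsupp S g \<subseteq> z ` L" using g0 unfolding fsupp_def by blast
      then have "finite (fsupp S g)" using L(1) finite_subset by blast
      moreover have "\<forall>x. x \<notin> carrier (M\<lparr>carrier := T\<rparr>) \<longrightarrow> g x = \<zero>\<^bsub>S\<^esub>"
      proof (intro allI impI)
        fix x assume "x \<notin> carrier (M\<lparr>carrier := T\<rparr>)"
        then have "x \<notin> z ` L" using zT by auto
        then show "g x = \<zero>\<^bsub>S\<^esub>" by (rule g0)
      qed
      ultimately show ?thesis unfolding free_on_def using gc by simp
    qed
    have "fminus S g f = fsmult S (\<ominus>\<^bsub>S\<^esub> \<one>\<^bsub>S\<^esub>) (fminus S f g)"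
    proof
      fix x
      show "fminus S g f x = fsmult S (\<ominus>\<^bsub>S\<^esub> \<one>\<^bsub>S\<^esub>) (fminus S f g) x"
        unfolding fminus_def fadd_def fneg_def fsmult_def using gc[of x] ff(1)[of x] by algebra
    qed
    moreover have "fminus S f g \<in> tensor_rel R S h M" using L(4) unfolding g_def .
    ultimately have "fminus S g f \<in> tensor_rel R S h M" using RS.TR_smult[of "fminus S f g" M "\<ominus>\<^bsub>S\<^esub> \<one>\<^bsub>S\<^esub>"] by simp
    then have "tensor_eq R S h M g f" unfolding tensor_eq_def .
    then show ?thesis using gfree by blast
  qed
  show ?thesis using part1 part2 unfolding T_def by blast
qed

end
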